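(* For every $n\ge0$, with $c_n,d_n$ and $R_{n,2},R_{n,1},R_{n,0}$ as below, $$P_n^{(\alpha,\beta,v)}(t)=n!\left(p_n^{(\alpha+2,\beta)}(1-2t)R_{n,2}t^2+p_n^{(\alpha+1,\beta)}(1-2t)R_{n,1}t+p_n^{(\alpha,\beta)}(1-2t)R_{n,0}\right)\widetilde W(t)^{-1}$$ and $$P_n^{(\alpha,\beta,v)}(t)=n!\left(p_n^{(\alpha,\beta)}(1-2t)\mathscr C_{n,2}+p_{n+1}^{(\alpha,\beta)}(1-2t)\mathscr C_{n,1}+p_{n+2}^{(\alpha,\beta)}(1-2t)\mathscr C_{n,0}\right)\widetilde W(t)^{-1},$$ where $$\mathscr C_{n,2}=\frac{(\beta+n+1)(\alpha+n+1)}{(\alpha+\beta+2n+2)(\alpha+\beta+2n+3)}\begin{pmatrix}\dfrac{c_n(\kappa_{-v,\beta}+2n+4)}{\kappa_{v,\beta}+2n+2}&0\\0&\dfrac{d_n(\kappa_{v,\beta}+2n+4)}{\kappa_{-v,\beta}+2n+2}\end{pmatrix},$$ $$\mathscr C_{n,1}=\frac{n+1}{v}\begin{pmatrix}\dfrac{(\alpha-\beta)(\kappa_{-v,\beta}+2n+4)c_n}{(\alpha+\beta+2n+2)(\alpha+\beta+2n+4)}&-\dfrac{c_n\kappa_{v,-\beta}}{\kappa_{v,\beta}+2n+2}\\[2mm]\dfrac{d_n\kappa_{-v,-\beta}}{\kappa_{-v,\beta}+2n+2}&-\dfrac{(\alpha-\beta)(\kappa_{v,\beta}+2n+4)d_n}{(\alpha+\beta+2n+2)(\alpha+\beta+2n+4)}\end{pmatrix},$$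 $$\mathscr C_{n,0}=\frac{(n+1)(n+2)}{(\alpha+\beta+2n+4)(\alpha+\beta+2n+3)}\begin{pmatrix}c_n&0\\0&d_n\end{pmatrix}.$$
   Context: Fix real numbers $\alpha,\beta,v$ with $\alpha>-1$, $\beta>-1$ and $|\alpha-\beta|<|v|<\alpha+\beta+2$. Write $\kappa_{\pm v,\pm\beta}=\alpha\pm v\pm\beta$. Define the $2\times2$ matrix polynomial $$\widetilde W(t)=\begin{pmatrix}\frac{v(\kappa_{v,\beta}+2)}{\kappa_{v,-\beta}}t^2-(\kappa_{v,\beta}+2)t+(\alpha+1) & (\alpha+\beta+2)t-(\alpha+1)\\ (\alpha+\beta+2)t-(\alpha+1) & -\frac{v(\kappa_{-v,\beta}+2)}{\kappa_{-v,-\beta}}t^2-(\kappa_{-v,\beta}+2)t+(\alpha+1)\end{pmatrix}$$ and $W(t)=t^\alpha(1-t)^\beta\widetilde W(t)$ on $(0,1)$; $\langle P,Q\rangle_W=\int_0^1P W Q^*dt$. $(P_n^{(\alpha,\beta,v)})_{n\ge0}$ is the sequence of monic $2\times2$ matrix polynomials orthogonal with respect to $W$. $p_n^{(a,b)}$ is the classical Jacobi polynomial, so that $p_n^{(a,b)}(1-2t)=\frac{\Gamma(n+a+1)}{n!\,\Gamma(n+a+b+1)}\sum_{j=0}^n\binom nj\frac{\Gamma(n+a+b+1+j)}{\Gamma(j+a+1)}(-1)^jt^j$. Set $c_n=\frac{(-1)^nv(\kappa_{v,\beta}+2)}{\kappa_{v,-\beta}(\alpha+\beta+n+3)_n}$,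 $d_n=\frac{(-1)^{n+1}v(\kappa_{-v,\beta}+2)}{\kappa_{-v,-\beta}(\alpha+\beta+n+3)_n}$ ($(x)_n$ the Pochhammer symbol), $R_{n,2}=\mathrm{diag}(c_n,d_n)$, $R_{n,1}=\frac1v\begin{pmatrix}-c_n\kappa_{v,-\beta} & \frac{c_n(\alpha+\beta+2n+2)\kappa_{v,-\beta}}{\kappa_{v,\beta}+2n+2}\\ -\frac{d_n(\alpha+\beta+2n+2)\kappa_{-v,-\beta}}{\kappa_{-v,\beta}+2n+2} & d_n\kappa_{-v,-\beta}\end{pmatrix}$, $R_{n,0}=\frac{1+n+\alpha}{v}\begin{pmatrix}\frac{c_n\kappa_{v,-\beta}}{\kappa_{v,\beta}+2n+2} & -\frac{c_n\kappa_{v,-\beta}}{\kappa_{v,\beta}+2n+2}\\ \frac{d_n\kappa_{-v,-\beta}}{\kappa_{-v,\beta}+2n+2} & -\frac{d_n\kappa_{-v,-\beta}}{\kappa_{-v,\beta}+2n+2}\end{pmatrix}$. *)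

theory Defs
  imports "HOL-Analysis.Analysis"
begin

type_synonym mat22 = "real^2^2"

definition mat2 :: "real \<Rightarrow> real \<Rightarrow> real \<Rightarrow> real \<Rightarrow> mat22" where
  "mat2 a b c d = vector [vector [a, b], vector [c, d]]"

text \<open>Writing x = 1 - 2t, i.e. t = (1-x)/2,
  the Gamma-quotients of the paper's formula are written as Pochhammer symbols:
  Gamma(n+a+1)/Gamma(j+a+1) = (j+a+1)_(n-j) and
  Gamma(n+a+b+1+j)/Gamma(n+a+b+1) = (n+a+b+1)_j.\<close>
definition jacobiP :: "nat \<Rightarrow> real \<Rightarrow> real \<Rightarrow> real \<Rightarrow> real" where
  "jacobiP n a b x = (1 / fact n) * (\<Sum>j\<le>n. real (n choose j)
       * pochhammer (real j + a + 1) (n - j) * pochhammer (real n + a + b + 1) j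
       * (-1) ^ j * ((1 - x) / 2) ^ j)"

text \<open>kappa_{s v, r beta} = alpha + s v + r beta\<close>
definition kappa :: "real \<Rightarrow> real \<Rightarrow> real \<Rightarrow> real" where
  "kappa al v be = al + v + be"

definition Wtilde :: "real \<Rightarrow> real \<Rightarrow> real \<Rightarrow> real \<Rightarrow> mat22" where
  "Wtilde al be v t = mat2
     (v * (kappa al v be + 2) / kappa al v (-be) * t^2 - (kappa al v be + 2) * t + (al + 1))
     ((al + be + 2) * t - (al + 1))
     ((al + be + 2) * t - (al + 1))
     (- v * (kappa al (-v) be + 2) / kappa al (-v) (-be) * t^2 - (kappa al (-v) be + 2) * t + (al + 1))"

definition Wmat :: "real \<Rightarrow> real \<Rightarrow> real \<Rightarrow> real \<Rightarrow> mat22" where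
  "Wmat al be v t = (t powr al * (1 - t) powr be) *\<^sub>R Wtilde al be v t"

definition mip :: "(real \<Rightarrow> mat22) \<Rightarrow> (real \<Rightarrow> mat22) \<Rightarrow> (real \<Rightarrow> mat22) \<Rightarrow> mat22" where
  "mip W P Q = integral {0..1} (\<lambda>t. P t ** W t ** transpose (Q t))"

definition is_mpoly :: "nat \<Rightarrow> (real \<Rightarrow> mat22) \<Rightarrow> bool" where
  "is_mpoly m Q \<longleftrightarrow> (\<exists>B :: nat \<Rightarrow> mat22. \<forall>t. Q t = (\<Sum>k\<le>m. t ^ k *\<^sub>R B k))"

definition is_monic_mpoly :: "nat \<Rightarrow> (real \<Rightarrow> mat22) \<Rightarrow> bool" where
  "is_monic_mpoly n P \<longleftrightarrow> (\<exists>A :: nat \<Rightarrow> mat22. A n = mat 1 \<and> (\<forall>t. P t = (\<Sum>k\<le>n. t ^ k *\<^sub>R A k)))"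

definition monic_MOPS :: "(real \<Rightarrow> mat22) \<Rightarrow> (nat \<Rightarrow> real \<Rightarrow> mat22) \<Rightarrow> bool" where
  "monic_MOPS W P \<longleftrightarrow> (\<forall>n. is_monic_mpoly n (P n) \<and>
      (\<forall>m Q. m < n \<longrightarrow> is_mpoly m Q \<longrightarrow> mip W (P n) Q = 0))"

definition cc :: "real \<Rightarrow> real \<Rightarrow> real \<Rightarrow> nat \<Rightarrow> real" where
  "cc al be v n = (-1) ^ n * v * (kappa al v be + 2)
      / (kappa al v (-be) * pochhammer (al + be + real n + 3) n)"

definition dd :: "real \<Rightarrow> real \<Rightarrow> real \<Rightarrow> nat \<Rightarrow> real" where
  "dd al be v n = (-1) ^ (n + 1) * v * (kappa al (-v) be + 2)
      / (kappa al (-v) (-be) * pochhammer (al + be + real n + 3) n)"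

definition R2 :: "real \<Rightarrow> real \<Rightarrow> real \<Rightarrow> nat \<Rightarrow> mat22" where
  "R2 al be v n = mat2 (cc al be v n) 0 0 (dd al be v n)"

definition R1 :: "real \<Rightarrow> real \<Rightarrow> real \<Rightarrow> nat \<Rightarrow> mat22" where
  "R1 al be v n = (1 / v) *\<^sub>R mat2
     (- cc al be v n * kappa al v (-be))
     (cc al be v n * (al + be + 2 * real n + 2) * kappa al v (-be) / (kappa al v be + 2 * real n + 2))
     (- dd al be v n * (al + be + 2 * real n + 2) * kappa al (-v) (-be) / (kappa al (-v) be + 2 * real n + 2))
     (dd al be v n * kappa al (-v) (-be))"

definition R0 :: "real \<Rightarrow> real \<Rightarrow> real \<Rightarrow> nat \<Rightarrow> mat22" where
  "R0 al be v n = ((1 + real n + al) / v) *\<^sub>R mat2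
     (cc al be v n * kappa al v (-be) / (kappa al v be + 2 * real n + 2))
     (- cc al be v n * kappa al v (-be) / (kappa al v be + 2 * real n + 2))
     (dd al be v n * kappa al (-v) (-be) / (kappa al (-v) be + 2 * real n + 2))
     (- dd al be v n * kappa al (-v) (-be) / (kappa al (-v) be + 2 * real n + 2))"

definition C2 :: "real \<Rightarrow> real \<Rightarrow> real \<Rightarrow> nat \<Rightarrow> mat22" where
  "C2 al be v n = ((be + real n + 1) * (al + real n + 1)
       / ((al + be + 2 * real n + 2) * (al + be + 2 * real n + 3))) *\<^sub>R mat2
     (cc al be v n * (kappa al (-v) be + 2 * real n + 4) / (kappa al v be + 2 * real n + 2))
     0 0
     (dd al be v n * (kappa al v be + 2 * real n + 4) / (kappa al (-v) be + 2 * real n + 2))"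

definition C1 :: "real \<Rightarrow> real \<Rightarrow> real \<Rightarrow> nat \<Rightarrow> mat22" where
  "C1 al be v n = ((real n + 1) / v) *\<^sub>R mat2
     ((al - be) * (kappa al (-v) be + 2 * real n + 4) * cc al be v n
        / ((al + be + 2 * real n + 2) * (al + be + 2 * real n + 4)))
     (- cc al be v n * kappa al v (-be) / (kappa al v be + 2 * real n + 2))
     (dd al be v n * kappa al (-v) (-be) / (kappa al (-v) be + 2 * real n + 2))
     (- (al - be) * (kappa al v be + 2 * real n + 4) * dd al be v n
        / ((al + be + 2 * real n + 2) * (al + be + 2 * real n + 4)))"

definition C0 :: "real \<Rightarrow> real \<Rightarrow> real \<Rightarrow> nat \<Rightarrow> mat22" where
  "C0 al be v n = ((real n + 1) * (real n + 2)
       / ((al + be + 2 * real n + 4) * (al + be + 2 * real n + 3))) *\<^sub>R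
     mat2 (cc al be v n) 0 0 (dd al be v n)"

end

theory Submission
  imports Defs "HOL-Computational_Algebra.Polynomial" "HOL-Computational_Algebra.Formal_Power_Series"
begin


definition J :: "nat \<Rightarrow> real \<Rightarrow> real \<Rightarrow> real poly" where
  "J m a b = (\<Sum>j\<le>m. monom (((a + real m) gchoose (m - j)) * ((-(real m + a + b + 1)) gchoose j)) j)"

lemma coeff_J: "coeff (J m a b) i = (if i \<le> m then ((a + real m) gchoose (m - i)) * ((-(real m + a + b + 1)) gchoose i) else 0)"
  unfolding J_def by (simp add: coeff_sum coeff_monom)

lemma poly_J: "poly (J m a b) t = (\<Sum>j\<le>m. ((a + real m) gchoose (m - j)) * ((-(real m + a + b + 1)) gchoose j) * t ^ j)"
  unfolding J_def by (simp add: poly_sum poly_monom)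

lemma jacobi_term:
  assumes "j \<le> m"
  shows "real (m choose j) * pochhammer (real j + a + 1) (m - j) * pochhammer (real m + a + b + 1) j * (-1) ^ j / fact m
     = ((a + real m) gchoose (m - j)) * ((-(real m + a + b + 1)) gchoose j)"
proof -
  have h1: "(a + real m) gchoose (m - j) = pochhammer (real j + a + 1) (m - j) / fact (m - j)"
    using assms by (simp add: gbinomial_pochhammer' of_nat_diff algebra_simps)
  have h2: "(-(real m + a + b + 1)) gchoose j = (-1)^j * pochhammer (real m + a + b + 1) j / fact j"
    by (subst gbinomial_pochhammer) (simp add: algebra_simps)
  have h3: "real (m choose j) = fact m / (fact j * fact (m - j))"
    using assms by (simp add: binomial_fact)
  show ?thesis unfolding h1 h2 h3 by (simp add: field_simps)
qed

lemma poly_J_jacobiP: "poly (J m a b) t = jacobiP m a b (1 - 2 * t)"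
proof -
  have "jacobiP m a b (1 - 2 * t) = (\<Sum>j\<le>m. real (m choose j) * pochhammer (real j + a + 1) (m - j)
       * pochhammer (real m + a + b + 1) j * (-1) ^ j / fact m * t ^ j)"
    unfolding jacobiP_def by (simp add: sum_distrib_left field_simps)
  also have "\<dots> = poly (J m a b) t"
    unfolding poly_J by (intro sum.cong refl) (simp add: jacobi_term)
  finally show ?thesis by simp
qed

lemma degree_J: "degree (J m a b) \<le> m"
  by (rule degree_le) (simp add: coeff_J)

lemma poly_J_0: "poly (J m a b) 0 = (a + real m) gchoose m"
  by (simp add: poly_J zero_power)

lemma poly_J_1: "poly (J m a b) 1 = (- b - 1) gchoose m"
proof -
  have "poly (J m a b) 1 = (\<Sum>j=0..m. ((-(real m + a + b + 1)) gchoose j) * ((a + real m) gchoose (m - j)))"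
    by (simp add: poly_J atMost_atLeast0 mult.commute)
  also have "\<dots> = (-(real m + a + b + 1) + (a + real m)) gchoose m"
    by (rule gbinomial_Vandermonde)
  also have "-(real m + a + b + 1) + (a + real m) = - b - 1" by simp
  finally show ?thesis .
qed

lemma pderiv_J: "pderiv (J (Suc m) a b) = smult (-(real m + a + b + 2)) (J m (a + 1) (b + 1))"
proof (rule poly_eqI)
  fix i
  show "coeff (pderiv (J (Suc m) a b)) i = coeff (smult (-(real m + a + b + 2)) (J m (a + 1) (b + 1))) i"
  proof (cases "i \<le> m")
    case True
    have abs: "real (Suc i) * ((-(real (Suc m) + a + b + 1)) gchoose Suc i)
        = (-(real (Suc m) + a + b + 1)) * (((-(real (Suc m) + a + b + 1)) - 1) gchoose i)"
      by (rule gbinomial_absorption)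
    have e1: "(-(real (Suc m) + a + b + 1)) - 1 = -(real m + (a + 1) + (b + 1) + 1)" by simp
    have e2: "a + real (Suc m) = a + 1 + real m" by simp
    have "coeff (pderiv (J (Suc m) a b)) i = real (Suc i) * (((a + real (Suc m)) gchoose (Suc m - Suc i)) * ((-(real (Suc m) + a + b + 1)) gchoose Suc i))"
      using True by (simp only: coeff_pderiv coeff_J) simp
    also have "\<dots> = ((a + real (Suc m)) gchoose (m - i)) * (real (Suc i) * ((-(real (Suc m) + a + b + 1)) gchoose Suc i))"
      by simp
    also have "\<dots> = (-(real m + a + b + 2)) * (((a + 1 + real m) gchoose (m - i)) * ((-(real m + (a + 1) + (b + 1) + 1)) gchoose i))"
      unfolding abs e1 e2 by simp
    also have "\<dots> = coeff (smult (-(real m + a + b + 2)) (J m (a + 1) (b + 1))) i"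
      using True by (simp add: coeff_J)
    finally show ?thesis .
  qed (simp add: coeff_pderiv coeff_J)
qed

lemma pderiv_J0: "pderiv (J 0 a b) = 0"
  by (simp add: J_def)


lemma shift_diff_degree:
  fixes q :: "real poly"
  shows "q - pcompose q [:1, 1:] = 0 \<or> degree (q - pcompose q [:1, 1:]) < degree q"
proof (cases "degree q = 0")
  case True
  then obtain c where "q = [:c:]" by (metis degree0_coeffs)
  then show ?thesis by simp
next
  case False
  have dq: "degree (pcompose q [:1, 1:]) = degree q" by (simp add: degree_pcompose)
  have lc: "lead_coeff (pcompose q [:1, 1:]) = lead_coeff q"
    by (simp add: lead_coeff_comp)
  have "coeff (q - pcompose q [:1, 1:]) (degree q) = 0"
    using lc dq by simp
  moreover have "degree (q - pcompose q [:1, 1:]) \<le> degree q"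
    using degree_diff_le[of q "degree q" "pcompose q [:1,1:]"] dq by simp
  ultimately show ?thesis
    by (metis le_neq_implies_less leading_coeff_0_iff)
qed

lemma fin_diff:
  fixes q :: "real poly"
  assumes "degree q < m"
  shows "(\<Sum>j\<le>m. (-1)^j * real (m choose j) * poly q (real j)) = 0"
  using assms
proof (induction m arbitrary: q)
  case 0
  then show ?case by simp
next
  case (Suc m)
  define d where "d = q - pcompose q [:1, 1:]"
  have pd: "poly d (real j) = poly q (real j) - poly q (real (Suc j))" for j
    by (simp add: d_def poly_pcompose algebra_simps)
  have S: "(\<Sum>j\<le>Suc m. (-1)^j * real (Suc m choose j) * poly q (real j))
      = (\<Sum>j\<le>m. (-1)^j * real (m choose j) * poly d (real j))"
  proof -
    have "(\<Sum>j\<le>Suc m. (-1)^j * real (Suc m choose j) * poly q (real j))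
        = poly q 0 + (\<Sum>j\<le>m. (-1)^(Suc j) * real (Suc m choose Suc j) * poly q (real (Suc j)))"
      by (subst sum.atMost_Suc_shift) simp
    also have "\<dots> = poly q 0 + (\<Sum>j\<le>m. (-1)^(Suc j) * real (m choose j) * poly q (real (Suc j))
                 + (-1)^(Suc j) * real (m choose Suc j) * poly q (real (Suc j)))"
      by (simp add: algebra_simps)
    also have "\<dots> = poly q 0 + (\<Sum>j\<le>m. (-1)^(Suc j) * real (m choose j) * poly q (real (Suc j)))
                 + (\<Sum>j\<le>m. (-1)^(Suc j) * real (m choose Suc j) * poly q (real (Suc j)))"
      by (simp only: sum.distrib add.assoc)
    also have "(\<Sum>j\<le>m. (-1)^(Suc j) * real (m choose Suc j) * poly q (real (Suc j)))
        = (\<Sum>j\<le>Suc m. (-1)^j * real (m choose j) * poly q (real j)) - poly q 0"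
      by (subst sum.atMost_Suc_shift) simp
    also have "(\<Sum>j\<le>Suc m. (-1)^j * real (m choose j) * poly q (real j))
        = (\<Sum>j\<le>m. (-1)^j * real (m choose j) * poly q (real j))"
      by simp
    finally have X: "(\<Sum>j\<le>Suc m. (-1)^j * real (Suc m choose j) * poly q (real j))
       = (\<Sum>j\<le>m. (-1)^j * real (m choose j) * poly q (real j)) + (\<Sum>j\<le>m. (-1)^(Suc j) * real (m choose j) * poly q (real (Suc j)))"
      by simp
    have R: "(\<Sum>j\<le>m. (-1)^j * real (m choose j) * poly d (real j))
       = (\<Sum>j\<le>m. (-1)^j * real (m choose j) * poly q (real j) + (-1)^(Suc j) * real (m choose j) * poly q (real (Suc j)))"
      by (intro sum.cong refl) (simp add: pd algebra_simps)
    show ?thesis unfolding X R sum.distrib ..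
  qed
  show ?case
  proof (cases "d = 0")
    case True
    then show ?thesis unfolding S by simp
  next
    case False
    then have "degree d < degree q" using shift_diff_degree[of q] by (simp add: d_def)
    then have "degree d < m" using Suc.prems by simp
    then show ?thesis unfolding S by (rule Suc.IH)
  qed
qed

definition PP :: "real \<Rightarrow> nat \<Rightarrow> real poly" where
  "PP c r = (\<Prod>i<r. [:c + real i, 1:])"

lemma poly_PP: "poly (PP c r) x = pochhammer (c + x) r"
  by (simp add: PP_def poly_prod pochhammer_prod atLeast0LessThan algebra_simps)

lemma PP_nz: "PP c r \<noteq> 0"
  unfolding PP_def by (subst prod_zero_iff) auto

lemma degree_PP: "degree (PP c r) = r"
  unfolding PP_def by (subst degree_prod_eq_sum_degree) auto

definition mu :: "real \<Rightarrow> real \<Rightarrow> nat \<Rightarrow> real" where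
  "mu a b i = pochhammer (a + 1) i / pochhammer (a + b + 2) i"

lemma poch_pos: "c > 0 \<Longrightarrow> pochhammer (c::real) n > 0"
  by (rule pochhammer_pos)

lemma jac_ortho_sum:
  assumes a: "a > -1" and b: "b > -1" and k: "k < m"
  shows "(\<Sum>j\<le>m. coeff (J m a b) j * mu a b (j + k)) = 0"
proof -
  define Q where "Q = PP (a + 1) k * PP (a + b + 2 + real k) (m - 1 - k)"
  have dQ: "degree Q < m"
    using k unfolding Q_def
    by (subst degree_mult_eq) (auto simp: degree_PP PP_nz)
  have pQ: "poly Q x = pochhammer (a + 1 + x) k * pochhammer (a + b + 2 + real k + x) (m - 1 - k)" for x
    by (simp add: Q_def poly_PP)
  define K where "K = pochhammer (a + 1) m / (fact m * pochhammer (a + b + 2) (m - 1))"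
  have ab: "a + b + 2 > 0" using a b by simp
  have tm: "coeff (J m a b) j * mu a b (j + k) = K * ((-1)^j * real (m choose j) * poly Q (real j))"
    if j: "j \<le> m" for j
  proof -
    have c: "coeff (J m a b) j = real (m choose j) * pochhammer (real j + a + 1) (m - j) * pochhammer (real m + a + b + 1) j * (-1) ^ j / fact m"
      using j by (simp add: coeff_J jacobi_term)
    have p1: "pochhammer (a + 1) m = pochhammer (a + 1) j * pochhammer (real j + a + 1) (m - j)"
      using pochhammer_product'[of "a+1" j "m - j"] j by (simp add: algebra_simps)
    have p2: "pochhammer (a + 1) (j + k) = pochhammer (a + 1) j * pochhammer (a + 1 + real j) k"
      using pochhammer_product'[of "a+1" j k] by (simp add: algebra_simps)
    have p3: "pochhammer (a + b + 2) (j + k + (m - 1 - k)) = pochhammer (a + b + 2) (j + k) * pochhammer (a + b + 2 + real k + real j) (m - 1 - k)"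
      using pochhammer_product'[of "a+b+2" "j+k" "m - 1 - k"] by (simp add: algebra_simps)
    have p4: "pochhammer (a + b + 2) ((m - 1) + j) = pochhammer (a + b + 2) (m - 1) * pochhammer (real m + a + b + 1) j"
      using pochhammer_product'[of "a+b+2" "m - 1" j] k by (simp add: algebra_simps of_nat_diff)
    have e: "j + k + (m - 1 - k) = (m - 1) + j" using k by simp
    have n1: "pochhammer (a + b + 2) (j + k) \<noteq> 0" "pochhammer (a + b + 2) (m - 1) \<noteq> 0"
      using poch_pos[OF ab] by (auto simp: less_le)
    have n2: "pochhammer (a + 1) j \<noteq> 0" using poch_pos[of "a+1" j] a by auto
    have q: "pochhammer (real m + a + b + 1) j = pochhammer (a + b + 2) (j + k) * pochhammer (a + b + 2 + real k + real j) (m - 1 - k) / pochhammer (a + b + 2) (m - 1)"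
      using p3 p4 e n1 by (simp add: field_simps)
    have r: "pochhammer (real j + a + 1) (m - j) = pochhammer (a + 1) m / pochhammer (a + 1) j"
      using p1 n2 by (simp add: field_simps)
    show ?thesis
      unfolding c mu_def K_def pQ q r p2 using n1 n2
      by (simp add: field_simps)
  qed
  have "(\<Sum>j\<le>m. coeff (J m a b) j * mu a b (j + k)) = K * (\<Sum>j\<le>m. (-1)^j * real (m choose j) * poly Q (real j))"
    by (simp add: tm sum_distrib_left)
  also have "\<dots> = 0" using fin_diff[OF dQ] by simp
  finally show ?thesis .
qed


definition om :: "real \<Rightarrow> real \<Rightarrow> real \<Rightarrow> real" where
  "om a b t = t powr a * (1 - t) powr b"

lemma not_nonpos_Int: "(x::real) > 0 \<Longrightarrow> x \<notin> \<int>\<^sub>\<le>\<^sub>0"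
  using nonpos_Ints_nonpos by fastforce

lemma Beta_shift:
  assumes a: "a > -1" and b: "b > -1"
  shows "Beta (a + 1 + real i) (b + 1) = Beta (a + 1) (b + 1) * mu a b i"
proof (induction i)
  case 0
  then show ?case by (simp add: mu_def)
next
  case (Suc i)
  define x where "x = a + 1 + real i"
  have x: "x > 0" using a by (simp add: x_def)
  have E: "(x + (b + 1)) * Beta (x + 1) (b + 1) = x * Beta x (b + 1)"
    by (rule Beta_plus1_left[OF not_nonpos_Int[OF x]])
  have xb: "x + (b + 1) > 0" using x b by simp
  have mu: "mu a b (Suc i) = mu a b i * x / (x + (b + 1))"
    by (simp add: mu_def pochhammer_Suc x_def algebra_simps)
  have IH: "Beta x (b + 1) = Beta (a + 1) (b + 1) * mu a b i" using Suc by (simp add: x_def)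
  have "Beta (a + 1 + real (Suc i)) (b + 1) = Beta (x + 1) (b + 1)" by (simp add: x_def)
  also have "\<dots> = x * Beta x (b + 1) / (x + (b + 1))" using E xb by (simp add: field_simps)
  also have "\<dots> = Beta (a + 1) (b + 1) * mu a b (Suc i)" unfolding IH mu by simp
  finally show ?case .
qed

lemma beta_moment:
  assumes a: "a > -1" and b: "b > -1"
  shows "((\<lambda>t. t ^ i * om a b t) has_integral (Beta (a + 1) (b + 1) * mu a b i)) {0..1}"
proof -
  have "((\<lambda>t. t powr (a + 1 + real i - 1) * (1 - t) powr (b + 1 - 1)) has_integral Beta (a + 1 + real i) (b + 1)) {0..1}"
    by (rule has_integral_Beta_real) (use a b in auto)
  then have "((\<lambda>t. t powr (a + 1 + real i - 1) * (1 - t) powr (b + 1 - 1)) has_integral Beta (a + 1) (b + 1) * mu a b i) {0..1}"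
    by (simp add: Beta_shift[OF a b])
  then show ?thesis
  proof (rule has_integral_eq[rotated])
    fix t :: real assume t: "t \<in> {0..1}"
    show "t powr (a + 1 + real i - 1) * (1 - t) powr (b + 1 - 1) = t ^ i * om a b t"
    proof (cases "t = 0")
      case True then show ?thesis by (simp add: om_def)
    next
      case False
      then have "t > 0" using t by simp
      then show ?thesis by (simp add: om_def powr_add powr_realpow algebra_simps)
    qed
  qed
qed

lemma poly_moment_le:
  assumes a: "a > -1" and b: "b > -1" and N: "degree q \<le> N"
  shows "((\<lambda>t. poly q t * om a b t) has_integral (Beta (a + 1) (b + 1) * (\<Sum>i\<le>N. coeff q i * mu a b i))) {0..1}"
proof -
  have "((\<lambda>t. \<Sum>i\<le>N. coeff q i * (t ^ i * om a b t)) has_integral (\<Sum>i\<le>N. coeff q i * (Beta (a + 1) (b + 1) * mu a b i))) {0..1}"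
    by (intro has_integral_sum has_integral_mult_right beta_moment a b) auto
  moreover have "(\<Sum>i\<le>N. coeff q i * (t ^ i * om a b t)) = poly q t * om a b t" for t
  proof -
    have "poly q t = (\<Sum>i\<le>N. coeff q i * t ^ i)"
      unfolding poly_altdef using N
      by (intro sum.mono_neutral_left) (auto simp: coeff_eq_0)
    then show ?thesis by (simp add: sum_distrib_left mult_ac)
  qed
  ultimately show ?thesis by (simp add: sum_distrib_left algebra_simps)
qed

lemma jac_ortho_int:
  assumes a: "a > -1" and b: "b > -1" and k: "k < m"
  shows "((\<lambda>t. poly (J m a b) t * t ^ k * om a b t) has_integral 0) {0..1}"
proof -
  have "((\<lambda>t. \<Sum>j\<le>m. coeff (J m a b) j * (t ^ (j + k) * om a b t)) has_integral (\<Sum>j\<le>m. coeff (J m a b) j * (Beta (a + 1) (b + 1) * mu a b (j + k)))) {0..1}"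
    by (intro has_integral_sum has_integral_mult_right beta_moment a b) auto
  moreover have "(\<Sum>j\<le>m. coeff (J m a b) j * (Beta (a + 1) (b + 1) * mu a b (j + k))) = 0"
  proof -
    have "(\<Sum>j\<le>m. coeff (J m a b) j * (Beta (a + 1) (b + 1) * mu a b (j + k))) = Beta (a + 1) (b + 1) * (\<Sum>j\<le>m. coeff (J m a b) j * mu a b (j + k))"
      by (simp add: sum_distrib_left algebra_simps)
    then show ?thesis using jac_ortho_sum[OF a b k] by simp
  qed
  moreover have "(\<Sum>j\<le>m. coeff (J m a b) j * (t ^ (j + k) * om a b t)) = poly (J m a b) t * t ^ k * om a b t" for t
    by (simp add: poly_J coeff_J power_add sum_distrib_left mult_ac)
  ultimately show ?thesis by simp
qed


locale prm =
  fixes al be v :: real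
  assumes al: "al > -1" and be: "be > -1"
    and v1: "\<bar>al - be\<bar> < \<bar>v\<bar>" and v2: "\<bar>v\<bar> < al + be + 2"
begin

definition "a2 = v * (kappa al v be + 2) / kappa al v (-be)"
definition "a1 = -(kappa al v be + 2)"
definition "d2 = - v * (kappa al (-v) be + 2) / kappa al (-v) (-be)"
definition "d1 = -(kappa al (-v) be + 2)"
definition "w11 = [:al + 1, a1, a2:]"
definition "w12 = [:-(al + 1), al + be + 2:]"
definition "w22 = [:al + 1, d1, d2:]"
definition Dp :: "real poly" where "Dp = [:0, 0, 1:] * [:1, -1:] ^ 2"

lemma v_nz: "v \<noteq> 0" using v1 by auto
lemma k1_nz: "kappa al v (-be) \<noteq> 0" using v1 by (auto simp: kappa_def abs_if split: if_splits)
lemma k2_nz: "kappa al (-v) (-be) \<noteq> 0" using v1 by (auto simp: kappa_def abs_if split: if_splits)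
lemma k3_pos: "kappa al v be + 2 > 0" using v2 by (auto simp: kappa_def abs_if split: if_splits)
lemma k4_pos: "kappa al (-v) be + 2 > 0" using v2 by (auto simp: kappa_def abs_if split: if_splits)

lemma signs: "(v > 0 \<and> kappa al v (-be) > 0 \<and> kappa al (-v) (-be) < 0) \<or> (v < 0 \<and> kappa al v (-be) < 0 \<and> kappa al (-v) (-be) > 0)"
  using v1 by (auto simp: kappa_def abs_if split: if_splits)

lemma a2_pos: "a2 > 0"
proof -
  have "v / kappa al v (-be) > 0" using signs by (auto simp: divide_pos_pos divide_neg_neg divide_pos_neg divide_neg_pos)
  moreover have "a2 = (v / kappa al v (-be)) * (kappa al v be + 2)" unfolding a2_def by simp
  ultimately show ?thesis using k3_pos by (metis mult_pos_pos)
qed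

lemma d2_pos: "d2 > 0"
proof -
  have "(- v) / kappa al (-v) (-be) > 0" using signs by (auto simp: divide_pos_pos divide_neg_neg divide_pos_neg divide_neg_pos)
  moreover have "d2 = ((- v) / kappa al (-v) (-be)) * (kappa al (-v) be + 2)" unfolding d2_def by simp
  ultimately show ?thesis using k4_pos by (metis mult_pos_pos)
qed

lemma poly_w11: "poly w11 t = a2 * t^2 + a1 * t + (al + 1)"
  by (simp add: w11_def power2_eq_square algebra_simps)
lemma poly_w12: "poly w12 t = (al + be + 2) * t - (al + 1)"
  by (simp add: w12_def algebra_simps)
lemma poly_w22: "poly w22 t = d2 * t^2 + d1 * t + (al + 1)"
  by (simp add: w22_def power2_eq_square algebra_simps)
lemma poly_Dp: "poly Dp t = t^2 * (1 - t)^2"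
proof -
  have "poly Dp t = poly [:0, 0, 1:] t * (poly [:1, -1:] t)^2" by (simp add: Dp_def mult.assoc)
  moreover have "poly [:0, 0, 1:] t = t^2" by (simp add: power2_eq_square)
  moreover have "poly [:1, -1:] t = 1 - t" by (simp add: algebra_simps)
  ultimately show ?thesis by presburger
qed

lemma Dp_nz: "Dp \<noteq> 0" unfolding Dp_def by (simp add: power2_eq_square)

lemma det_poly: "poly w11 t * poly w22 t - poly w12 t * poly w12 t = a2 * d2 * (t^2 * (1 - t)^2)"
proof -
  define A where "A = kappa al v be + 2"
  define D where "D = kappa al (-v) be + 2"
  define s where "s = al + be + 2"
  define c0 where "c0 = al + 1"
  have eq1: "A + D = 2 * s" by (simp add: A_def D_def s_def kappa_def)
  have eq3: "a2 * D + A * d2 = 2 * a2 * d2"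
    using k1_nz k2_nz unfolding a2_def d2_def A_def D_def
    by (simp add: field_simps kappa_def)
  define k1 where "k1 = kappa al v (-be)"
  define k2 where "k2 = kappa al (-v) (-be)"
  have k12: "k1 \<noteq> 0" "k2 \<noteq> 0" using k1_nz k2_nz by (simp_all add: k1_def k2_def)
  have a2': "a2 = v * A / k1" by (simp add: a2_def A_def k1_def)
  have d2': "d2 = - v * D / k2" by (simp add: d2_def D_def k2_def)
  have X: "(c0 * (a2 + d2) + A * D - s^2) * (k1 * k2) = c0 * (v * A * k2 - v * D * k1) + (A * D - s^2) * (k1 * k2)"
    unfolding a2' d2' using k12 by (simp add: field_simps)
  have Y: "a2 * d2 * (k1 * k2) = - v * v * A * D"
    unfolding a2' d2' using k12 by (simp add: field_simps)
  have Z: "c0 * (v * A * k2 - v * D * k1) + (A * D - s^2) * (k1 * k2) = - v * v * A * D"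
    unfolding A_def D_def k1_def k2_def c0_def s_def kappa_def by algebra
  have eq2: "c0 * (a2 + d2) + A * D - s^2 = a2 * d2"
    using X Y Z k12 by (metis mult_right_cancel no_zero_divisors)
  have "poly w11 t * poly w22 t - poly w12 t * poly w12 t
      = (a2 * t^2 - A * t + c0) * (d2 * t^2 - D * t + c0) - (s * t - c0)^2"
    unfolding poly_w11 poly_w22 poly_w12 a1_def d1_def A_def D_def s_def c0_def
    by (simp add: power2_eq_square algebra_simps)
  also have "\<dots> = a2 * d2 * (t^2 * (1 - t)^2)"
    using eq1 eq2 eq3 by algebra
  finally show ?thesis .
qed

lemma det_w: "w11 * w22 - w12 * w12 = smult (a2 * d2) Dp"
  by (rule poly_ext) (simp add: det_poly poly_Dp)

lemma w11_pos: assumes "0 < t" "t < 1" shows "poly w11 t > 0"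
proof (rule ccontr)
  assume "\<not> poly w11 t > 0"
  then have "poly w11 t \<le> 0" by simp
  moreover have "0 \<le> poly w11 0" using al by (simp add: poly_w11)
  moreover have "continuous_on {0..t} (\<lambda>x. poly w11 x)" by (intro continuous_intros)
  ultimately obtain s where s: "0 \<le> s" "s \<le> t" "poly w11 s = 0"
    using IVT2'[where f="poly w11" and a=0 and b=t and y=0] assms by auto
  have "s \<noteq> 0" using s al by (auto simp: poly_w11)
  then have "0 < s" "s < 1" using s assms by auto
  then have "a2 * d2 * (s^2 * (1 - s)^2) > 0" using a2_pos d2_pos by simp
  moreover have "poly w12 s * poly w12 s \<ge> 0" by simp
  moreover have "a2 * d2 * (s^2 * (1 - s)^2) = - (poly w12 s * poly w12 s)"
    using det_poly[of s] s(3) by simp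
  ultimately show False by linarith
qed

end


lemma quadform:
  fixes A B C x y :: real
  assumes A: "A > 0" and D: "A * C - B * B > 0"
  shows "A * x * x + 2 * B * x * y + C * y * y \<ge> 0"
    and "A * x * x + 2 * B * x * y + C * y * y = 0 \<Longrightarrow> x = 0 \<and> y = 0"
proof -
  have id: "A * (A * x * x + 2 * B * x * y + C * y * y) = (A * x + B * y)^2 + (A * C - B * B) * y^2"
    by (simp add: power2_eq_square algebra_simps)
  have "(A * x + B * y)^2 + (A * C - B * B) * y^2 \<ge> 0" using D by simp
  then show "A * x * x + 2 * B * x * y + C * y * y \<ge> 0"
    using A id by (metis zero_le_mult_iff not_less)
  assume z: "A * x * x + 2 * B * x * y + C * y * y = 0"
  then have "(A * x + B * y)^2 + (A * C - B * B) * y^2 = 0" using id by simp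
  moreover have "(A * x + B * y)^2 \<ge> 0" "(A * C - B * B) * y^2 \<ge> 0" using D by simp_all
  ultimately have "(A * C - B * B) * y^2 = 0" "(A * x + B * y)^2 = 0" by linarith+
  then have "y = 0" "A * x + B * y = 0" using D by simp_all
  then show "x = 0 \<and> y = 0" using A by simp
qed

lemma om_nonneg: "om a b t \<ge> 0" by (simp add: om_def)

lemma om_pos: "0 < t \<Longrightarrow> t < 1 \<Longrightarrow> om a b t > 0" by (simp add: om_def)

lemma om_01: "om a b 0 = 0" "om a b 1 = 0" by (simp_all add: om_def)

context prm
begin

lemma ortho_poly:
  assumes or: "\<forall>k<n. ((\<lambda>t. poly e t * t^k * om al be t) has_integral 0) {0..1}"
    and r: "r = 0 \<or> degree r < n"
  shows "((\<lambda>t. poly e t * poly r t * om al be t) has_integral 0) {0..1}"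
proof -
  have pr: "poly r t = (\<Sum>k<n. coeff r k * t ^ k)" for t
  proof (cases "r = 0")
    case True then show ?thesis by simp
  next
    case False
    then have "degree r < n" using r by simp
    then show ?thesis unfolding poly_altdef
      by (intro sum.mono_neutral_left) (auto simp: coeff_eq_0)
  qed
  have "((\<lambda>t. \<Sum>k<n. coeff r k * (poly e t * t^k * om al be t)) has_integral (\<Sum>k<n. coeff r k * 0)) {0..1}"
    using or by (intro has_integral_sum has_integral_mult_right) auto
  moreover have "(\<Sum>k<n. coeff r k * (poly e t * t^k * om al be t)) = poly e t * poly r t * om al be t" for t
    unfolding pr by (simp add: sum_distrib_left sum_distrib_right mult_ac)
  ultimately show ?thesis by simp
qed

lemma degree_Dp: "degree Dp = 4"
  unfolding Dp_def by (simp add: degree_mult_eq degree_power_eq power2_eq_square)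

lemma quot_deg:
  assumes "degree h \<le> n + 3" "h = Dp * s"
  shows "s = 0 \<or> degree s < n"
proof (cases "s = 0")
  case False
  then have "degree h = 4 + degree s" using assms(2) Dp_nz by (simp add: degree_mult_eq degree_Dp)
  then show ?thesis using assms(1) by simp
qed simp

lemma RowL:
  fixes e1 e2 :: "real poly"
  assumes deg: "degree e1 \<le> n + 1" "degree e2 \<le> n + 1"
    and dv1: "Dp dvd (e1 * w22 - e2 * w12)" and dv2: "Dp dvd (e2 * w11 - e1 * w12)"
    and or1: "\<forall>k<n. ((\<lambda>t. poly e1 t * t^k * om al be t) has_integral 0) {0..1}"
    and or2: "\<forall>k<n. ((\<lambda>t. poly e2 t * t^k * om al be t) has_integral 0) {0..1}"
  shows "e1 = 0 \<and> e2 = 0"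
proof -
  define c where "c = a2 * d2"
  have c: "c \<noteq> 0" using a2_pos d2_pos by (simp add: c_def)
  obtain s1 where h1: "e1 * w22 - e2 * w12 = Dp * s1" using dv1 by (auto elim: dvdE)
  obtain s2 where h2: "e2 * w11 - e1 * w12 = Dp * s2" using dv2 by (auto elim: dvdE)
  have cD: "smult c Dp = w11 * w22 - w12 * w12" using det_w by (simp add: c_def)
  have "Dp * smult c e1 = e1 * smult c Dp" by (simp add: mult_ac)
  also have "\<dots> = w11 * (e1 * w22 - e2 * w12) + w12 * (e2 * w11 - e1 * w12)"
    unfolding cD by (simp add: algebra_simps)
  also have "\<dots> = Dp * (w11 * s1 + w12 * s2)" unfolding h1 h2 by (simp add: algebra_simps)
  finally have "Dp * smult c e1 = Dp * (w11 * s1 + w12 * s2)" .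
  then have E1: "smult c e1 = w11 * s1 + w12 * s2" using Dp_nz mult_left_cancel by blast
  have "Dp * smult c e2 = e2 * smult c Dp" by (simp add: mult_ac)
  also have "\<dots> = w12 * (e1 * w22 - e2 * w12) + w22 * (e2 * w11 - e1 * w12)"
    unfolding cD by (simp add: algebra_simps)
  also have "\<dots> = Dp * (w12 * s1 + w22 * s2)" unfolding h1 h2 by (simp add: algebra_simps)
  finally have "Dp * smult c e2 = Dp * (w12 * s1 + w22 * s2)" .
  then have E2: "smult c e2 = w12 * s1 + w22 * s2" using Dp_nz mult_left_cancel by blast
  have dw: "degree w11 \<le> 2" "degree w12 \<le> 2" "degree w22 \<le> 2"
    by (auto simp: w11_def w12_def w22_def)
  have "degree (e1 * w22 - e2 * w12) \<le> n + 3"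
    using deg dw by (intro degree_diff_le order.trans[OF degree_mult_le]) auto
  then have s1: "s1 = 0 \<or> degree s1 < n" using h1 quot_deg by blast
  have "degree (e2 * w11 - e1 * w12) \<le> n + 3"
    using deg dw by (intro degree_diff_le order.trans[OF degree_mult_le]) auto
  then have s2: "s2 = 0 \<or> degree s2 < n" using h2 quot_deg by blast
  define Q where "Q = (w11 * s1 + w12 * s2) * s1 + (w12 * s1 + w22 * s2) * s2"
  have i1: "((\<lambda>t. poly e1 t * poly s1 t * om al be t) has_integral 0) {0..1}" by (rule ortho_poly[OF or1 s1])
  have i2: "((\<lambda>t. poly e2 t * poly s2 t * om al be t) has_integral 0) {0..1}" by (rule ortho_poly[OF or2 s2])
  have "((\<lambda>t. c * (poly e1 t * poly s1 t * om al be t) + c * (poly e2 t * poly s2 t * om al be t)) has_integral (c * 0 + c * 0)) {0..1}"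
    by (intro has_integral_add has_integral_mult_right i1 i2)
  moreover have "c * (poly e1 t * poly s1 t * om al be t) + c * (poly e2 t * poly s2 t * om al be t) = poly Q t * om al be t" for t
  proof -
    have X1: "c * poly e1 t = poly w11 t * poly s1 t + poly w12 t * poly s2 t"
      using arg_cong[OF E1, of "\<lambda>p. poly p t"] by simp
    have X2: "c * poly e2 t = poly w12 t * poly s1 t + poly w22 t * poly s2 t"
      using arg_cong[OF E2, of "\<lambda>p. poly p t"] by simp
    have "c * (poly e1 t * poly s1 t * om al be t) + c * (poly e2 t * poly s2 t * om al be t)
      = (c * poly e1 t) * poly s1 t * om al be t + (c * poly e2 t) * poly s2 t * om al be t"
      by (simp add: mult_ac)
    also have "\<dots> = poly Q t * om al be t" unfolding X1 X2 Q_def by (simp add: algebra_simps)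
    finally show ?thesis .
  qed
  ultimately have IQ: "((\<lambda>t. poly Q t * om al be t) has_integral 0) {0..1}" by (simp only: mult_zero_right add_0)
  have Qform: "poly Q t = poly w11 t * poly s1 t * poly s1 t + 2 * poly w12 t * poly s1 t * poly s2 t + poly w22 t * poly s2 t * poly s2 t" for t
    unfolding Q_def by (simp add: algebra_simps)
  have detpos: "poly w11 t * poly w22 t - poly w12 t * poly w12 t > 0" if "0 < t" "t < 1" for t
    using det_poly[of t] that a2_pos d2_pos by simp
  have Qnn: "poly Q t * om al be t \<ge> 0" if "t \<in> {0..1}" for t
  proof (cases "t = 0 \<or> t = 1")
    case True then show ?thesis by (auto simp: om_01)
  next
    case False
    then have t: "0 < t" "t < 1" using that by auto
    have "0 \<le> poly Q t" unfolding Qform by (rule quadform(1)[OF w11_pos[OF t] detpos[OF t]])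
    then show ?thesis using om_nonneg[of al be t] by (rule mult_nonneg_nonneg)
  qed
  define f where "f = (\<lambda>t. poly Q t * om al be t)"
  have cf: "continuous_on {1/4..3/4} f"
    unfolding f_def om_def by (intro continuous_intros) auto
  then have "f integrable_on {1/4..3/4}" by (rule integrable_continuous_interval)
  then obtain I where I: "(f has_integral I) {1/4..3/4}"
    using integrable_integral by blast
  have Qnn': "\<forall>x\<in>{0..1}. 0 \<le> f x" using Qnn unfolding f_def by blast
  have sub: "{1/4..3/4} \<subseteq> {0..1::real}" by auto
  have "I \<le> 0"
    by (rule has_integral_subset_le[OF sub I IQ[folded f_def] Qnn'])
  moreover have "I \<ge> 0"
    by (rule has_integral_nonneg[OF I]) (use Qnn' sub in blast)
  ultimately have I0: "(f has_integral 0) (cbox (1/4) (3/4))" using I by simp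
  have Z: "poly s1 t = 0 \<and> poly s2 t = 0" if t: "t \<in> {1/4..3/4}" for t
  proof -
    have cf': "continuous_on (cbox (1/4) (3/4)) f" using cf by simp
    have nn: "\<And>x. x \<in> box (1/4) (3/4) \<Longrightarrow> 0 \<le> f x"
    proof -
      fix x :: real assume "x \<in> box (1/4) (3/4)"
      then have "x \<in> {0..1}" by (simp add: box_real)
      then show "0 \<le> f x" using Qnn by (simp add: f_def)
    qed
    have ne: "box (1/4) (3/4::real) \<noteq> {}" by (simp add: box_real)
    have tc: "t \<in> cbox (1/4) (3/4)" using t by simp
    have ft: "f t = 0"
      by (rule has_integral_0_cbox_imp_0[OF cf' nn I0 ne tc])
    have t': "0 < t" "t < 1" using t by auto
    have "poly Q t * om al be t = 0" using ft by (simp add: f_def)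
    moreover have "om al be t \<noteq> 0" using om_pos[OF t', of al be] by linarith
    ultimately have "poly Q t = 0" by simp
    then have "poly w11 t * poly s1 t * poly s1 t + 2 * poly w12 t * poly s1 t * poly s2 t + poly w22 t * poly s2 t * poly s2 t = 0"
      by (simp only: Qform)
    then show ?thesis by (rule quadform(2)[OF w11_pos[OF t'] detpos[OF t']])
  qed
  have "s1 = 0"
  proof (rule ccontr)
    assume "s1 \<noteq> 0"
    then have "finite {t. poly s1 t = 0}" by (rule poly_roots_finite)
    moreover have "{1/4..3/4::real} \<subseteq> {t. poly s1 t = 0}" using Z by auto
    ultimately have fin: "finite {1/4..3/4::real}" by (rule finite_subset[rotated])
    have "(1/4::real) < 3/4" by simp
    from infinite_Icc[OF this] fin show False by contradiction
  qed
  moreover have "s2 = 0"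
  proof (rule ccontr)
    assume "s2 \<noteq> 0"
    then have "finite {t. poly s2 t = 0}" by (rule poly_roots_finite)
    moreover have "{1/4..3/4::real} \<subseteq> {t. poly s2 t = 0}" using Z by auto
    ultimately have fin: "finite {1/4..3/4::real}" by (rule finite_subset[rotated])
    have "(1/4::real) < 3/4" by simp
    from infinite_Icc[OF this] fin show False by contradiction
  qed
  ultimately show ?thesis using E1 E2 c by simp
qed

end


lemma mat2_nth [simp]:
  "mat2 a b c d $ 1 $ 1 = a" "mat2 a b c d $ 1 $ 2 = b" "mat2 a b c d $ 2 $ 1 = c" "mat2 a b c d $ 2 $ 2 = d"
  by (simp_all add: mat2_def)

lemma coeff_mult_top:
  fixes p q :: "real poly"
  assumes "degree p \<le> n" "degree q \<le> m"
  shows "coeff (p * q) (n + m) = coeff p n * coeff q m"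
proof -
  have "coeff (p * q) (n + m) = (\<Sum>i\<le>n + m. coeff p i * coeff q (n + m - i))" by (rule coeff_mult)
  also have "\<dots> = (\<Sum>i\<in>{n}. coeff p i * coeff q (n + m - i))"
  proof (rule sum.mono_neutral_right)
    show "\<forall>i\<in>{..n + m} - {n}. coeff p i * coeff q (n + m - i) = 0"
    proof
      fix i assume "i \<in> {..n + m} - {n}"
      then have "i < n \<or> i > n" by auto
      then show "coeff p i * coeff q (n + m - i) = 0"
      proof
        assume "i < n" then have "n + m - i > m" by simp
        then have "coeff q (n + m - i) = 0" using assms(2) by (intro coeff_eq_0) simp
        then show ?thesis by simp
      next
        assume "i > n" then have "coeff p i = 0" using assms(1) by (intro coeff_eq_0) simp
        then show ?thesis by simp
      qed
    qed
  qed auto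
  finally show ?thesis by simp
qed

context prm
begin

definition wm :: "2 \<Rightarrow> 2 \<Rightarrow> real poly" where
  "wm i j = (if i = 1 \<and> j = 1 then w11 else if i = 2 \<and> j = 2 then w22 else w12)"

lemma wm_simps [simp]: "wm 1 1 = w11" "wm 1 2 = w12" "wm 2 1 = w12" "wm 2 2 = w22"
  by (simp_all add: wm_def)

lemma Wtilde_nth: "Wtilde al be v t $ i $ j = poly (wm i j) t"
proof -
  have "Wtilde al be v t = mat2 (poly w11 t) (poly w12 t) (poly w12 t) (poly w22 t)"
    unfolding Wtilde_def poly_w11 poly_w12 poly_w22 a2_def a1_def d2_def d1_def
    by (simp add: algebra_simps)
  then show ?thesis using exhaust_2[of i] exhaust_2[of j] by auto
qed

lemma Wmat_nth: "Wmat al be v t $ i $ j = om al be t * poly (wm i j) t"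
  by (simp add: Wmat_def Wtilde_nth om_def)

lemma P_entries:
  assumes "is_monic_mpoly n Pn"
  obtains p :: "2 \<Rightarrow> 2 \<Rightarrow> real poly" where "\<And>t i j. Pn t $ i $ j = poly (p i j) t"
    "\<And>i j. degree (p i j) \<le> n" "\<And>i j. coeff (p i j) n = (if i = j then 1 else 0)"
proof -
  obtain A :: "nat \<Rightarrow> real^2^2" where A: "A n = mat 1" "\<And>t. Pn t = (\<Sum>k\<le>n. t ^ k *\<^sub>R A k)"
    using assms unfolding is_monic_mpoly_def by blast
  define p where "p i j = (\<Sum>k\<le>n. monom (A k $ i $ j) k)" for i j
  have "Pn t $ i $ j = poly (p i j) t" for t i j
    unfolding A(2) p_def by (simp add: poly_sum poly_monom mult.commute)
  moreover have "degree (p i j) \<le> n" for i j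
    unfolding p_def by (intro degree_sum_le) (auto simp: degree_monom_le intro: order.trans[OF degree_monom_le])
  moreover have "coeff (p i j) n = (if i = j then 1 else 0)" for i j
    unfolding p_def by (simp add: coeff_sum coeff_monom A(1) mat_def)
  ultimately show ?thesis using that by blast
qed

definition Eb :: "2 \<Rightarrow> 2 \<Rightarrow> real^2^2" where
  "Eb r c = (\<chi> a b. if a = r \<and> b = c then 1 else 0)"

lemma G_ortho:
  assumes orth: "\<forall>m Q. m < n \<longrightarrow> is_mpoly m Q \<longrightarrow> mip (Wmat al be v) Pn Q = 0"
    and pe: "\<And>t i j. Pn t $ i $ j = poly (p i j) t"
    and k: "k < n"
  shows "((\<lambda>t. poly (p i 1 * wm 1 j + p i 2 * wm 2 j) t * t ^ k * om al be t) has_integral 0) {0..1}"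
proof -
  define g where "g r = p r 1 * wm 1 j + p r 2 * wm 2 j" for r
  define B where "B = Eb 1 j"
  define Q where "Q t = t ^ k *\<^sub>R B" for t :: real
  have "is_mpoly (n - 1) Q"
    unfolding is_mpoly_def
  proof (intro exI allI)
    fix t :: real
    show "Q t = (\<Sum>k'\<le>n - 1. t ^ k' *\<^sub>R (if k' = k then B else 0))"
      using k by (simp add: Q_def if_distrib[of "\<lambda>x. t ^ _ *\<^sub>R x"] sum.delta' cong: if_cong)
  qed
  moreover have "n - 1 < n" using k by simp
  ultimately have m0: "mip (Wmat al be v) Pn Q = 0" using orth by blast
  define I where "I r = Beta (al + 1) (be + 1) * (\<Sum>i\<le>degree (g r * monom 1 k). coeff (g r * monom 1 k) i * mu al be i)" for r
  have hi: "((\<lambda>t. poly (g r) t * t ^ k * om al be t) has_integral I r) {0..1}" for r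
    using poly_moment_le[OF al be order.refl, of "g r * monom 1 k"]
    by (simp add: I_def poly_monom mult_ac)
  have eqM: "Pn t ** Wmat al be v t ** transpose (Q t)
      = (poly (g 1) t * t ^ k * om al be t) *\<^sub>R Eb 1 1 + (poly (g 2) t * t ^ k * om al be t) *\<^sub>R Eb 2 1" for t
    unfolding vec_eq_iff
    by (rule disjE[OF exhaust_2[of j]]) (simp_all add: forall_2 matrix_matrix_mult_def sum_2 transpose_def Q_def B_def Eb_def pe Wmat_nth g_def algebra_simps)
  have "((\<lambda>t. Pn t ** Wmat al be v t ** transpose (Q t)) has_integral (I 1 *\<^sub>R Eb 1 1 + I 2 *\<^sub>R Eb 2 1)) {0..1}"
    unfolding eqM by (intro has_integral_add has_integral_scaleR_left hi)
  then have "I 1 *\<^sub>R Eb 1 1 + I 2 *\<^sub>R Eb 2 1 = 0"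
    using m0 unfolding mip_def by (simp add: integral_unique)
  then have "(I 1 *\<^sub>R Eb 1 1 + I 2 *\<^sub>R Eb 2 1) $ 1 $ 1 = 0" "(I 1 *\<^sub>R Eb 1 1 + I 2 *\<^sub>R Eb 2 1) $ 2 $ 1 = 0"
    by simp_all
  then have "I 1 = 0" "I 2 = 0" by (simp_all add: Eb_def)
  then have "I i = 0" using exhaust_2[of i] by auto
  then show ?thesis using hi[of i] by (simp add: g_def)
qed

lemma deg_wm: "degree (wm i j) \<le> 2"
  by (auto simp: wm_def w11_def w12_def w22_def)

lemma coeff_wm2: "coeff (wm i j) 2 = (if i = 1 \<and> j = 1 then a2 else if i = 2 \<and> j = 2 then d2 else 0)"
  using exhaust_2[of i] exhaust_2[of j] by (auto simp: wm_def w11_def w12_def w22_def numeral_2_eq_2)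

lemma UL:
  assumes monic: "is_monic_mpoly n Pn"
    and orth: "\<forall>m Q. m < n \<longrightarrow> is_mpoly m Q \<longrightarrow> mip (Wmat al be v) Pn Q = 0"
    and fdeg: "\<And>i j. degree (f i j) \<le> n + 2"
    and flead: "\<And>i j. coeff (f i j) (n + 2) = (if i = 1 \<and> j = 1 then a2 else if i = 2 \<and> j = 2 then d2 else 0)"
    and fort: "\<And>i j k. k < n \<Longrightarrow> ((\<lambda>t. poly (f i j) t * t ^ k * om al be t) has_integral 0) {0..1}"
    and fdv1: "\<And>i. Dp dvd (f i 1 * w22 - f i 2 * w12)"
    and fdv2: "\<And>i. Dp dvd (f i 2 * w11 - f i 1 * w12)"
  shows "Pn t ** Wtilde al be v t = (\<chi> i j. poly (f i j) t)"
proof -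
  obtain p where pe: "\<And>t i j. Pn t $ i $ j = poly (p i j) t"
    and pd: "\<And>i j. degree (p i j) \<le> n" and pc: "\<And>i j. coeff (p i j) n = (if i = j then 1 else 0)"
    using P_entries[OF monic] by blast
  define g where "g i j = p i 1 * wm 1 j + p i 2 * wm 2 j" for i j
  have gd: "degree (g i j) \<le> n + 2" for i j
    unfolding g_def using pd deg_wm
    by (intro degree_add_le order.trans[OF degree_mult_le] add_mono) auto
  have gc: "coeff (g i j) (n + 2) = coeff (f i j) (n + 2)" for i j
  proof -
    have "coeff (g i j) (n + 2) = coeff (p i 1) n * coeff (wm 1 j) 2 + coeff (p i 2) n * coeff (wm 2 j) 2"
      unfolding g_def coeff_add by (simp only: coeff_mult_top[OF pd deg_wm])
    then show ?thesis unfolding flead pc coeff_wm2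
      using exhaust_2[of i] exhaust_2[of j] by auto
  qed
  have ed: "degree (g i j - f i j) \<le> n + 1" for i j
  proof (rule degree_le, intro allI impI)
    fix m assume "n + 1 < m"
    then have "m = n + 2 \<or> m > n + 2" by auto
    then show "coeff (g i j - f i j) m = 0"
    proof
      assume "m = n + 2" then show ?thesis using gc by simp
    next
      assume m: "m > n + 2"
      have "coeff (g i j) m = 0" using gd[of i j] m by (intro coeff_eq_0) simp
      moreover have "coeff (f i j) m = 0" using fdeg[of i j] m by (intro coeff_eq_0) simp
      ultimately show ?thesis by simp
    qed
  qed
  have cD: "w11 * w22 - w12 * w12 = Dp * smult (a2 * d2) 1" using det_w by simp
  have gdv1: "Dp dvd (g i 1 * w22 - g i 2 * w12)" for i
  proof -
    have "g i 1 * w22 - g i 2 * w12 = p i 1 * (w11 * w22 - w12 * w12)"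
      unfolding g_def by (simp add: algebra_simps)
    also have "\<dots> = Dp * (p i 1 * smult (a2 * d2) 1)" unfolding cD by (simp add: mult_ac)
    finally show ?thesis by (rule dvdI)
  qed
  have gdv2: "Dp dvd (g i 2 * w11 - g i 1 * w12)" for i
  proof -
    have "g i 2 * w11 - g i 1 * w12 = p i 2 * (w11 * w22 - w12 * w12)"
      unfolding g_def by (simp add: algebra_simps)
    also have "\<dots> = Dp * (p i 2 * smult (a2 * d2) 1)" unfolding cD by (simp add: mult_ac)
    finally show ?thesis by (rule dvdI)
  qed
  have gort: "((\<lambda>t. poly (g i j) t * t ^ k * om al be t) has_integral 0) {0..1}" if "k < n" for i j k
    unfolding g_def by (rule G_ortho[OF orth pe that])
  have eort: "\<forall>k<n. ((\<lambda>t. poly (g i j - f i j) t * t ^ k * om al be t) has_integral 0) {0..1}" for i j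
  proof (intro allI impI)
    fix k assume k: "k < n"
    have "((\<lambda>t. poly (g i j) t * t ^ k * om al be t - poly (f i j) t * t ^ k * om al be t) has_integral (0 - 0)) {0..1}"
      by (intro has_integral_diff gort fort k)
    then show "((\<lambda>t. poly (g i j - f i j) t * t ^ k * om al be t) has_integral 0) {0..1}"
      by (simp add: algebra_simps)
  qed
  have gf: "g i j = f i j" for i j
  proof -
    have dv1: "Dp dvd ((g i 1 - f i 1) * w22 - (g i 2 - f i 2) * w12)"
    proof -
      have "(g i 1 - f i 1) * w22 - (g i 2 - f i 2) * w12 = (g i 1 * w22 - g i 2 * w12) - (f i 1 * w22 - f i 2 * w12)"
        by (simp add: algebra_simps)
      then show ?thesis using gdv1 fdv1 by (simp add: dvd_diff)
    qed
    have dv2: "Dp dvd ((g i 2 - f i 2) * w11 - (g i 1 - f i 1) * w12)"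
    proof -
      have "(g i 2 - f i 2) * w11 - (g i 1 - f i 1) * w12 = (g i 2 * w11 - g i 1 * w12) - (f i 2 * w11 - f i 1 * w12)"
        by (simp add: algebra_simps)
      then show ?thesis using gdv2 fdv2 by (simp add: dvd_diff)
    qed
    have "g i 1 - f i 1 = 0 \<and> g i 2 - f i 2 = 0"
      by (rule RowL[OF ed ed dv1 dv2 eort eort])
    then show ?thesis using exhaust_2[of j] by auto
  qed
  show ?thesis
    unfolding vec_eq_iff
    by (simp add: matrix_matrix_mult_def sum_2 pe Wtilde_nth gf[symmetric] g_def)
qed

end


lemma root_dvd:
  fixes h :: "real poly"
  assumes "poly h c = 0"
  obtains q where "h = [:- c, 1:] * q"
  using assms by (metis dvdE poly_eq_0_iff_dvd)

lemma Dp_dvd_endpoints: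
  fixes h :: "real poly"
  assumes h0: "poly h 0 = 0" and d0: "poly (pderiv h) 0 = 0"
    and h1: "poly h 1 = 0" and d1: "poly (pderiv h) 1 = 0"
  shows "[:0, 0, 1:] * [:1, -1:] ^ 2 dvd h"
proof -
  obtain q where q: "h = [:0, 1:] * q" by (rule root_dvd[OF h0]) simp
  have "pderiv h = q + [:0, 1:] * pderiv q" unfolding q by (simp add: pderiv_mult pderiv_pCons)
  then have "poly q 0 = 0" using d0 by simp
  then obtain q2 where q2: "q = [:0, 1:] * q2" by (rule root_dvd) simp
  have hq2: "h = [:0, 0, 1:] * q2" unfolding q q2 by (simp add: mult_pCons_left)
  have "poly q2 1 = 0" using h1 unfolding hq2 by simp
  then obtain q3 where q3: "q2 = [:-1, 1:] * q3" by (rule root_dvd)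
  have "poly (pderiv h) 1 = poly (pderiv [:0, 0, 1:]) 1 * poly q2 1 + poly (pderiv q2) 1"
    unfolding hq2 pderiv_mult by simp
  moreover have "poly (pderiv q2) 1 = poly q3 1" unfolding q3 pderiv_mult by (simp add: pderiv_pCons)
  ultimately have "poly (pderiv h) 1 = poly q3 1" using \<open>poly q2 1 = 0\<close> by simp
  then have "poly q3 1 = 0" using d1 by simp
  then obtain q4 where q4: "q3 = [:-1, 1:] * q4" by (rule root_dvd)
  have "h = ([:0, 0, 1:] * [:1, -1:] ^ 2) * q4"
    unfolding hq2 q3 q4 by (intro poly_ext) (simp add: power2_eq_square algebra_simps)
  then show ?thesis by (rule dvdI)
qed

context prm
begin

lemma pderiv_w: "pderiv w11 = [:a1, 2 * a2:]" "pderiv w12 = [:al + be + 2:]" "pderiv w22 = [:d1, 2 * d2:]"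
  by (simp_all add: w11_def w12_def w22_def pderiv_pCons)

lemma endpt_dvd:
  fixes f1 f2 :: "real poly"
  assumes e1: "(al + 1) * (poly f1 0 + poly f2 0) = 0"
    and e2: "poly (pderiv f1) 0 * (al + 1) + poly f1 0 * d1 + poly (pderiv f2) 0 * (al + 1) - poly f2 0 * (al + be + 2) = 0"
    and e3: "poly f1 1 * (d2 + d1 + al + 1) - poly f2 1 * (be + 1) = 0"
    and e4: "poly (pderiv f1) 1 * (d2 + d1 + al + 1) + poly f1 1 * (2 * d2 + d1) - poly (pderiv f2) 1 * (be + 1) - poly f2 1 * (al + be + 2) = 0"
    and e5: "poly (pderiv f2) 0 * (al + 1) + poly f2 0 * a1 + poly (pderiv f1) 0 * (al + 1) - poly f1 0 * (al + be + 2) = 0"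
    and e6: "poly f2 1 * (a2 + a1 + al + 1) - poly f1 1 * (be + 1) = 0"
    and e7: "poly (pderiv f2) 1 * (a2 + a1 + al + 1) + poly f2 1 * (2 * a2 + a1) - poly (pderiv f1) 1 * (be + 1) - poly f1 1 * (al + be + 2) = 0"
  shows "Dp dvd (f1 * w22 - f2 * w12)" "Dp dvd (f2 * w11 - f1 * w12)"
proof -
  have pw: "poly w11 0 = al + 1" "poly w11 1 = a2 + a1 + al + 1" "poly w12 0 = -(al + 1)" "poly w12 1 = be + 1"
    "poly w22 0 = al + 1" "poly w22 1 = d2 + d1 + al + 1"
    "poly (pderiv w11) 0 = a1" "poly (pderiv w11) 1 = 2 * a2 + a1"
    "poly (pderiv w12) 0 = al + be + 2" "poly (pderiv w12) 1 = al + be + 2"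
    "poly (pderiv w22) 0 = d1" "poly (pderiv w22) 1 = 2 * d2 + d1"
    by (simp_all add: w11_def w12_def w22_def pderiv_pCons)
  note R = poly_diff poly_mult pderiv_diff pderiv_mult poly_add pw
  show "Dp dvd (f1 * w22 - f2 * w12)" unfolding Dp_def
  proof (rule Dp_dvd_endpoints)
    show "poly (f1 * w22 - f2 * w12) 0 = 0" using e1 by (simp only: R; simp add: algebra_simps)
    show "poly (pderiv (f1 * w22 - f2 * w12)) 0 = 0" using e2 by (simp only: R; simp add: algebra_simps)
    show "poly (f1 * w22 - f2 * w12) 1 = 0" using e3 by (simp only: R; simp add: algebra_simps)
    show "poly (pderiv (f1 * w22 - f2 * w12)) 1 = 0" using e4 by (simp only: R; simp add: algebra_simps)
  qed
  show "Dp dvd (f2 * w11 - f1 * w12)" unfolding Dp_def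
  proof (rule Dp_dvd_endpoints)
    show "poly (f2 * w11 - f1 * w12) 0 = 0" using e1 by (simp only: R; simp add: algebra_simps)
    show "poly (pderiv (f2 * w11 - f1 * w12)) 0 = 0" using e5 by (simp only: R; simp add: algebra_simps)
    show "poly (f2 * w11 - f1 * w12) 1 = 0" using e6 by (simp only: R; simp add: algebra_simps)
    show "poly (pderiv (f2 * w11 - f1 * w12)) 1 = 0" using e7 by (simp only: R; simp add: algebra_simps)
  qed
qed

end

lemma aux_cancel: "(A::real) \<noteq> 0 \<Longrightarrow> K \<noteq> 0 \<Longrightarrow> F \<noteq> 0 \<Longrightarrow> X * K / A * (A * P / (K * F)) = X * (P / F)"
  by (simp add: field_simps)

lemma J_V0: "poly (J m a b) 0 = pochhammer (a + 1) m / fact m"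
  by (simp add: poly_J_0 gbinomial_pochhammer')

lemma J_V1: "poly (J m a b) 1 = (-1) ^ m * pochhammer (b + 1) m / fact m"
  by (simp add: poly_J_1 gbinomial_pochhammer algebra_simps)

lemma J_D0:
  assumes "a + 1 \<noteq> 0"
  shows "poly (pderiv (J m a b)) 0 = - (real m + a + b + 1) * real m / (a + 1) * (pochhammer (a + 1) m / fact m)"
proof (cases m)
  case 0 then show ?thesis by (simp add: pderiv_J0)
next
  case (Suc k)
  have "poly (pderiv (J m a b)) 0 = - (real k + a + b + 2) * (pochhammer (a + 2) k / fact k)"
    unfolding Suc pderiv_J by (simp add: J_V0 algebra_simps)
  also have "\<dots> = - (real m + a + b + 1) * real m / (a + 1) * ((a + 1) * pochhammer (a + 2) k / (real m * fact k))"
    using assms unfolding Suc by (subst aux_cancel) auto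
  also have "(a + 1) * pochhammer (a + 2) k / (real m * fact k) = pochhammer (a + 1) m / fact m"
    unfolding Suc pochhammer_rec fact_Suc by (simp add: add.assoc)
  finally show ?thesis .
qed

lemma J_D1:
  assumes "b + 1 \<noteq> 0"
  shows "poly (pderiv (J m a b)) 1 = (real m + a + b + 1) * real m / (b + 1) * ((-1) ^ m * pochhammer (b + 1) m / fact m)"
proof (cases m)
  case 0 then show ?thesis by (simp add: pderiv_J0)
next
  case (Suc k)
  have "poly (pderiv (J m a b)) 1 = - (real k + a + b + 2) * ((-1) ^ k * pochhammer (b + 2) k / fact k)"
    unfolding Suc pderiv_J by (simp add: J_V1 algebra_simps)
  also have "\<dots> = (real m + a + b + 1) * real m / (b + 1) * ((b + 1) * ((-1) ^ m * pochhammer (b + 2) k) / (real m * fact k))"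
    using assms unfolding Suc by (subst aux_cancel) (auto simp: field_simps)
  also have "(b + 1) * ((-1) ^ m * pochhammer (b + 2) k) / (real m * fact k) = (-1) ^ m * pochhammer (b + 1) m / fact m"
    unfolding Suc pochhammer_rec fact_Suc by (simp add: add.assoc)
  finally show ?thesis .
qed


definition v0G :: "real \<Rightarrow> real \<Rightarrow> real \<Rightarrow> real \<Rightarrow> real \<Rightarrow> real \<Rightarrow> real" where
  "v0G a b x g2 g1 g0 = g2 + g1 * ((a + 1 + x) / (x + 1)) + g0 * ((a + 1 + x) * (a + 2 + x) / ((x + 1) * (x + 2)))"
definition d0G :: "real \<Rightarrow> real \<Rightarrow> real \<Rightarrow> real \<Rightarrow> real \<Rightarrow> real \<Rightarrow> real" where
  "d0G a b x g2 g1 g0 = g2 * (- (x + a + b + 1) * x / (a + 1)) + g1 * (- (a + 1 + x) * (x + a + b + 2) / (a + 1)) + g0 * (- (a + 1 + x) * (a + 2 + x) * (x + a + b + 3) / ((x + 1) * (a + 1)))"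
definition v1G :: "real \<Rightarrow> real \<Rightarrow> real \<Rightarrow> real \<Rightarrow> real \<Rightarrow> real \<Rightarrow> real" where
  "v1G a b x g2 g1 g0 = g2 + g1 * (- (b + 1 + x) / (x + 1)) + g0 * ((b + 1 + x) * (b + 2 + x) / ((x + 1) * (x + 2)))"
definition d1G :: "real \<Rightarrow> real \<Rightarrow> real \<Rightarrow> real \<Rightarrow> real \<Rightarrow> real \<Rightarrow> real" where
  "d1G a b x g2 g1 g0 = g2 * ((x + a + b + 1) * x / (b + 1)) + g1 * (- (b + 1 + x) * (x + a + b + 2) / (b + 1)) + g0 * ((b + 1 + x) * (b + 2 + x) * (x + a + b + 3) / ((x + 1) * (b + 1)))"
definition v0H :: "real \<Rightarrow> real \<Rightarrow> real \<Rightarrow> real \<Rightarrow> real \<Rightarrow> real \<Rightarrow> real" where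
  "v0H a b x r2 r1 r0 = r0"
definition d0H :: "real \<Rightarrow> real \<Rightarrow> real \<Rightarrow> real \<Rightarrow> real \<Rightarrow> real \<Rightarrow> real" where
  "d0H a b x r2 r1 r0 = r1 * ((a + 1 + x) / (a + 1)) + r0 * (- (x + a + b + 1) * x / (a + 1))"
definition v1H :: "real \<Rightarrow> real \<Rightarrow> real \<Rightarrow> real \<Rightarrow> real \<Rightarrow> real \<Rightarrow> real" where
  "v1H a b x r2 r1 r0 = r2 + r1 + r0"
definition d1H :: "real \<Rightarrow> real \<Rightarrow> real \<Rightarrow> real \<Rightarrow> real \<Rightarrow> real \<Rightarrow> real" where
  "d1H a b x r2 r1 r0 = r2 * (2 + (x + (a + 2) + b + 1) * x / (b + 1)) + r1 * (1 + (x + (a + 1) + b + 1) * x / (b + 1)) + r0 * ((x + a + b + 1) * x / (b + 1))"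

definition gR2_11 :: "real \<Rightarrow> real \<Rightarrow> real \<Rightarrow> real \<Rightarrow> real" where "gR2_11 al be v x = (1)"
definition gR2_12 :: "real \<Rightarrow> real \<Rightarrow> real \<Rightarrow> real \<Rightarrow> real" where "gR2_12 al be v x = (0)"
definition gR2_21 :: "real \<Rightarrow> real \<Rightarrow> real \<Rightarrow> real \<Rightarrow> real" where "gR2_21 al be v x = (0)"
definition gR2_22 :: "real \<Rightarrow> real \<Rightarrow> real \<Rightarrow> real \<Rightarrow> real" where "gR2_22 al be v x = (1)"
definition gR1_11 :: "real \<Rightarrow> real \<Rightarrow> real \<Rightarrow> real \<Rightarrow> real" where "gR1_11 al be v x = (- (al + v - be) / v)"
definition gR1_12 :: "real \<Rightarrow> real \<Rightarrow> real \<Rightarrow> real \<Rightarrow> real" where "gR1_12 al be v x = ((al + be + 2*x + 2) * (al + v - be) / ((al + v + be + 2*x + 2) * v))"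
definition gR1_21 :: "real \<Rightarrow> real \<Rightarrow> real \<Rightarrow> real \<Rightarrow> real" where "gR1_21 al be v x = (- ((al + be + 2*x + 2) * (al - v - be)) / ((al - v + be + 2*x + 2) * v))"
definition gR1_22 :: "real \<Rightarrow> real \<Rightarrow> real \<Rightarrow> real \<Rightarrow> real" where "gR1_22 al be v x = ((al - v - be) / v)"
definition gR0_11 :: "real \<Rightarrow> real \<Rightarrow> real \<Rightarrow> real \<Rightarrow> real" where "gR0_11 al be v x = ((1 + x + al) * (al + v - be) / (v * (al + v + be + 2*x + 2)))"
definition gR0_12 :: "real \<Rightarrow> real \<Rightarrow> real \<Rightarrow> real \<Rightarrow> real" where "gR0_12 al be v x = (- ((1 + x + al) * (al + v - be) / (v * (al + v + be + 2*x + 2))))"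
definition gR0_21 :: "real \<Rightarrow> real \<Rightarrow> real \<Rightarrow> real \<Rightarrow> real" where "gR0_21 al be v x = ((1 + x + al) * (al - v - be) / (v * (al - v + be + 2*x + 2)))"
definition gR0_22 :: "real \<Rightarrow> real \<Rightarrow> real \<Rightarrow> real \<Rightarrow> real" where "gR0_22 al be v x = (- ((1 + x + al) * (al - v - be) / (v * (al - v + be + 2*x + 2))))"
definition gC2_11 :: "real \<Rightarrow> real \<Rightarrow> real \<Rightarrow> real \<Rightarrow> real" where "gC2_11 al be v x = ((be + x + 1) * (al + x + 1) / ((al + be + 2*x + 2) * (al + be + 2*x + 3)) * ((al - v + be + 2*x + 4) / (al + v + be + 2*x + 2)))"
definition gC2_12 :: "real \<Rightarrow> real \<Rightarrow> real \<Rightarrow> real \<Rightarrow> real" where "gC2_12 al be v x = (0)"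
definition gC2_21 :: "real \<Rightarrow> real \<Rightarrow> real \<Rightarrow> real \<Rightarrow> real" where "gC2_21 al be v x = (0)"
definition gC2_22 :: "real \<Rightarrow> real \<Rightarrow> real \<Rightarrow> real \<Rightarrow> real" where "gC2_22 al be v x = ((be + x + 1) * (al + x + 1) / ((al + be + 2*x + 2) * (al + be + 2*x + 3)) * ((al + v + be + 2*x + 4) / (al - v + be + 2*x + 2)))"
definition gC1_11 :: "real \<Rightarrow> real \<Rightarrow> real \<Rightarrow> real \<Rightarrow> real" where "gC1_11 al be v x = ((x + 1) / v * ((al - be) * (al - v + be + 2*x + 4) / ((al + be + 2*x + 2) * (al + be + 2*x + 4))))"
definition gC1_12 :: "real \<Rightarrow> real \<Rightarrow> real \<Rightarrow> real \<Rightarrow> real" where "gC1_12 al be v x = ((x + 1) / v * (- ((al + v - be) / (al + v + be + 2*x + 2))))"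
definition gC1_21 :: "real \<Rightarrow> real \<Rightarrow> real \<Rightarrow> real \<Rightarrow> real" where "gC1_21 al be v x = ((x + 1) / v * ((al - v - be) / (al - v + be + 2*x + 2)))"
definition gC1_22 :: "real \<Rightarrow> real \<Rightarrow> real \<Rightarrow> real \<Rightarrow> real" where "gC1_22 al be v x = ((x + 1) / v * (- ((al - be) * (al + v + be + 2*x + 4)) / ((al + be + 2*x + 2) * (al + be + 2*x + 4))))"
definition gC0_11 :: "real \<Rightarrow> real \<Rightarrow> real \<Rightarrow> real \<Rightarrow> real" where "gC0_11 al be v x = ((x + 1) * (x + 2) / ((al + be + 2*x + 4) * (al + be + 2*x + 3)))"
definition gC0_12 :: "real \<Rightarrow> real \<Rightarrow> real \<Rightarrow> real \<Rightarrow> real" where "gC0_12 al be v x = (0)"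
definition gC0_21 :: "real \<Rightarrow> real \<Rightarrow> real \<Rightarrow> real \<Rightarrow> real" where "gC0_21 al be v x = (0)"
definition gC0_22 :: "real \<Rightarrow> real \<Rightarrow> real \<Rightarrow> real \<Rightarrow> real" where "gC0_22 al be v x = ((x + 1) * (x + 2) / ((al + be + 2*x + 4) * (al + be + 2*x + 3)))"

definition rd11v0 :: "real \<Rightarrow> real \<Rightarrow> real \<Rightarrow> real \<Rightarrow> real" where "rd11v0 al be v x = (((al^2) - (al * be) + (al * v) + (al * x) + (al) - (be * x) - (be) + (v * x) + (v)) / (v * (al + v + be + 2*x + 2)))"
definition rd11d0 :: "real \<Rightarrow> real \<Rightarrow> real \<Rightarrow> real \<Rightarrow> real" where "rd11d0 al be v x = ((- (al^3 * x) - (al^3) - (al^2 * v * x) - (2 * al^2 * v) - (2 * al^2 * x^2) - (5 * al^2 * x) - (3 * al^2) + (al * be^2 * x) + (al * be^2) - (al * be * v * x) + (al * be * x^2) + (3 * al * be * x) + (2 * al * be) - (al * v^2) - (2 * al * v * x^2) - (6 * al * v * x) - (4 * al * v) - (al * x^3) - (4 * al * x^2) - (5 * al * x) - (2 * al) + (be^2 * x^2) + (2 * be^2 * x) + (be^2) - (be * v * x^2) - (be * v * x) + (be * x^3) + (4 * be * x^2) + (5 * be * x) + (2 * be) - (v^2 * x) - (v^2) - (v * x^3) - (4 * v * x^2) - (5 * v * x) - (2 * v)) / (v * (al + 1) * (al + v + be + 2*x + 2)))"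
definition rd11v1 :: "real \<Rightarrow> real \<Rightarrow> real \<Rightarrow> real \<Rightarrow> real" where "rd11v1 al be v x = ((- (al * be) - (al * x) - (al) + (be^2) + (be * v) + (be * x) + (be) + (v * x) + (v)) / (v * (al + v + be + 2*x + 2)))"
definition rd11d1 :: "real \<Rightarrow> real \<Rightarrow> real \<Rightarrow> real \<Rightarrow> real" where "rd11d1 al be v x = ((- (al^2 * be * x) - (al^2 * be) - (al^2 * x^2) - (2 * al^2 * x) - (al^2) + (al * be * v * x) - (al * be * x^2) - (3 * al * be * x) - (2 * al * be) + (al * v * x^2) + (al * v * x) - (al * x^3) - (4 * al * x^2) - (5 * al * x) - (2 * al) + (be^3 * x) + (be^3) + (be^2 * v * x) + (2 * be^2 * v) + (2 * be^2 * x^2) + (5 * be^2 * x) + (3 * be^2) + (be * v^2) + (2 * be * v * x^2) + (6 * be * v * x) + (4 * be * v) + (be * x^3) + (4 * be * x^2) + (5 * be * x) + (2 * be) + (v^2 * x) + (v^2) + (v * x^3) + (4 * v * x^2) + (5 * v * x) + (2 * v)) / ((be + 1) * v * (al + v + be + 2*x + 2)))"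
definition rd12v0 :: "real \<Rightarrow> real \<Rightarrow> real \<Rightarrow> real \<Rightarrow> real" where "rd12v0 al be v x = ((- (al^2) + (al * be) - (al * v) - (al * x) - (al) + (be * x) + (be) - (v * x) - (v)) / (v * (al + v + be + 2*x + 2)))"
definition rd12d0 :: "real \<Rightarrow> real \<Rightarrow> real \<Rightarrow> real \<Rightarrow> real" where "rd12d0 al be v x = (((al^3 * x) + (al^3) + (al^2 * v * x) + (al^2 * v) + (2 * al^2 * x^2) + (5 * al^2 * x) + (3 * al^2) - (al * be^2 * x) - (al * be^2) + (al * be * v * x) + (al * be * v) - (al * be * x^2) - (3 * al * be * x) - (2 * al * be) + (2 * al * v * x^2) + (5 * al * v * x) + (3 * al * v) + (al * x^3) + (4 * al * x^2) + (5 * al * x) + (2 * al) - (be^2 * x^2) - (2 * be^2 * x) - (be^2) + (be * v * x^2) + (2 * be * v * x) + (be * v) - (be * x^3) - (4 * be * x^2) - (5 * be * x) - (2 * be) + (v * x^3) + (4 * v * x^2) + (5 * v * x) + (2 * v)) / ((al + v + be + 2*x + 2) * v * (al + 1)))"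
definition rd12v1 :: "real \<Rightarrow> real \<Rightarrow> real \<Rightarrow> real \<Rightarrow> real" where "rd12v1 al be v x = (((al * be) + (al * x) + (al) - (be^2) + (be * v) - (be * x) - (be) + (v * x) + (v)) / ((al + v + be + 2*x + 2) * v))"
definition rd12d1 :: "real \<Rightarrow> real \<Rightarrow> real \<Rightarrow> real \<Rightarrow> real" where "rd12d1 al be v x = (((al^2 * be * x) + (al^2 * be) + (al^2 * x^2) + (2 * al^2 * x) + (al^2) + (al * be * v * x) + (al * be * v) + (al * be * x^2) + (3 * al * be * x) + (2 * al * be) + (al * v * x^2) + (2 * al * v * x) + (al * v) + (al * x^3) + (4 * al * x^2) + (5 * al * x) + (2 * al) - (be^3 * x) - (be^3) + (be^2 * v * x) + (be^2 * v) - (2 * be^2 * x^2) - (5 * be^2 * x) - (3 * be^2) + (2 * be * v * x^2) + (5 * be * v * x) + (3 * be * v) - (be * x^3) - (4 * be * x^2) - (5 * be * x) - (2 * be) + (v * x^3) + (4 * v * x^2) + (5 * v * x) + (2 * v)) / ((al + v + be + 2*x + 2) * v * (be + 1)))"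
definition rd21v0 :: "real \<Rightarrow> real \<Rightarrow> real \<Rightarrow> real \<Rightarrow> real" where "rd21v0 al be v x = (((al^2) - (al * be) - (al * v) + (al * x) + (al) - (be * x) - (be) - (v * x) - (v)) / (v * (al - v + be + 2*x + 2)))"
definition rd21d0 :: "real \<Rightarrow> real \<Rightarrow> real \<Rightarrow> real \<Rightarrow> real" where "rd21d0 al be v x = ((- (al^3 * x) - (al^3) + (al^2 * v * x) + (al^2 * v) - (2 * al^2 * x^2) - (5 * al^2 * x) - (3 * al^2) + (al * be^2 * x) + (al * be^2) + (al * be * v * x) + (al * be * v) + (al * be * x^2) + (3 * al * be * x) + (2 * al * be) + (2 * al * v * x^2) + (5 * al * v * x) + (3 * al * v) - (al * x^3) - (4 * al * x^2) - (5 * al * x) - (2 * al) + (be^2 * x^2) + (2 * be^2 * x) + (be^2) + (be * v * x^2) + (2 * be * v * x) + (be * v) + (be * x^3) + (4 * be * x^2) + (5 * be * x) + (2 * be) + (v * x^3) + (4 * v * x^2) + (5 * v * x) + (2 * v)) / ((al - v + be + 2*x + 2) * v * (al + 1)))"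
definition rd21v1 :: "real \<Rightarrow> real \<Rightarrow> real \<Rightarrow> real \<Rightarrow> real" where "rd21v1 al be v x = ((- (al * be) - (al * x) - (al) + (be^2) + (be * v) + (be * x) + (be) + (v * x) + (v)) / ((al - v + be + 2*x + 2) * v))"
definition rd21d1 :: "real \<Rightarrow> real \<Rightarrow> real \<Rightarrow> real \<Rightarrow> real" where "rd21d1 al be v x = ((- (al^2 * be * x) - (al^2 * be) - (al^2 * x^2) - (2 * al^2 * x) - (al^2) + (al * be * v * x) + (al * be * v) - (al * be * x^2) - (3 * al * be * x) - (2 * al * be) + (al * v * x^2) + (2 * al * v * x) + (al * v) - (al * x^3) - (4 * al * x^2) - (5 * al * x) - (2 * al) + (be^3 * x) + (be^3) + (be^2 * v * x) + (be^2 * v) + (2 * be^2 * x^2) + (5 * be^2 * x) + (3 * be^2) + (2 * be * v * x^2) + (5 * be * v * x) + (3 * be * v) + (be * x^3) + (4 * be * x^2) + (5 * be * x) + (2 * be) + (v * x^3) + (4 * v * x^2) + (5 * v * x) + (2 * v)) / ((al - v + be + 2*x + 2) * v * (be + 1)))"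
definition rd22v0 :: "real \<Rightarrow> real \<Rightarrow> real \<Rightarrow> real \<Rightarrow> real" where "rd22v0 al be v x = ((- (al^2) + (al * be) + (al * v) - (al * x) - (al) + (be * x) + (be) + (v * x) + (v)) / (v * (al - v + be + 2*x + 2)))"
definition rd22d0 :: "real \<Rightarrow> real \<Rightarrow> real \<Rightarrow> real \<Rightarrow> real" where "rd22d0 al be v x = (((al^3 * x) + (al^3) - (al^2 * v * x) - (2 * al^2 * v) + (2 * al^2 * x^2) + (5 * al^2 * x) + (3 * al^2) - (al * be^2 * x) - (al * be^2) - (al * be * v * x) - (al * be * x^2) - (3 * al * be * x) - (2 * al * be) + (al * v^2) - (2 * al * v * x^2) - (6 * al * v * x) - (4 * al * v) + (al * x^3) + (4 * al * x^2) + (5 * al * x) + (2 * al) - (be^2 * x^2) - (2 * be^2 * x) - (be^2) - (be * v * x^2) - (be * v * x) - (be * x^3) - (4 * be * x^2) - (5 * be * x) - (2 * be) + (v^2 * x) + (v^2) - (v * x^3) - (4 * v * x^2) - (5 * v * x) - (2 * v)) / (v * (al + 1) * (al - v + be + 2*x + 2)))"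
definition rd22v1 :: "real \<Rightarrow> real \<Rightarrow> real \<Rightarrow> real \<Rightarrow> real" where "rd22v1 al be v x = (((al * be) + (al * x) + (al) - (be^2) + (be * v) - (be * x) - (be) + (v * x) + (v)) / (v * (al - v + be + 2*x + 2)))"
definition rd22d1 :: "real \<Rightarrow> real \<Rightarrow> real \<Rightarrow> real \<Rightarrow> real" where "rd22d1 al be v x = (((al^2 * be * x) + (al^2 * be) + (al^2 * x^2) + (2 * al^2 * x) + (al^2) + (al * be * v * x) + (al * be * x^2) + (3 * al * be * x) + (2 * al * be) + (al * v * x^2) + (al * v * x) + (al * x^3) + (4 * al * x^2) + (5 * al * x) + (2 * al) - (be^3 * x) - (be^3) + (be^2 * v * x) + (2 * be^2 * v) - (2 * be^2 * x^2) - (5 * be^2 * x) - (3 * be^2) - (be * v^2) + (2 * be * v * x^2) + (6 * be * v * x) + (4 * be * v) - (be * x^3) - (4 * be * x^2) - (5 * be * x) - (2 * be) - (v^2 * x) - (v^2) + (v * x^3) + (4 * v * x^2) + (5 * v * x) + (2 * v)) / ((be + 1) * v * (al - v + be + 2*x + 2)))"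

lemma idH11v0:
  fixes al be v x :: real
  assumes nz: "v \<noteq> 0" "al + 1 \<noteq> 0" "be + 1 \<noteq> 0" "x + 1 \<noteq> 0" "x + 2 \<noteq> 0" "al + v + be + 2*x + 2 \<noteq> 0" "al - v + be + 2*x + 2 \<noteq> 0"
    "al + be + 2*x + 2 \<noteq> 0" "al + be + 2*x + 3 \<noteq> 0" "al + be + 2*x + 4 \<noteq> 0" "al + v - be \<noteq> 0" "al - v - be \<noteq> 0"
    "al + v \<noteq> be" "al - v \<noteq> be"
  shows "v0H al be x (gR2_11 al be v x) (gR1_11 al be v x) (gR0_11 al be v x) = rd11v0 al be v x"
  unfolding v0H_def gR2_11_def gR1_11_def gR0_11_def rd11v0_def by (simp add: divide_simps nz; algebra)

lemma idG11v0:
  fixes al be v x :: real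
  assumes nz: "v \<noteq> 0" "al + 1 \<noteq> 0" "be + 1 \<noteq> 0" "x + 1 \<noteq> 0" "x + 2 \<noteq> 0" "al + v + be + 2*x + 2 \<noteq> 0" "al - v + be + 2*x + 2 \<noteq> 0"
    "al + be + 2*x + 2 \<noteq> 0" "al + be + 2*x + 3 \<noteq> 0" "al + be + 2*x + 4 \<noteq> 0" "al + v - be \<noteq> 0" "al - v - be \<noteq> 0"
    "al + v \<noteq> be" "al - v \<noteq> be"
  shows "v0G al be x (gC2_11 al be v x) (gC1_11 al be v x) (gC0_11 al be v x) = rd11v0 al be v x"
  unfolding v0G_def gC2_11_def gC1_11_def gC0_11_def rd11v0_def by (simp add: divide_simps nz; algebra)

lemma idH11d0:
  fixes al be v x :: real
  assumes nz: "v \<noteq> 0" "al + 1 \<noteq> 0" "be + 1 \<noteq> 0" "x + 1 \<noteq> 0" "x + 2 \<noteq> 0" "al + v + be + 2*x + 2 \<noteq> 0" "al - v + be + 2*x + 2 \<noteq> 0"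
    "al + be + 2*x + 2 \<noteq> 0" "al + be + 2*x + 3 \<noteq> 0" "al + be + 2*x + 4 \<noteq> 0" "al + v - be \<noteq> 0" "al - v - be \<noteq> 0"
    "al + v \<noteq> be" "al - v \<noteq> be"
  shows "d0H al be x (gR2_11 al be v x) (gR1_11 al be v x) (gR0_11 al be v x) = rd11d0 al be v x"
  unfolding d0H_def gR2_11_def gR1_11_def gR0_11_def rd11d0_def by (simp add: divide_simps nz; algebra)

lemma idG11d0:
  fixes al be v x :: real
  assumes nz: "v \<noteq> 0" "al + 1 \<noteq> 0" "be + 1 \<noteq> 0" "x + 1 \<noteq> 0" "x + 2 \<noteq> 0" "al + v + be + 2*x + 2 \<noteq> 0" "al - v + be + 2*x + 2 \<noteq> 0"
    "al + be + 2*x + 2 \<noteq> 0" "al + be + 2*x + 3 \<noteq> 0" "al + be + 2*x + 4 \<noteq> 0" "al + v - be \<noteq> 0" "al - v - be \<noteq> 0"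
    "al + v \<noteq> be" "al - v \<noteq> be"
  shows "d0G al be x (gC2_11 al be v x) (gC1_11 al be v x) (gC0_11 al be v x) = rd11d0 al be v x"
  unfolding d0G_def gC2_11_def gC1_11_def gC0_11_def rd11d0_def by (simp add: divide_simps nz; algebra)

lemma idH11v1:
  fixes al be v x :: real
  assumes nz: "v \<noteq> 0" "al + 1 \<noteq> 0" "be + 1 \<noteq> 0" "x + 1 \<noteq> 0" "x + 2 \<noteq> 0" "al + v + be + 2*x + 2 \<noteq> 0" "al - v + be + 2*x + 2 \<noteq> 0"
    "al + be + 2*x + 2 \<noteq> 0" "al + be + 2*x + 3 \<noteq> 0" "al + be + 2*x + 4 \<noteq> 0" "al + v - be \<noteq> 0" "al - v - be \<noteq> 0"
    "al + v \<noteq> be" "al - v \<noteq> be"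
  shows "v1H al be x (gR2_11 al be v x) (gR1_11 al be v x) (gR0_11 al be v x) = rd11v1 al be v x"
  unfolding v1H_def gR2_11_def gR1_11_def gR0_11_def rd11v1_def by (simp add: divide_simps nz; algebra)

lemma idG11v1:
  fixes al be v x :: real
  assumes nz: "v \<noteq> 0" "al + 1 \<noteq> 0" "be + 1 \<noteq> 0" "x + 1 \<noteq> 0" "x + 2 \<noteq> 0" "al + v + be + 2*x + 2 \<noteq> 0" "al - v + be + 2*x + 2 \<noteq> 0"
    "al + be + 2*x + 2 \<noteq> 0" "al + be + 2*x + 3 \<noteq> 0" "al + be + 2*x + 4 \<noteq> 0" "al + v - be \<noteq> 0" "al - v - be \<noteq> 0"
    "al + v \<noteq> be" "al - v \<noteq> be"
  shows "v1G al be x (gC2_11 al be v x) (gC1_11 al be v x) (gC0_11 al be v x) = rd11v1 al be v x"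
  unfolding v1G_def gC2_11_def gC1_11_def gC0_11_def rd11v1_def by (simp add: divide_simps nz; algebra)

lemma idH11d1:
  fixes al be v x :: real
  assumes nz: "v \<noteq> 0" "al + 1 \<noteq> 0" "be + 1 \<noteq> 0" "x + 1 \<noteq> 0" "x + 2 \<noteq> 0" "al + v + be + 2*x + 2 \<noteq> 0" "al - v + be + 2*x + 2 \<noteq> 0"
    "al + be + 2*x + 2 \<noteq> 0" "al + be + 2*x + 3 \<noteq> 0" "al + be + 2*x + 4 \<noteq> 0" "al + v - be \<noteq> 0" "al - v - be \<noteq> 0"
    "al + v \<noteq> be" "al - v \<noteq> be"
  shows "d1H al be x (gR2_11 al be v x) (gR1_11 al be v x) (gR0_11 al be v x) = rd11d1 al be v x"
  unfolding d1H_def gR2_11_def gR1_11_def gR0_11_def rd11d1_def by (simp add: divide_simps nz; algebra)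

lemma idG11d1:
  fixes al be v x :: real
  assumes nz: "v \<noteq> 0" "al + 1 \<noteq> 0" "be + 1 \<noteq> 0" "x + 1 \<noteq> 0" "x + 2 \<noteq> 0" "al + v + be + 2*x + 2 \<noteq> 0" "al - v + be + 2*x + 2 \<noteq> 0"
    "al + be + 2*x + 2 \<noteq> 0" "al + be + 2*x + 3 \<noteq> 0" "al + be + 2*x + 4 \<noteq> 0" "al + v - be \<noteq> 0" "al - v - be \<noteq> 0"
    "al + v \<noteq> be" "al - v \<noteq> be"
  shows "d1G al be x (gC2_11 al be v x) (gC1_11 al be v x) (gC0_11 al be v x) = rd11d1 al be v x"
  unfolding d1G_def gC2_11_def gC1_11_def gC0_11_def rd11d1_def by (simp add: divide_simps nz; algebra)

lemma idH12v0:
  fixes al be v x :: real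
  assumes nz: "v \<noteq> 0" "al + 1 \<noteq> 0" "be + 1 \<noteq> 0" "x + 1 \<noteq> 0" "x + 2 \<noteq> 0" "al + v + be + 2*x + 2 \<noteq> 0" "al - v + be + 2*x + 2 \<noteq> 0"
    "al + be + 2*x + 2 \<noteq> 0" "al + be + 2*x + 3 \<noteq> 0" "al + be + 2*x + 4 \<noteq> 0" "al + v - be \<noteq> 0" "al - v - be \<noteq> 0"
    "al + v \<noteq> be" "al - v \<noteq> be"
  shows "v0H al be x (gR2_12 al be v x) (gR1_12 al be v x) (gR0_12 al be v x) = rd12v0 al be v x"
  unfolding v0H_def gR2_12_def gR1_12_def gR0_12_def rd12v0_def by (simp add: divide_simps nz; algebra)

lemma idG12v0:
  fixes al be v x :: real
  assumes nz: "v \<noteq> 0" "al + 1 \<noteq> 0" "be + 1 \<noteq> 0" "x + 1 \<noteq> 0" "x + 2 \<noteq> 0" "al + v + be + 2*x + 2 \<noteq> 0" "al - v + be + 2*x + 2 \<noteq> 0"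
    "al + be + 2*x + 2 \<noteq> 0" "al + be + 2*x + 3 \<noteq> 0" "al + be + 2*x + 4 \<noteq> 0" "al + v - be \<noteq> 0" "al - v - be \<noteq> 0"
    "al + v \<noteq> be" "al - v \<noteq> be"
  shows "v0G al be x (gC2_12 al be v x) (gC1_12 al be v x) (gC0_12 al be v x) = rd12v0 al be v x"
  unfolding v0G_def gC2_12_def gC1_12_def gC0_12_def rd12v0_def by (simp add: divide_simps nz; algebra)

lemma idH12d0:
  fixes al be v x :: real
  assumes nz: "v \<noteq> 0" "al + 1 \<noteq> 0" "be + 1 \<noteq> 0" "x + 1 \<noteq> 0" "x + 2 \<noteq> 0" "al + v + be + 2*x + 2 \<noteq> 0" "al - v + be + 2*x + 2 \<noteq> 0"
    "al + be + 2*x + 2 \<noteq> 0" "al + be + 2*x + 3 \<noteq> 0" "al + be + 2*x + 4 \<noteq> 0" "al + v - be \<noteq> 0" "al - v - be \<noteq> 0"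
    "al + v \<noteq> be" "al - v \<noteq> be"
  shows "d0H al be x (gR2_12 al be v x) (gR1_12 al be v x) (gR0_12 al be v x) = rd12d0 al be v x"
  unfolding d0H_def gR2_12_def gR1_12_def gR0_12_def rd12d0_def by (simp add: divide_simps nz; algebra)

lemma idG12d0:
  fixes al be v x :: real
  assumes nz: "v \<noteq> 0" "al + 1 \<noteq> 0" "be + 1 \<noteq> 0" "x + 1 \<noteq> 0" "x + 2 \<noteq> 0" "al + v + be + 2*x + 2 \<noteq> 0" "al - v + be + 2*x + 2 \<noteq> 0"
    "al + be + 2*x + 2 \<noteq> 0" "al + be + 2*x + 3 \<noteq> 0" "al + be + 2*x + 4 \<noteq> 0" "al + v - be \<noteq> 0" "al - v - be \<noteq> 0"
    "al + v \<noteq> be" "al - v \<noteq> be"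
  shows "d0G al be x (gC2_12 al be v x) (gC1_12 al be v x) (gC0_12 al be v x) = rd12d0 al be v x"
  unfolding d0G_def gC2_12_def gC1_12_def gC0_12_def rd12d0_def by (simp add: divide_simps nz; algebra)

lemma idH12v1:
  fixes al be v x :: real
  assumes nz: "v \<noteq> 0" "al + 1 \<noteq> 0" "be + 1 \<noteq> 0" "x + 1 \<noteq> 0" "x + 2 \<noteq> 0" "al + v + be + 2*x + 2 \<noteq> 0" "al - v + be + 2*x + 2 \<noteq> 0"
    "al + be + 2*x + 2 \<noteq> 0" "al + be + 2*x + 3 \<noteq> 0" "al + be + 2*x + 4 \<noteq> 0" "al + v - be \<noteq> 0" "al - v - be \<noteq> 0"
    "al + v \<noteq> be" "al - v \<noteq> be"
  shows "v1H al be x (gR2_12 al be v x) (gR1_12 al be v x) (gR0_12 al be v x) = rd12v1 al be v x"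
  unfolding v1H_def gR2_12_def gR1_12_def gR0_12_def rd12v1_def by (simp add: divide_simps nz; algebra)

lemma idG12v1:
  fixes al be v x :: real
  assumes nz: "v \<noteq> 0" "al + 1 \<noteq> 0" "be + 1 \<noteq> 0" "x + 1 \<noteq> 0" "x + 2 \<noteq> 0" "al + v + be + 2*x + 2 \<noteq> 0" "al - v + be + 2*x + 2 \<noteq> 0"
    "al + be + 2*x + 2 \<noteq> 0" "al + be + 2*x + 3 \<noteq> 0" "al + be + 2*x + 4 \<noteq> 0" "al + v - be \<noteq> 0" "al - v - be \<noteq> 0"
    "al + v \<noteq> be" "al - v \<noteq> be"
  shows "v1G al be x (gC2_12 al be v x) (gC1_12 al be v x) (gC0_12 al be v x) = rd12v1 al be v x"
  unfolding v1G_def gC2_12_def gC1_12_def gC0_12_def rd12v1_def by (simp add: divide_simps nz; algebra)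

lemma idH12d1:
  fixes al be v x :: real
  assumes nz: "v \<noteq> 0" "al + 1 \<noteq> 0" "be + 1 \<noteq> 0" "x + 1 \<noteq> 0" "x + 2 \<noteq> 0" "al + v + be + 2*x + 2 \<noteq> 0" "al - v + be + 2*x + 2 \<noteq> 0"
    "al + be + 2*x + 2 \<noteq> 0" "al + be + 2*x + 3 \<noteq> 0" "al + be + 2*x + 4 \<noteq> 0" "al + v - be \<noteq> 0" "al - v - be \<noteq> 0"
    "al + v \<noteq> be" "al - v \<noteq> be"
  shows "d1H al be x (gR2_12 al be v x) (gR1_12 al be v x) (gR0_12 al be v x) = rd12d1 al be v x"
  unfolding d1H_def gR2_12_def gR1_12_def gR0_12_def rd12d1_def by (simp add: divide_simps nz; algebra)

lemma idG12d1:
  fixes al be v x :: real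
  assumes nz: "v \<noteq> 0" "al + 1 \<noteq> 0" "be + 1 \<noteq> 0" "x + 1 \<noteq> 0" "x + 2 \<noteq> 0" "al + v + be + 2*x + 2 \<noteq> 0" "al - v + be + 2*x + 2 \<noteq> 0"
    "al + be + 2*x + 2 \<noteq> 0" "al + be + 2*x + 3 \<noteq> 0" "al + be + 2*x + 4 \<noteq> 0" "al + v - be \<noteq> 0" "al - v - be \<noteq> 0"
    "al + v \<noteq> be" "al - v \<noteq> be"
  shows "d1G al be x (gC2_12 al be v x) (gC1_12 al be v x) (gC0_12 al be v x) = rd12d1 al be v x"
  unfolding d1G_def gC2_12_def gC1_12_def gC0_12_def rd12d1_def by (simp add: divide_simps nz; algebra)

lemma idH21v0:
  fixes al be v x :: real
  assumes nz: "v \<noteq> 0" "al + 1 \<noteq> 0" "be + 1 \<noteq> 0" "x + 1 \<noteq> 0" "x + 2 \<noteq> 0" "al + v + be + 2*x + 2 \<noteq> 0" "al - v + be + 2*x + 2 \<noteq> 0"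
    "al + be + 2*x + 2 \<noteq> 0" "al + be + 2*x + 3 \<noteq> 0" "al + be + 2*x + 4 \<noteq> 0" "al + v - be \<noteq> 0" "al - v - be \<noteq> 0"
    "al + v \<noteq> be" "al - v \<noteq> be"
  shows "v0H al be x (gR2_21 al be v x) (gR1_21 al be v x) (gR0_21 al be v x) = rd21v0 al be v x"
  unfolding v0H_def gR2_21_def gR1_21_def gR0_21_def rd21v0_def by (simp add: divide_simps nz; algebra)

lemma idG21v0:
  fixes al be v x :: real
  assumes nz: "v \<noteq> 0" "al + 1 \<noteq> 0" "be + 1 \<noteq> 0" "x + 1 \<noteq> 0" "x + 2 \<noteq> 0" "al + v + be + 2*x + 2 \<noteq> 0" "al - v + be + 2*x + 2 \<noteq> 0"
    "al + be + 2*x + 2 \<noteq> 0" "al + be + 2*x + 3 \<noteq> 0" "al + be + 2*x + 4 \<noteq> 0" "al + v - be \<noteq> 0" "al - v - be \<noteq> 0"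
    "al + v \<noteq> be" "al - v \<noteq> be"
  shows "v0G al be x (gC2_21 al be v x) (gC1_21 al be v x) (gC0_21 al be v x) = rd21v0 al be v x"
  unfolding v0G_def gC2_21_def gC1_21_def gC0_21_def rd21v0_def by (simp add: divide_simps nz; algebra)

lemma idH21d0:
  fixes al be v x :: real
  assumes nz: "v \<noteq> 0" "al + 1 \<noteq> 0" "be + 1 \<noteq> 0" "x + 1 \<noteq> 0" "x + 2 \<noteq> 0" "al + v + be + 2*x + 2 \<noteq> 0" "al - v + be + 2*x + 2 \<noteq> 0"
    "al + be + 2*x + 2 \<noteq> 0" "al + be + 2*x + 3 \<noteq> 0" "al + be + 2*x + 4 \<noteq> 0" "al + v - be \<noteq> 0" "al - v - be \<noteq> 0"
    "al + v \<noteq> be" "al - v \<noteq> be"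
  shows "d0H al be x (gR2_21 al be v x) (gR1_21 al be v x) (gR0_21 al be v x) = rd21d0 al be v x"
  unfolding d0H_def gR2_21_def gR1_21_def gR0_21_def rd21d0_def by (simp add: divide_simps nz; algebra)

lemma idG21d0:
  fixes al be v x :: real
  assumes nz: "v \<noteq> 0" "al + 1 \<noteq> 0" "be + 1 \<noteq> 0" "x + 1 \<noteq> 0" "x + 2 \<noteq> 0" "al + v + be + 2*x + 2 \<noteq> 0" "al - v + be + 2*x + 2 \<noteq> 0"
    "al + be + 2*x + 2 \<noteq> 0" "al + be + 2*x + 3 \<noteq> 0" "al + be + 2*x + 4 \<noteq> 0" "al + v - be \<noteq> 0" "al - v - be \<noteq> 0"
    "al + v \<noteq> be" "al - v \<noteq> be"
  shows "d0G al be x (gC2_21 al be v x) (gC1_21 al be v x) (gC0_21 al be v x) = rd21d0 al be v x"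
  unfolding d0G_def gC2_21_def gC1_21_def gC0_21_def rd21d0_def by (simp add: divide_simps nz; algebra)

lemma idH21v1:
  fixes al be v x :: real
  assumes nz: "v \<noteq> 0" "al + 1 \<noteq> 0" "be + 1 \<noteq> 0" "x + 1 \<noteq> 0" "x + 2 \<noteq> 0" "al + v + be + 2*x + 2 \<noteq> 0" "al - v + be + 2*x + 2 \<noteq> 0"
    "al + be + 2*x + 2 \<noteq> 0" "al + be + 2*x + 3 \<noteq> 0" "al + be + 2*x + 4 \<noteq> 0" "al + v - be \<noteq> 0" "al - v - be \<noteq> 0"
    "al + v \<noteq> be" "al - v \<noteq> be"
  shows "v1H al be x (gR2_21 al be v x) (gR1_21 al be v x) (gR0_21 al be v x) = rd21v1 al be v x"
  unfolding v1H_def gR2_21_def gR1_21_def gR0_21_def rd21v1_def by (simp add: divide_simps nz; algebra)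

lemma idG21v1:
  fixes al be v x :: real
  assumes nz: "v \<noteq> 0" "al + 1 \<noteq> 0" "be + 1 \<noteq> 0" "x + 1 \<noteq> 0" "x + 2 \<noteq> 0" "al + v + be + 2*x + 2 \<noteq> 0" "al - v + be + 2*x + 2 \<noteq> 0"
    "al + be + 2*x + 2 \<noteq> 0" "al + be + 2*x + 3 \<noteq> 0" "al + be + 2*x + 4 \<noteq> 0" "al + v - be \<noteq> 0" "al - v - be \<noteq> 0"
    "al + v \<noteq> be" "al - v \<noteq> be"
  shows "v1G al be x (gC2_21 al be v x) (gC1_21 al be v x) (gC0_21 al be v x) = rd21v1 al be v x"
  unfolding v1G_def gC2_21_def gC1_21_def gC0_21_def rd21v1_def by (simp add: divide_simps nz; algebra)

lemma idH21d1:
  fixes al be v x :: real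
  assumes nz: "v \<noteq> 0" "al + 1 \<noteq> 0" "be + 1 \<noteq> 0" "x + 1 \<noteq> 0" "x + 2 \<noteq> 0" "al + v + be + 2*x + 2 \<noteq> 0" "al - v + be + 2*x + 2 \<noteq> 0"
    "al + be + 2*x + 2 \<noteq> 0" "al + be + 2*x + 3 \<noteq> 0" "al + be + 2*x + 4 \<noteq> 0" "al + v - be \<noteq> 0" "al - v - be \<noteq> 0"
    "al + v \<noteq> be" "al - v \<noteq> be"
  shows "d1H al be x (gR2_21 al be v x) (gR1_21 al be v x) (gR0_21 al be v x) = rd21d1 al be v x"
  unfolding d1H_def gR2_21_def gR1_21_def gR0_21_def rd21d1_def by (simp add: divide_simps nz; algebra)

lemma idG21d1:
  fixes al be v x :: real
  assumes nz: "v \<noteq> 0" "al + 1 \<noteq> 0" "be + 1 \<noteq> 0" "x + 1 \<noteq> 0" "x + 2 \<noteq> 0" "al + v + be + 2*x + 2 \<noteq> 0" "al - v + be + 2*x + 2 \<noteq> 0"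
    "al + be + 2*x + 2 \<noteq> 0" "al + be + 2*x + 3 \<noteq> 0" "al + be + 2*x + 4 \<noteq> 0" "al + v - be \<noteq> 0" "al - v - be \<noteq> 0"
    "al + v \<noteq> be" "al - v \<noteq> be"
  shows "d1G al be x (gC2_21 al be v x) (gC1_21 al be v x) (gC0_21 al be v x) = rd21d1 al be v x"
  unfolding d1G_def gC2_21_def gC1_21_def gC0_21_def rd21d1_def by (simp add: divide_simps nz; algebra)

lemma idH22v0:
  fixes al be v x :: real
  assumes nz: "v \<noteq> 0" "al + 1 \<noteq> 0" "be + 1 \<noteq> 0" "x + 1 \<noteq> 0" "x + 2 \<noteq> 0" "al + v + be + 2*x + 2 \<noteq> 0" "al - v + be + 2*x + 2 \<noteq> 0"
    "al + be + 2*x + 2 \<noteq> 0" "al + be + 2*x + 3 \<noteq> 0" "al + be + 2*x + 4 \<noteq> 0" "al + v - be \<noteq> 0" "al - v - be \<noteq> 0"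
    "al + v \<noteq> be" "al - v \<noteq> be"
  shows "v0H al be x (gR2_22 al be v x) (gR1_22 al be v x) (gR0_22 al be v x) = rd22v0 al be v x"
  unfolding v0H_def gR2_22_def gR1_22_def gR0_22_def rd22v0_def by (simp add: divide_simps nz; algebra)

lemma idG22v0:
  fixes al be v x :: real
  assumes nz: "v \<noteq> 0" "al + 1 \<noteq> 0" "be + 1 \<noteq> 0" "x + 1 \<noteq> 0" "x + 2 \<noteq> 0" "al + v + be + 2*x + 2 \<noteq> 0" "al - v + be + 2*x + 2 \<noteq> 0"
    "al + be + 2*x + 2 \<noteq> 0" "al + be + 2*x + 3 \<noteq> 0" "al + be + 2*x + 4 \<noteq> 0" "al + v - be \<noteq> 0" "al - v - be \<noteq> 0"
    "al + v \<noteq> be" "al - v \<noteq> be"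
  shows "v0G al be x (gC2_22 al be v x) (gC1_22 al be v x) (gC0_22 al be v x) = rd22v0 al be v x"
  unfolding v0G_def gC2_22_def gC1_22_def gC0_22_def rd22v0_def by (simp add: divide_simps nz; algebra)

lemma idH22d0:
  fixes al be v x :: real
  assumes nz: "v \<noteq> 0" "al + 1 \<noteq> 0" "be + 1 \<noteq> 0" "x + 1 \<noteq> 0" "x + 2 \<noteq> 0" "al + v + be + 2*x + 2 \<noteq> 0" "al - v + be + 2*x + 2 \<noteq> 0"
    "al + be + 2*x + 2 \<noteq> 0" "al + be + 2*x + 3 \<noteq> 0" "al + be + 2*x + 4 \<noteq> 0" "al + v - be \<noteq> 0" "al - v - be \<noteq> 0"
    "al + v \<noteq> be" "al - v \<noteq> be"
  shows "d0H al be x (gR2_22 al be v x) (gR1_22 al be v x) (gR0_22 al be v x) = rd22d0 al be v x"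
  unfolding d0H_def gR2_22_def gR1_22_def gR0_22_def rd22d0_def by (simp add: divide_simps nz; algebra)

lemma idG22d0:
  fixes al be v x :: real
  assumes nz: "v \<noteq> 0" "al + 1 \<noteq> 0" "be + 1 \<noteq> 0" "x + 1 \<noteq> 0" "x + 2 \<noteq> 0" "al + v + be + 2*x + 2 \<noteq> 0" "al - v + be + 2*x + 2 \<noteq> 0"
    "al + be + 2*x + 2 \<noteq> 0" "al + be + 2*x + 3 \<noteq> 0" "al + be + 2*x + 4 \<noteq> 0" "al + v - be \<noteq> 0" "al - v - be \<noteq> 0"
    "al + v \<noteq> be" "al - v \<noteq> be"
  shows "d0G al be x (gC2_22 al be v x) (gC1_22 al be v x) (gC0_22 al be v x) = rd22d0 al be v x"
  unfolding d0G_def gC2_22_def gC1_22_def gC0_22_def rd22d0_def by (simp add: divide_simps nz; algebra)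

lemma idH22v1:
  fixes al be v x :: real
  assumes nz: "v \<noteq> 0" "al + 1 \<noteq> 0" "be + 1 \<noteq> 0" "x + 1 \<noteq> 0" "x + 2 \<noteq> 0" "al + v + be + 2*x + 2 \<noteq> 0" "al - v + be + 2*x + 2 \<noteq> 0"
    "al + be + 2*x + 2 \<noteq> 0" "al + be + 2*x + 3 \<noteq> 0" "al + be + 2*x + 4 \<noteq> 0" "al + v - be \<noteq> 0" "al - v - be \<noteq> 0"
    "al + v \<noteq> be" "al - v \<noteq> be"
  shows "v1H al be x (gR2_22 al be v x) (gR1_22 al be v x) (gR0_22 al be v x) = rd22v1 al be v x"
  unfolding v1H_def gR2_22_def gR1_22_def gR0_22_def rd22v1_def by (simp add: divide_simps nz; algebra)

lemma idG22v1:
  fixes al be v x :: real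
  assumes nz: "v \<noteq> 0" "al + 1 \<noteq> 0" "be + 1 \<noteq> 0" "x + 1 \<noteq> 0" "x + 2 \<noteq> 0" "al + v + be + 2*x + 2 \<noteq> 0" "al - v + be + 2*x + 2 \<noteq> 0"
    "al + be + 2*x + 2 \<noteq> 0" "al + be + 2*x + 3 \<noteq> 0" "al + be + 2*x + 4 \<noteq> 0" "al + v - be \<noteq> 0" "al - v - be \<noteq> 0"
    "al + v \<noteq> be" "al - v \<noteq> be"
  shows "v1G al be x (gC2_22 al be v x) (gC1_22 al be v x) (gC0_22 al be v x) = rd22v1 al be v x"
  unfolding v1G_def gC2_22_def gC1_22_def gC0_22_def rd22v1_def by (simp add: divide_simps nz; algebra)

lemma idH22d1:
  fixes al be v x :: real
  assumes nz: "v \<noteq> 0" "al + 1 \<noteq> 0" "be + 1 \<noteq> 0" "x + 1 \<noteq> 0" "x + 2 \<noteq> 0" "al + v + be + 2*x + 2 \<noteq> 0" "al - v + be + 2*x + 2 \<noteq> 0"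
    "al + be + 2*x + 2 \<noteq> 0" "al + be + 2*x + 3 \<noteq> 0" "al + be + 2*x + 4 \<noteq> 0" "al + v - be \<noteq> 0" "al - v - be \<noteq> 0"
    "al + v \<noteq> be" "al - v \<noteq> be"
  shows "d1H al be x (gR2_22 al be v x) (gR1_22 al be v x) (gR0_22 al be v x) = rd22d1 al be v x"
  unfolding d1H_def gR2_22_def gR1_22_def gR0_22_def rd22d1_def by (simp add: divide_simps nz; algebra)

lemma idG22d1:
  fixes al be v x :: real
  assumes nz: "v \<noteq> 0" "al + 1 \<noteq> 0" "be + 1 \<noteq> 0" "x + 1 \<noteq> 0" "x + 2 \<noteq> 0" "al + v + be + 2*x + 2 \<noteq> 0" "al - v + be + 2*x + 2 \<noteq> 0"
    "al + be + 2*x + 2 \<noteq> 0" "al + be + 2*x + 3 \<noteq> 0" "al + be + 2*x + 4 \<noteq> 0" "al + v - be \<noteq> 0" "al - v - be \<noteq> 0"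
    "al + v \<noteq> be" "al - v \<noteq> be"
  shows "d1G al be x (gC2_22 al be v x) (gC1_22 al be v x) (gC0_22 al be v x) = rd22d1 al be v x"
  unfolding d1G_def gC2_22_def gC1_22_def gC0_22_def rd22d1_def by (simp add: divide_simps nz; algebra)

lemma E1_1:
  fixes al be v x :: real
  assumes nz: "v \<noteq> 0" "al + 1 \<noteq> 0" "be + 1 \<noteq> 0" "x + 1 \<noteq> 0" "x + 2 \<noteq> 0" "al + v + be + 2*x + 2 \<noteq> 0" "al - v + be + 2*x + 2 \<noteq> 0"
    "al + be + 2*x + 2 \<noteq> 0" "al + be + 2*x + 3 \<noteq> 0" "al + be + 2*x + 4 \<noteq> 0" "al + v - be \<noteq> 0" "al - v - be \<noteq> 0"
    "al + v \<noteq> be" "al - v \<noteq> be"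
  shows "(al + 1) * (rd11v0 al be v x + rd12v0 al be v x) = 0"
  unfolding rd11v0_def rd11d0_def rd11v1_def rd11d1_def rd12v0_def rd12d0_def rd12v1_def rd12d1_def by (simp add: divide_simps nz; algebra)

lemma E1_2:
  fixes al be v x :: real
  assumes nz: "v \<noteq> 0" "al + 1 \<noteq> 0" "be + 1 \<noteq> 0" "x + 1 \<noteq> 0" "x + 2 \<noteq> 0" "al + v + be + 2*x + 2 \<noteq> 0" "al - v + be + 2*x + 2 \<noteq> 0"
    "al + be + 2*x + 2 \<noteq> 0" "al + be + 2*x + 3 \<noteq> 0" "al + be + 2*x + 4 \<noteq> 0" "al + v - be \<noteq> 0" "al - v - be \<noteq> 0"
    "al + v \<noteq> be" "al - v \<noteq> be"
  shows "rd11d0 al be v x * (al + 1) + rd11v0 al be v x * (- (al - v + be + 2)) + rd12d0 al be v x * (al + 1) - rd12v0 al be v x * (al + be + 2) = 0"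
  unfolding rd11v0_def rd11d0_def rd11v1_def rd11d1_def rd12v0_def rd12d0_def rd12v1_def rd12d1_def by (simp add: divide_simps nz; algebra)

lemma E1_3:
  fixes al be v x :: real
  assumes nz: "v \<noteq> 0" "al + 1 \<noteq> 0" "be + 1 \<noteq> 0" "x + 1 \<noteq> 0" "x + 2 \<noteq> 0" "al + v + be + 2*x + 2 \<noteq> 0" "al - v + be + 2*x + 2 \<noteq> 0"
    "al + be + 2*x + 2 \<noteq> 0" "al + be + 2*x + 3 \<noteq> 0" "al + be + 2*x + 4 \<noteq> 0" "al + v - be \<noteq> 0" "al - v - be \<noteq> 0"
    "al + v \<noteq> be" "al - v \<noteq> be"
  shows "rd11v1 al be v x * ((- v * (al - v + be + 2) / (al - v - be)) + (- (al - v + be + 2)) + al + 1) - rd12v1 al be v x * (be + 1) = 0"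
  unfolding rd11v0_def rd11d0_def rd11v1_def rd11d1_def rd12v0_def rd12d0_def rd12v1_def rd12d1_def by (simp add: divide_simps nz; algebra)

lemma E1_4:
  fixes al be v x :: real
  assumes nz: "v \<noteq> 0" "al + 1 \<noteq> 0" "be + 1 \<noteq> 0" "x + 1 \<noteq> 0" "x + 2 \<noteq> 0" "al + v + be + 2*x + 2 \<noteq> 0" "al - v + be + 2*x + 2 \<noteq> 0"
    "al + be + 2*x + 2 \<noteq> 0" "al + be + 2*x + 3 \<noteq> 0" "al + be + 2*x + 4 \<noteq> 0" "al + v - be \<noteq> 0" "al - v - be \<noteq> 0"
    "al + v \<noteq> be" "al - v \<noteq> be"
  shows "rd11d1 al be v x * ((- v * (al - v + be + 2) / (al - v - be)) + (- (al - v + be + 2)) + al + 1) + rd11v1 al be v x * (2 * (- v * (al - v + be + 2) / (al - v - be)) + (- (al - v + be + 2))) - rd12d1 al be v x * (be + 1) - rd12v1 al be v x * (al + be + 2) = 0"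
  unfolding rd11v0_def rd11d0_def rd11v1_def rd11d1_def rd12v0_def rd12d0_def rd12v1_def rd12d1_def by (simp add: divide_simps nz; algebra)

lemma E1_5:
  fixes al be v x :: real
  assumes nz: "v \<noteq> 0" "al + 1 \<noteq> 0" "be + 1 \<noteq> 0" "x + 1 \<noteq> 0" "x + 2 \<noteq> 0" "al + v + be + 2*x + 2 \<noteq> 0" "al - v + be + 2*x + 2 \<noteq> 0"
    "al + be + 2*x + 2 \<noteq> 0" "al + be + 2*x + 3 \<noteq> 0" "al + be + 2*x + 4 \<noteq> 0" "al + v - be \<noteq> 0" "al - v - be \<noteq> 0"
    "al + v \<noteq> be" "al - v \<noteq> be"
  shows "rd12d0 al be v x * (al + 1) + rd12v0 al be v x * (- (al + v + be + 2)) + rd11d0 al be v x * (al + 1) - rd11v0 al be v x * (al + be + 2) = 0"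
  unfolding rd11v0_def rd11d0_def rd11v1_def rd11d1_def rd12v0_def rd12d0_def rd12v1_def rd12d1_def by (simp add: divide_simps nz; algebra)

lemma E1_6:
  fixes al be v x :: real
  assumes nz: "v \<noteq> 0" "al + 1 \<noteq> 0" "be + 1 \<noteq> 0" "x + 1 \<noteq> 0" "x + 2 \<noteq> 0" "al + v + be + 2*x + 2 \<noteq> 0" "al - v + be + 2*x + 2 \<noteq> 0"
    "al + be + 2*x + 2 \<noteq> 0" "al + be + 2*x + 3 \<noteq> 0" "al + be + 2*x + 4 \<noteq> 0" "al + v - be \<noteq> 0" "al - v - be \<noteq> 0"
    "al + v \<noteq> be" "al - v \<noteq> be"
  shows "rd12v1 al be v x * ((v * (al + v + be + 2) / (al + v - be)) + (- (al + v + be + 2)) + al + 1) - rd11v1 al be v x * (be + 1) = 0"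
  unfolding rd11v0_def rd11d0_def rd11v1_def rd11d1_def rd12v0_def rd12d0_def rd12v1_def rd12d1_def by (simp add: divide_simps nz; algebra)

lemma E1_7:
  fixes al be v x :: real
  assumes nz: "v \<noteq> 0" "al + 1 \<noteq> 0" "be + 1 \<noteq> 0" "x + 1 \<noteq> 0" "x + 2 \<noteq> 0" "al + v + be + 2*x + 2 \<noteq> 0" "al - v + be + 2*x + 2 \<noteq> 0"
    "al + be + 2*x + 2 \<noteq> 0" "al + be + 2*x + 3 \<noteq> 0" "al + be + 2*x + 4 \<noteq> 0" "al + v - be \<noteq> 0" "al - v - be \<noteq> 0"
    "al + v \<noteq> be" "al - v \<noteq> be"
  shows "rd12d1 al be v x * ((v * (al + v + be + 2) / (al + v - be)) + (- (al + v + be + 2)) + al + 1) + rd12v1 al be v x * (2 * (v * (al + v + be + 2) / (al + v - be)) + (- (al + v + be + 2))) - rd11d1 al be v x * (be + 1) - rd11v1 al be v x * (al + be + 2) = 0"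
  unfolding rd11v0_def rd11d0_def rd11v1_def rd11d1_def rd12v0_def rd12d0_def rd12v1_def rd12d1_def by (simp add: divide_simps nz; algebra)

lemma E2_1:
  fixes al be v x :: real
  assumes nz: "v \<noteq> 0" "al + 1 \<noteq> 0" "be + 1 \<noteq> 0" "x + 1 \<noteq> 0" "x + 2 \<noteq> 0" "al + v + be + 2*x + 2 \<noteq> 0" "al - v + be + 2*x + 2 \<noteq> 0"
    "al + be + 2*x + 2 \<noteq> 0" "al + be + 2*x + 3 \<noteq> 0" "al + be + 2*x + 4 \<noteq> 0" "al + v - be \<noteq> 0" "al - v - be \<noteq> 0"
    "al + v \<noteq> be" "al - v \<noteq> be"
  shows "(al + 1) * (rd21v0 al be v x + rd22v0 al be v x) = 0"
  unfolding rd21v0_def rd21d0_def rd21v1_def rd21d1_def rd22v0_def rd22d0_def rd22v1_def rd22d1_def by (simp add: divide_simps nz; algebra)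

lemma E2_2:
  fixes al be v x :: real
  assumes nz: "v \<noteq> 0" "al + 1 \<noteq> 0" "be + 1 \<noteq> 0" "x + 1 \<noteq> 0" "x + 2 \<noteq> 0" "al + v + be + 2*x + 2 \<noteq> 0" "al - v + be + 2*x + 2 \<noteq> 0"
    "al + be + 2*x + 2 \<noteq> 0" "al + be + 2*x + 3 \<noteq> 0" "al + be + 2*x + 4 \<noteq> 0" "al + v - be \<noteq> 0" "al - v - be \<noteq> 0"
    "al + v \<noteq> be" "al - v \<noteq> be"
  shows "rd21d0 al be v x * (al + 1) + rd21v0 al be v x * (- (al - v + be + 2)) + rd22d0 al be v x * (al + 1) - rd22v0 al be v x * (al + be + 2) = 0"
  unfolding rd21v0_def rd21d0_def rd21v1_def rd21d1_def rd22v0_def rd22d0_def rd22v1_def rd22d1_def by (simp add: divide_simps nz; algebra)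

lemma E2_3:
  fixes al be v x :: real
  assumes nz: "v \<noteq> 0" "al + 1 \<noteq> 0" "be + 1 \<noteq> 0" "x + 1 \<noteq> 0" "x + 2 \<noteq> 0" "al + v + be + 2*x + 2 \<noteq> 0" "al - v + be + 2*x + 2 \<noteq> 0"
    "al + be + 2*x + 2 \<noteq> 0" "al + be + 2*x + 3 \<noteq> 0" "al + be + 2*x + 4 \<noteq> 0" "al + v - be \<noteq> 0" "al - v - be \<noteq> 0"
    "al + v \<noteq> be" "al - v \<noteq> be"
  shows "rd21v1 al be v x * ((- v * (al - v + be + 2) / (al - v - be)) + (- (al - v + be + 2)) + al + 1) - rd22v1 al be v x * (be + 1) = 0"
  unfolding rd21v0_def rd21d0_def rd21v1_def rd21d1_def rd22v0_def rd22d0_def rd22v1_def rd22d1_def by (simp add: divide_simps nz; algebra)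

lemma E2_4:
  fixes al be v x :: real
  assumes nz: "v \<noteq> 0" "al + 1 \<noteq> 0" "be + 1 \<noteq> 0" "x + 1 \<noteq> 0" "x + 2 \<noteq> 0" "al + v + be + 2*x + 2 \<noteq> 0" "al - v + be + 2*x + 2 \<noteq> 0"
    "al + be + 2*x + 2 \<noteq> 0" "al + be + 2*x + 3 \<noteq> 0" "al + be + 2*x + 4 \<noteq> 0" "al + v - be \<noteq> 0" "al - v - be \<noteq> 0"
    "al + v \<noteq> be" "al - v \<noteq> be"
  shows "rd21d1 al be v x * ((- v * (al - v + be + 2) / (al - v - be)) + (- (al - v + be + 2)) + al + 1) + rd21v1 al be v x * (2 * (- v * (al - v + be + 2) / (al - v - be)) + (- (al - v + be + 2))) - rd22d1 al be v x * (be + 1) - rd22v1 al be v x * (al + be + 2) = 0"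
  unfolding rd21v0_def rd21d0_def rd21v1_def rd21d1_def rd22v0_def rd22d0_def rd22v1_def rd22d1_def by (simp add: divide_simps nz; algebra)

lemma E2_5:
  fixes al be v x :: real
  assumes nz: "v \<noteq> 0" "al + 1 \<noteq> 0" "be + 1 \<noteq> 0" "x + 1 \<noteq> 0" "x + 2 \<noteq> 0" "al + v + be + 2*x + 2 \<noteq> 0" "al - v + be + 2*x + 2 \<noteq> 0"
    "al + be + 2*x + 2 \<noteq> 0" "al + be + 2*x + 3 \<noteq> 0" "al + be + 2*x + 4 \<noteq> 0" "al + v - be \<noteq> 0" "al - v - be \<noteq> 0"
    "al + v \<noteq> be" "al - v \<noteq> be"
  shows "rd22d0 al be v x * (al + 1) + rd22v0 al be v x * (- (al + v + be + 2)) + rd21d0 al be v x * (al + 1) - rd21v0 al be v x * (al + be + 2) = 0"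
  unfolding rd21v0_def rd21d0_def rd21v1_def rd21d1_def rd22v0_def rd22d0_def rd22v1_def rd22d1_def by (simp add: divide_simps nz; algebra)

lemma E2_6:
  fixes al be v x :: real
  assumes nz: "v \<noteq> 0" "al + 1 \<noteq> 0" "be + 1 \<noteq> 0" "x + 1 \<noteq> 0" "x + 2 \<noteq> 0" "al + v + be + 2*x + 2 \<noteq> 0" "al - v + be + 2*x + 2 \<noteq> 0"
    "al + be + 2*x + 2 \<noteq> 0" "al + be + 2*x + 3 \<noteq> 0" "al + be + 2*x + 4 \<noteq> 0" "al + v - be \<noteq> 0" "al - v - be \<noteq> 0"
    "al + v \<noteq> be" "al - v \<noteq> be"
  shows "rd22v1 al be v x * ((v * (al + v + be + 2) / (al + v - be)) + (- (al + v + be + 2)) + al + 1) - rd21v1 al be v x * (be + 1) = 0"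
  unfolding rd21v0_def rd21d0_def rd21v1_def rd21d1_def rd22v0_def rd22d0_def rd22v1_def rd22d1_def by (simp add: divide_simps nz; algebra)

lemma E2_7:
  fixes al be v x :: real
  assumes nz: "v \<noteq> 0" "al + 1 \<noteq> 0" "be + 1 \<noteq> 0" "x + 1 \<noteq> 0" "x + 2 \<noteq> 0" "al + v + be + 2*x + 2 \<noteq> 0" "al - v + be + 2*x + 2 \<noteq> 0"
    "al + be + 2*x + 2 \<noteq> 0" "al + be + 2*x + 3 \<noteq> 0" "al + be + 2*x + 4 \<noteq> 0" "al + v - be \<noteq> 0" "al - v - be \<noteq> 0"
    "al + v \<noteq> be" "al - v \<noteq> be"
  shows "rd22d1 al be v x * ((v * (al + v + be + 2) / (al + v - be)) + (- (al + v + be + 2)) + al + 1) + rd22v1 al be v x * (2 * (v * (al + v + be + 2) / (al + v - be)) + (- (al + v + be + 2))) - rd21d1 al be v x * (be + 1) - rd21v1 al be v x * (al + be + 2) = 0"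
  unfolding rd21v0_def rd21d0_def rd21v1_def rd21d1_def rd22v0_def rd22d0_def rd22v1_def rd22d1_def by (simp add: divide_simps nz; algebra)


lemma poch_al2: "(a::real) + 1 \<noteq> 0 \<Longrightarrow> pochhammer (a + 2) n = pochhammer (a + 1) n * (a + 1 + real n) / (a + 1)"
proof -
  assume a: "a + 1 \<noteq> 0"
  have "pochhammer (a + 1) (Suc n) = (a + 1) * pochhammer (a + 1 + 1) n" by (rule pochhammer_rec)
  moreover have "pochhammer (a + 1) (Suc n) = pochhammer (a + 1) n * (a + 1 + real n)" by (rule pochhammer_Suc)
  ultimately show ?thesis using a by (simp add: field_simps add.assoc)
qed

lemma fact_ne: "fact n \<noteq> (0::real)" by simp

definition GF :: "nat \<Rightarrow> real \<Rightarrow> real \<Rightarrow> real \<Rightarrow> real \<Rightarrow> real \<Rightarrow> real poly" where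
  "GF n a b c2 c1 c0 = smult (fact n) (smult c2 (J n a b) + smult c1 (J (n + 1) a b) + smult c0 (J (n + 2) a b))"

definition HF :: "nat \<Rightarrow> real \<Rightarrow> real \<Rightarrow> real \<Rightarrow> real \<Rightarrow> real \<Rightarrow> real poly" where
  "HF n a b r2 r1 r0 = smult (fact n) (smult r2 ([:0, 0, 1:] * J n (a + 2) b) + smult r1 ([:0, 1:] * J n (a + 1) b) + smult r0 (J n a b))"

context
  fixes a b :: real and n :: nat
  assumes a: "a > -1" and b: "b > -1"
begin


lemma a1nz: "a + 1 \<noteq> 0" using a by simp
lemma b1nz: "b + 1 \<noteq> 0" using b by simp

lemma V0_n1: "fact n * poly (J (n + 1) a b) 0 = pochhammer (a + 1) n * (a + 1 + real n) / (real n + 1)"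
  by (simp add: J_V0 pochhammer_Suc fact_Suc divide_simps; simp add: algebra_simps)
lemma V0_n2: "fact n * poly (J (n + 2) a b) 0 = pochhammer (a + 1) n * (a + 1 + real n) * (a + 2 + real n) / ((real n + 1) * (real n + 2))"
  by (simp add: J_V0 pochhammer_Suc fact_Suc numeral_2_eq_2 divide_simps; simp add: algebra_simps)

lemma V0_n: "fact n * poly (J n a b) 0 = pochhammer (a + 1) n"
  by (simp add: J_V0)
lemma V0_a1: "fact n * poly (J n (a + 1) b) 0 = pochhammer (a + 1) n * (a + 1 + real n) / (a + 1)"
  using poch_al2[OF a1nz, of n] by (simp add: J_V0 add.assoc)
lemma D0_n: "fact n * poly (pderiv (J n a b)) 0 = - pochhammer (a + 1) n * (real n + a + b + 1) * real n / (a + 1)"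
  using a1nz by (simp add: J_D0 divide_simps; simp add: algebra_simps)
lemma D0_n1: "fact n * poly (pderiv (J (n + 1) a b)) 0 = - pochhammer (a + 1) n * (a + 1 + real n) * (real n + a + b + 2) / (a + 1)"
  using a1nz by (simp add: J_D0 pochhammer_Suc fact_Suc divide_simps; simp add: algebra_simps)
lemma D0_n2: "fact n * poly (pderiv (J (n + 2) a b)) 0 = - pochhammer (a + 1) n * (a + 1 + real n) * (a + 2 + real n) * (real n + a + b + 3) / ((real n + 1) * (a + 1))"
  using a1nz by (simp add: J_D0 pochhammer_Suc fact_Suc numeral_2_eq_2 divide_simps; simp add: algebra_simps)
lemma V1_n: "fact n * poly (J n c b) 1 = ((-1) ^ n * pochhammer (b + 1) n)"
  by (simp add: J_V1)
lemma V1_n1: "fact n * poly (J (n + 1) a b) 1 = - ((-1) ^ n * pochhammer (b + 1) n) * (b + 1 + real n) / (real n + 1)"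
  by (simp add: J_V1 pochhammer_Suc fact_Suc divide_simps; simp add: algebra_simps)
lemma V1_n2: "fact n * poly (J (n + 2) a b) 1 = ((-1) ^ n * pochhammer (b + 1) n) * (b + 1 + real n) * (b + 2 + real n) / ((real n + 1) * (real n + 2))"
  by (simp add: J_V1 pochhammer_Suc fact_Suc numeral_2_eq_2 divide_simps; simp add: algebra_simps)
lemma D1_n: "fact n * poly (pderiv (J n c b)) 1 = ((-1) ^ n * pochhammer (b + 1) n) * (real n + c + b + 1) * real n / (b + 1)"
  using b1nz by (simp add: J_D1 divide_simps; simp add: algebra_simps)
lemma D1_n1: "fact n * poly (pderiv (J (n + 1) a b)) 1 = - ((-1) ^ n * pochhammer (b + 1) n) * (b + 1 + real n) * (real n + a + b + 2) / (b + 1)"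
  using b1nz by (simp add: J_D1 pochhammer_Suc fact_Suc divide_simps; simp add: algebra_simps)
lemma D1_n2: "fact n * poly (pderiv (J (n + 2) a b)) 1 = ((-1) ^ n * pochhammer (b + 1) n) * (b + 1 + real n) * (b + 2 + real n) * (real n + a + b + 3) / ((real n + 1) * (b + 1))"
  using b1nz by (simp add: J_D1 pochhammer_Suc fact_Suc numeral_2_eq_2 divide_simps; simp add: algebra_simps)

lemma GF_gen: "poly (GF n a b c2 c1 c0) y = c2 * (fact n * poly (J n a b) y) + c1 * (fact n * poly (J (n + 1) a b) y) + c0 * (fact n * poly (J (n + 2) a b) y)"
  by (simp add: GF_def algebra_simps)
lemma GF_gen': "poly (pderiv (GF n a b c2 c1 c0)) y = c2 * (fact n * poly (pderiv (J n a b)) y) + c1 * (fact n * poly (pderiv (J (n + 1) a b)) y) + c0 * (fact n * poly (pderiv (J (n + 2) a b)) y)"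
  by (simp add: GF_def pderiv_add pderiv_smult algebra_simps)

lemma GF_V0: "poly (GF n a b c2 c1 c0) 0 = c2 * pochhammer (a + 1) n + c1 * (pochhammer (a + 1) n * (a + 1 + real n) / (real n + 1)) + c0 * (pochhammer (a + 1) n * (a + 1 + real n) * (a + 2 + real n) / ((real n + 1) * (real n + 2)))"
  unfolding GF_gen V0_n V0_n1 V0_n2 ..
lemma GF_D0: "poly (pderiv (GF n a b c2 c1 c0)) 0 = c2 * (- pochhammer (a + 1) n * (real n + a + b + 1) * real n / (a + 1)) + c1 * (- pochhammer (a + 1) n * (a + 1 + real n) * (real n + a + b + 2) / (a + 1)) + c0 * (- pochhammer (a + 1) n * (a + 1 + real n) * (a + 2 + real n) * (real n + a + b + 3) / ((real n + 1) * (a + 1)))"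
  unfolding GF_gen' D0_n D0_n1 D0_n2 ..
lemma GF_V1: "poly (GF n a b c2 c1 c0) 1 = c2 * ((-1) ^ n * pochhammer (b + 1) n) + c1 * (- ((-1) ^ n * pochhammer (b + 1) n) * (b + 1 + real n) / (real n + 1)) + c0 * (((-1) ^ n * pochhammer (b + 1) n) * (b + 1 + real n) * (b + 2 + real n) / ((real n + 1) * (real n + 2)))"
  unfolding GF_gen V1_n V1_n1 V1_n2 ..
lemma GF_D1: "poly (pderiv (GF n a b c2 c1 c0)) 1 = c2 * (((-1) ^ n * pochhammer (b + 1) n) * (real n + a + b + 1) * real n / (b + 1)) + c1 * (- ((-1) ^ n * pochhammer (b + 1) n) * (b + 1 + real n) * (real n + a + b + 2) / (b + 1)) + c0 * (((-1) ^ n * pochhammer (b + 1) n) * (b + 1 + real n) * (b + 2 + real n) * (real n + a + b + 3) / ((real n + 1) * (b + 1)))"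
  unfolding GF_gen' D1_n D1_n1 D1_n2 ..

lemma HF_gen: "poly (HF n a b r2 r1 r0) y = r2 * (y^2 * (fact n * poly (J n (a + 2) b) y)) + r1 * (y * (fact n * poly (J n (a + 1) b) y)) + r0 * (fact n * poly (J n a b) y)"
  by (simp add: HF_def algebra_simps power2_eq_square)
lemma HF_gen': "poly (pderiv (HF n a b r2 r1 r0)) y = r2 * (2 * y * (fact n * poly (J n (a + 2) b) y) + y^2 * (fact n * poly (pderiv (J n (a + 2) b)) y))
   + r1 * ((fact n * poly (J n (a + 1) b) y) + y * (fact n * poly (pderiv (J n (a + 1) b)) y)) + r0 * (fact n * poly (pderiv (J n a b)) y)"
  by (simp add: HF_def pderiv_add pderiv_smult pderiv_mult pderiv_pCons algebra_simps power2_eq_square)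

lemma HF_V0: "poly (HF n a b r2 r1 r0) 0 = r0 * pochhammer (a + 1) n"
  unfolding HF_gen V0_n by simp
lemma HF_D0: "poly (pderiv (HF n a b r2 r1 r0)) 0 = r1 * (pochhammer (a + 1) n * (a + 1 + real n) / (a + 1)) + r0 * (- pochhammer (a + 1) n * (real n + a + b + 1) * real n / (a + 1))"
  unfolding HF_gen' V0_a1 D0_n by simp
lemma HF_V1: "poly (HF n a b r2 r1 r0) 1 = (r2 + r1 + r0) * ((-1) ^ n * pochhammer (b + 1) n)"
  unfolding HF_gen V1_n by (simp add: algebra_simps)
lemma HF_D1: "poly (pderiv (HF n a b r2 r1 r0)) 1 = r2 * (2 * ((-1) ^ n * pochhammer (b + 1) n) + ((-1) ^ n * pochhammer (b + 1) n) * (real n + (a + 2) + b + 1) * real n / (b + 1))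
   + r1 * (((-1) ^ n * pochhammer (b + 1) n) + ((-1) ^ n * pochhammer (b + 1) n) * (real n + (a + 1) + b + 1) * real n / (b + 1)) + r0 * (((-1) ^ n * pochhammer (b + 1) n) * (real n + a + b + 1) * real n / (b + 1))"
  unfolding HF_gen' V1_n D1_n by simp

lemma GF_v0: "poly (GF n a b c2 c1 c0) 0 = pochhammer (a + 1) n * v0G a b (real n) c2 c1 c0"
  unfolding GF_V0 v0G_def by (simp add: algebra_simps)
lemma GF_d0: "poly (pderiv (GF n a b c2 c1 c0)) 0 = pochhammer (a + 1) n * d0G a b (real n) c2 c1 c0"
  unfolding GF_D0 d0G_def by (simp add: algebra_simps)
lemma GF_v1: "poly (GF n a b c2 c1 c0) 1 = ((-1) ^ n * pochhammer (b + 1) n) * v1G a b (real n) c2 c1 c0"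
  unfolding GF_V1 v1G_def by (simp add: algebra_simps)
lemma GF_d1: "poly (pderiv (GF n a b c2 c1 c0)) 1 = ((-1) ^ n * pochhammer (b + 1) n) * d1G a b (real n) c2 c1 c0"
  unfolding GF_D1 d1G_def by (simp add: algebra_simps)
lemma HF_v0: "poly (HF n a b r2 r1 r0) 0 = pochhammer (a + 1) n * v0H a b (real n) r2 r1 r0"
  unfolding HF_V0 v0H_def by (simp add: algebra_simps)
lemma HF_d0: "poly (pderiv (HF n a b r2 r1 r0)) 0 = pochhammer (a + 1) n * d0H a b (real n) r2 r1 r0"
  unfolding HF_D0 d0H_def by (simp add: algebra_simps)
lemma HF_v1: "poly (HF n a b r2 r1 r0) 1 = ((-1) ^ n * pochhammer (b + 1) n) * v1H a b (real n) r2 r1 r0"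
  unfolding HF_V1 v1H_def by (simp add: algebra_simps)
lemma HF_d1: "poly (pderiv (HF n a b r2 r1 r0)) 1 = ((-1) ^ n * pochhammer (b + 1) n) * d1H a b (real n) r2 r1 r0"
  unfolding HF_D1 d1H_def by (simp add: algebra_simps)

end

lemma scale_br:
  "v0G a b x (c * g2) (c * g1) (c * g0) = c * v0G a b x g2 g1 g0"
  "d0G a b x (c * g2) (c * g1) (c * g0) = c * d0G a b x g2 g1 g0"
  "v1G a b x (c * g2) (c * g1) (c * g0) = c * v1G a b x g2 g1 g0"
  "d1G a b x (c * g2) (c * g1) (c * g0) = c * d1G a b x g2 g1 g0"
  "v0H a b x (c * g2) (c * g1) (c * g0) = c * v0H a b x g2 g1 g0"
  "d0H a b x (c * g2) (c * g1) (c * g0) = c * d0H a b x g2 g1 g0"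
  "v1H a b x (c * g2) (c * g1) (c * g0) = c * v1H a b x g2 g1 g0"
  "d1H a b x (c * g2) (c * g1) (c * g0) = c * d1H a b x g2 g1 g0"
  by (simp_all add: v0G_def d0G_def v1G_def d1G_def v0H_def d0H_def v1H_def d1H_def algebra_simps)


context prm
begin

lemma nzx: "v \<noteq> 0" "al + 1 \<noteq> 0" "be + 1 \<noteq> 0" "real n + 1 \<noteq> 0" "real n + 2 \<noteq> 0"
    "al + v + be + 2 * real n + 2 \<noteq> 0" "al - v + be + 2 * real n + 2 \<noteq> 0"
    "al + be + 2 * real n + 2 \<noteq> 0" "al + be + 2 * real n + 3 \<noteq> 0" "al + be + 2 * real n + 4 \<noteq> 0" "al + v - be \<noteq> 0" "al - v - be \<noteq> 0"
    "al + v \<noteq> be" "al - v \<noteq> be"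
  using v_nz k1_nz k2_nz k3_pos k4_pos al be by (auto simp: kappa_def)

lemma eR2_11: "R2 al be v n $ 1 $ 1 = cc al be v n * gR2_11 al be v (real n)"
  by (simp add: R2_def gR2_11_def kappa_def divide_simps nzx; simp add: algebra_simps)

lemma eR2_12: "R2 al be v n $ 1 $ 2 = cc al be v n * gR2_12 al be v (real n)"
  by (simp add: R2_def gR2_12_def kappa_def divide_simps nzx; simp add: algebra_simps)

lemma eR2_21: "R2 al be v n $ 2 $ 1 = dd al be v n * gR2_21 al be v (real n)"
  by (simp add: R2_def gR2_21_def kappa_def divide_simps nzx; simp add: algebra_simps)

lemma eR2_22: "R2 al be v n $ 2 $ 2 = dd al be v n * gR2_22 al be v (real n)"
  by (simp add: R2_def gR2_22_def kappa_def divide_simps nzx; simp add: algebra_simps)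

lemma eR1_11: "R1 al be v n $ 1 $ 1 = cc al be v n * gR1_11 al be v (real n)"
  by (simp add: R1_def gR1_11_def kappa_def divide_simps nzx; simp add: algebra_simps)

lemma eR1_12: "R1 al be v n $ 1 $ 2 = cc al be v n * gR1_12 al be v (real n)"
  by (simp add: R1_def gR1_12_def kappa_def divide_simps nzx; simp add: algebra_simps)

lemma eR1_21: "R1 al be v n $ 2 $ 1 = dd al be v n * gR1_21 al be v (real n)"
  by (simp add: R1_def gR1_21_def kappa_def divide_simps nzx; simp add: algebra_simps)

lemma eR1_22: "R1 al be v n $ 2 $ 2 = dd al be v n * gR1_22 al be v (real n)"
  by (simp add: R1_def gR1_22_def kappa_def divide_simps nzx; simp add: algebra_simps)

lemma eR0_11: "R0 al be v n $ 1 $ 1 = cc al be v n * gR0_11 al be v (real n)"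
  by (simp add: R0_def gR0_11_def kappa_def divide_simps nzx; simp add: algebra_simps)

lemma eR0_12: "R0 al be v n $ 1 $ 2 = cc al be v n * gR0_12 al be v (real n)"
  by (simp add: R0_def gR0_12_def kappa_def divide_simps nzx; simp add: algebra_simps)

lemma eR0_21: "R0 al be v n $ 2 $ 1 = dd al be v n * gR0_21 al be v (real n)"
  by (simp add: R0_def gR0_21_def kappa_def divide_simps nzx; simp add: algebra_simps)

lemma eR0_22: "R0 al be v n $ 2 $ 2 = dd al be v n * gR0_22 al be v (real n)"
  by (simp add: R0_def gR0_22_def kappa_def divide_simps nzx; simp add: algebra_simps)

lemma eC2_11: "C2 al be v n $ 1 $ 1 = cc al be v n * gC2_11 al be v (real n)"
  by (simp add: C2_def gC2_11_def kappa_def divide_simps nzx; simp add: algebra_simps)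

lemma eC2_12: "C2 al be v n $ 1 $ 2 = cc al be v n * gC2_12 al be v (real n)"
  by (simp add: C2_def gC2_12_def kappa_def divide_simps nzx; simp add: algebra_simps)

lemma eC2_21: "C2 al be v n $ 2 $ 1 = dd al be v n * gC2_21 al be v (real n)"
  by (simp add: C2_def gC2_21_def kappa_def divide_simps nzx; simp add: algebra_simps)

lemma eC2_22: "C2 al be v n $ 2 $ 2 = dd al be v n * gC2_22 al be v (real n)"
  by (simp add: C2_def gC2_22_def kappa_def divide_simps nzx; simp add: algebra_simps)

lemma eC1_11: "C1 al be v n $ 1 $ 1 = cc al be v n * gC1_11 al be v (real n)"
  by (simp add: C1_def gC1_11_def kappa_def divide_simps nzx; simp add: algebra_simps)

lemma eC1_12: "C1 al be v n $ 1 $ 2 = cc al be v n * gC1_12 al be v (real n)"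
  by (simp add: C1_def gC1_12_def kappa_def divide_simps nzx; simp add: algebra_simps)

lemma eC1_21: "C1 al be v n $ 2 $ 1 = dd al be v n * gC1_21 al be v (real n)"
  by (simp add: C1_def gC1_21_def kappa_def divide_simps nzx; simp add: algebra_simps)

lemma eC1_22: "C1 al be v n $ 2 $ 2 = dd al be v n * gC1_22 al be v (real n)"
  by (simp add: C1_def gC1_22_def kappa_def divide_simps nzx; simp add: algebra_simps)

lemma eC0_11: "C0 al be v n $ 1 $ 1 = cc al be v n * gC0_11 al be v (real n)"
  by (simp add: C0_def gC0_11_def kappa_def divide_simps nzx; simp add: algebra_simps)

lemma eC0_12: "C0 al be v n $ 1 $ 2 = cc al be v n * gC0_12 al be v (real n)"
  by (simp add: C0_def gC0_12_def kappa_def divide_simps nzx; simp add: algebra_simps)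

lemma eC0_21: "C0 al be v n $ 2 $ 1 = dd al be v n * gC0_21 al be v (real n)"
  by (simp add: C0_def gC0_21_def kappa_def divide_simps nzx; simp add: algebra_simps)

lemma eC0_22: "C0 al be v n $ 2 $ 2 = dd al be v n * gC0_22 al be v (real n)"
  by (simp add: C0_def gC0_22_def kappa_def divide_simps nzx; simp add: algebra_simps)

definition fG :: "nat \<Rightarrow> 2 \<Rightarrow> 2 \<Rightarrow> real poly" where
  "fG n i j = GF n al be (C2 al be v n $ i $ j) (C1 al be v n $ i $ j) (C0 al be v n $ i $ j)"
definition fH :: "nat \<Rightarrow> 2 \<Rightarrow> 2 \<Rightarrow> real poly" where
  "fH n i j = HF n al be (R2 al be v n $ i $ j) (R1 al be v n $ i $ j) (R0 al be v n $ i $ j)"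

lemma zero_trick: "(y::real) = 0 \<Longrightarrow> x = p * (c * y) \<Longrightarrow> x = 0" by simp

lemma a1_eq: "a1 = - (al + v + be + 2)" by (simp add: a1_def kappa_def)
lemma d1_eq: "d1 = - (al - v + be + 2)" by (simp add: d1_def kappa_def)
lemma a2_eq: "a2 = v * (al + v + be + 2) / (al + v - be)" by (simp add: a2_def kappa_def)
lemma d2_eq: "d2 = - v * (al - v + be + 2) / (al - v - be)" by (simp add: d2_def kappa_def)

lemma fG_11v0: "poly (fG n 1 1) 0 = pochhammer (al + 1) n * (cc al be v n * rd11v0 al be v (real n))"
  unfolding fG_def GF_v0[OF al be] eC2_11 eC1_11 eC0_11 scale_br idG11v0[OF nzx] ..

lemma fG_11d0: "poly (pderiv (fG n 1 1)) 0 = pochhammer (al + 1) n * (cc al be v n * rd11d0 al be v (real n))"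
  unfolding fG_def GF_d0[OF al be] eC2_11 eC1_11 eC0_11 scale_br idG11d0[OF nzx] ..

lemma fG_11v1: "poly (fG n 1 1) 1 = ((-1) ^ n * pochhammer (be + 1) n) * (cc al be v n * rd11v1 al be v (real n))"
  unfolding fG_def GF_v1[OF al be] eC2_11 eC1_11 eC0_11 scale_br idG11v1[OF nzx] ..

lemma fG_11d1: "poly (pderiv (fG n 1 1)) 1 = ((-1) ^ n * pochhammer (be + 1) n) * (cc al be v n * rd11d1 al be v (real n))"
  unfolding fG_def GF_d1[OF al be] eC2_11 eC1_11 eC0_11 scale_br idG11d1[OF nzx] ..

lemma fG_12v0: "poly (fG n 1 2) 0 = pochhammer (al + 1) n * (cc al be v n * rd12v0 al be v (real n))"
  unfolding fG_def GF_v0[OF al be] eC2_12 eC1_12 eC0_12 scale_br idG12v0[OF nzx] ..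

lemma fG_12d0: "poly (pderiv (fG n 1 2)) 0 = pochhammer (al + 1) n * (cc al be v n * rd12d0 al be v (real n))"
  unfolding fG_def GF_d0[OF al be] eC2_12 eC1_12 eC0_12 scale_br idG12d0[OF nzx] ..

lemma fG_12v1: "poly (fG n 1 2) 1 = ((-1) ^ n * pochhammer (be + 1) n) * (cc al be v n * rd12v1 al be v (real n))"
  unfolding fG_def GF_v1[OF al be] eC2_12 eC1_12 eC0_12 scale_br idG12v1[OF nzx] ..

lemma fG_12d1: "poly (pderiv (fG n 1 2)) 1 = ((-1) ^ n * pochhammer (be + 1) n) * (cc al be v n * rd12d1 al be v (real n))"
  unfolding fG_def GF_d1[OF al be] eC2_12 eC1_12 eC0_12 scale_br idG12d1[OF nzx] ..

lemma fG_dvd1: "Dp dvd (fG n 1 1 * w22 - fG n 1 2 * w12)" "Dp dvd (fG n 1 2 * w11 - fG n 1 1 * w12)"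
  apply (rule endpt_dvd(1))
  subgoal unfolding fG_11v0 fG_11d0 fG_11v1 fG_11d1 fG_12v0 fG_12d0 fG_12v1 fG_12d1 a1_eq d1_eq a2_eq d2_eq
    by (rule zero_trick[where p="pochhammer (al + 1) n" and c="cc al be v n", OF E1_1[OF nzx]]) (simp add: algebra_simps)
  subgoal unfolding fG_11v0 fG_11d0 fG_11v1 fG_11d1 fG_12v0 fG_12d0 fG_12v1 fG_12d1 a1_eq d1_eq a2_eq d2_eq
    by (rule zero_trick[where p="pochhammer (al + 1) n" and c="cc al be v n", OF E1_2[OF nzx]]) (simp add: algebra_simps)
  subgoal unfolding fG_11v0 fG_11d0 fG_11v1 fG_11d1 fG_12v0 fG_12d0 fG_12v1 fG_12d1 a1_eq d1_eq a2_eq d2_eq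
    by (rule zero_trick[where p="((-1) ^ n * pochhammer (be + 1) n)" and c="cc al be v n", OF E1_3[OF nzx]]) (simp add: algebra_simps)
  subgoal unfolding fG_11v0 fG_11d0 fG_11v1 fG_11d1 fG_12v0 fG_12d0 fG_12v1 fG_12d1 a1_eq d1_eq a2_eq d2_eq
    by (rule zero_trick[where p="((-1) ^ n * pochhammer (be + 1) n)" and c="cc al be v n", OF E1_4[OF nzx]]) (simp add: algebra_simps)
  subgoal unfolding fG_11v0 fG_11d0 fG_11v1 fG_11d1 fG_12v0 fG_12d0 fG_12v1 fG_12d1 a1_eq d1_eq a2_eq d2_eq
    by (rule zero_trick[where p="pochhammer (al + 1) n" and c="cc al be v n", OF E1_5[OF nzx]]) (simp add: algebra_simps)
  subgoal unfolding fG_11v0 fG_11d0 fG_11v1 fG_11d1 fG_12v0 fG_12d0 fG_12v1 fG_12d1 a1_eq d1_eq a2_eq d2_eq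
    by (rule zero_trick[where p="((-1) ^ n * pochhammer (be + 1) n)" and c="cc al be v n", OF E1_6[OF nzx]]) (simp add: algebra_simps)
  subgoal unfolding fG_11v0 fG_11d0 fG_11v1 fG_11d1 fG_12v0 fG_12d0 fG_12v1 fG_12d1 a1_eq d1_eq a2_eq d2_eq
    by (rule zero_trick[where p="((-1) ^ n * pochhammer (be + 1) n)" and c="cc al be v n", OF E1_7[OF nzx]]) (simp add: algebra_simps)
  apply (rule endpt_dvd(2))
  subgoal unfolding fG_11v0 fG_11d0 fG_11v1 fG_11d1 fG_12v0 fG_12d0 fG_12v1 fG_12d1 a1_eq d1_eq a2_eq d2_eq
    by (rule zero_trick[where p="pochhammer (al + 1) n" and c="cc al be v n", OF E1_1[OF nzx]]) (simp add: algebra_simps)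
  subgoal unfolding fG_11v0 fG_11d0 fG_11v1 fG_11d1 fG_12v0 fG_12d0 fG_12v1 fG_12d1 a1_eq d1_eq a2_eq d2_eq
    by (rule zero_trick[where p="pochhammer (al + 1) n" and c="cc al be v n", OF E1_2[OF nzx]]) (simp add: algebra_simps)
  subgoal unfolding fG_11v0 fG_11d0 fG_11v1 fG_11d1 fG_12v0 fG_12d0 fG_12v1 fG_12d1 a1_eq d1_eq a2_eq d2_eq
    by (rule zero_trick[where p="((-1) ^ n * pochhammer (be + 1) n)" and c="cc al be v n", OF E1_3[OF nzx]]) (simp add: algebra_simps)
  subgoal unfolding fG_11v0 fG_11d0 fG_11v1 fG_11d1 fG_12v0 fG_12d0 fG_12v1 fG_12d1 a1_eq d1_eq a2_eq d2_eq
    by (rule zero_trick[where p="((-1) ^ n * pochhammer (be + 1) n)" and c="cc al be v n", OF E1_4[OF nzx]]) (simp add: algebra_simps)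
  subgoal unfolding fG_11v0 fG_11d0 fG_11v1 fG_11d1 fG_12v0 fG_12d0 fG_12v1 fG_12d1 a1_eq d1_eq a2_eq d2_eq
    by (rule zero_trick[where p="pochhammer (al + 1) n" and c="cc al be v n", OF E1_5[OF nzx]]) (simp add: algebra_simps)
  subgoal unfolding fG_11v0 fG_11d0 fG_11v1 fG_11d1 fG_12v0 fG_12d0 fG_12v1 fG_12d1 a1_eq d1_eq a2_eq d2_eq
    by (rule zero_trick[where p="((-1) ^ n * pochhammer (be + 1) n)" and c="cc al be v n", OF E1_6[OF nzx]]) (simp add: algebra_simps)
  subgoal unfolding fG_11v0 fG_11d0 fG_11v1 fG_11d1 fG_12v0 fG_12d0 fG_12v1 fG_12d1 a1_eq d1_eq a2_eq d2_eq
    by (rule zero_trick[where p="((-1) ^ n * pochhammer (be + 1) n)" and c="cc al be v n", OF E1_7[OF nzx]]) (simp add: algebra_simps)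
  done

lemma fG_21v0: "poly (fG n 2 1) 0 = pochhammer (al + 1) n * (dd al be v n * rd21v0 al be v (real n))"
  unfolding fG_def GF_v0[OF al be] eC2_21 eC1_21 eC0_21 scale_br idG21v0[OF nzx] ..

lemma fG_21d0: "poly (pderiv (fG n 2 1)) 0 = pochhammer (al + 1) n * (dd al be v n * rd21d0 al be v (real n))"
  unfolding fG_def GF_d0[OF al be] eC2_21 eC1_21 eC0_21 scale_br idG21d0[OF nzx] ..

lemma fG_21v1: "poly (fG n 2 1) 1 = ((-1) ^ n * pochhammer (be + 1) n) * (dd al be v n * rd21v1 al be v (real n))"
  unfolding fG_def GF_v1[OF al be] eC2_21 eC1_21 eC0_21 scale_br idG21v1[OF nzx] ..

lemma fG_21d1: "poly (pderiv (fG n 2 1)) 1 = ((-1) ^ n * pochhammer (be + 1) n) * (dd al be v n * rd21d1 al be v (real n))"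
  unfolding fG_def GF_d1[OF al be] eC2_21 eC1_21 eC0_21 scale_br idG21d1[OF nzx] ..

lemma fG_22v0: "poly (fG n 2 2) 0 = pochhammer (al + 1) n * (dd al be v n * rd22v0 al be v (real n))"
  unfolding fG_def GF_v0[OF al be] eC2_22 eC1_22 eC0_22 scale_br idG22v0[OF nzx] ..

lemma fG_22d0: "poly (pderiv (fG n 2 2)) 0 = pochhammer (al + 1) n * (dd al be v n * rd22d0 al be v (real n))"
  unfolding fG_def GF_d0[OF al be] eC2_22 eC1_22 eC0_22 scale_br idG22d0[OF nzx] ..

lemma fG_22v1: "poly (fG n 2 2) 1 = ((-1) ^ n * pochhammer (be + 1) n) * (dd al be v n * rd22v1 al be v (real n))"
  unfolding fG_def GF_v1[OF al be] eC2_22 eC1_22 eC0_22 scale_br idG22v1[OF nzx] ..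

lemma fG_22d1: "poly (pderiv (fG n 2 2)) 1 = ((-1) ^ n * pochhammer (be + 1) n) * (dd al be v n * rd22d1 al be v (real n))"
  unfolding fG_def GF_d1[OF al be] eC2_22 eC1_22 eC0_22 scale_br idG22d1[OF nzx] ..

lemma fG_dvd2: "Dp dvd (fG n 2 1 * w22 - fG n 2 2 * w12)" "Dp dvd (fG n 2 2 * w11 - fG n 2 1 * w12)"
  apply (rule endpt_dvd(1))
  subgoal unfolding fG_21v0 fG_21d0 fG_21v1 fG_21d1 fG_22v0 fG_22d0 fG_22v1 fG_22d1 a1_eq d1_eq a2_eq d2_eq
    by (rule zero_trick[where p="pochhammer (al + 1) n" and c="dd al be v n", OF E2_1[OF nzx]]) (simp add: algebra_simps)
  subgoal unfolding fG_21v0 fG_21d0 fG_21v1 fG_21d1 fG_22v0 fG_22d0 fG_22v1 fG_22d1 a1_eq d1_eq a2_eq d2_eq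
    by (rule zero_trick[where p="pochhammer (al + 1) n" and c="dd al be v n", OF E2_2[OF nzx]]) (simp add: algebra_simps)
  subgoal unfolding fG_21v0 fG_21d0 fG_21v1 fG_21d1 fG_22v0 fG_22d0 fG_22v1 fG_22d1 a1_eq d1_eq a2_eq d2_eq
    by (rule zero_trick[where p="((-1) ^ n * pochhammer (be + 1) n)" and c="dd al be v n", OF E2_3[OF nzx]]) (simp add: algebra_simps)
  subgoal unfolding fG_21v0 fG_21d0 fG_21v1 fG_21d1 fG_22v0 fG_22d0 fG_22v1 fG_22d1 a1_eq d1_eq a2_eq d2_eq
    by (rule zero_trick[where p="((-1) ^ n * pochhammer (be + 1) n)" and c="dd al be v n", OF E2_4[OF nzx]]) (simp add: algebra_simps)
  subgoal unfolding fG_21v0 fG_21d0 fG_21v1 fG_21d1 fG_22v0 fG_22d0 fG_22v1 fG_22d1 a1_eq d1_eq a2_eq d2_eq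
    by (rule zero_trick[where p="pochhammer (al + 1) n" and c="dd al be v n", OF E2_5[OF nzx]]) (simp add: algebra_simps)
  subgoal unfolding fG_21v0 fG_21d0 fG_21v1 fG_21d1 fG_22v0 fG_22d0 fG_22v1 fG_22d1 a1_eq d1_eq a2_eq d2_eq
    by (rule zero_trick[where p="((-1) ^ n * pochhammer (be + 1) n)" and c="dd al be v n", OF E2_6[OF nzx]]) (simp add: algebra_simps)
  subgoal unfolding fG_21v0 fG_21d0 fG_21v1 fG_21d1 fG_22v0 fG_22d0 fG_22v1 fG_22d1 a1_eq d1_eq a2_eq d2_eq
    by (rule zero_trick[where p="((-1) ^ n * pochhammer (be + 1) n)" and c="dd al be v n", OF E2_7[OF nzx]]) (simp add: algebra_simps)
  apply (rule endpt_dvd(2))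
  subgoal unfolding fG_21v0 fG_21d0 fG_21v1 fG_21d1 fG_22v0 fG_22d0 fG_22v1 fG_22d1 a1_eq d1_eq a2_eq d2_eq
    by (rule zero_trick[where p="pochhammer (al + 1) n" and c="dd al be v n", OF E2_1[OF nzx]]) (simp add: algebra_simps)
  subgoal unfolding fG_21v0 fG_21d0 fG_21v1 fG_21d1 fG_22v0 fG_22d0 fG_22v1 fG_22d1 a1_eq d1_eq a2_eq d2_eq
    by (rule zero_trick[where p="pochhammer (al + 1) n" and c="dd al be v n", OF E2_2[OF nzx]]) (simp add: algebra_simps)
  subgoal unfolding fG_21v0 fG_21d0 fG_21v1 fG_21d1 fG_22v0 fG_22d0 fG_22v1 fG_22d1 a1_eq d1_eq a2_eq d2_eq
    by (rule zero_trick[where p="((-1) ^ n * pochhammer (be + 1) n)" and c="dd al be v n", OF E2_3[OF nzx]]) (simp add: algebra_simps)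
  subgoal unfolding fG_21v0 fG_21d0 fG_21v1 fG_21d1 fG_22v0 fG_22d0 fG_22v1 fG_22d1 a1_eq d1_eq a2_eq d2_eq
    by (rule zero_trick[where p="((-1) ^ n * pochhammer (be + 1) n)" and c="dd al be v n", OF E2_4[OF nzx]]) (simp add: algebra_simps)
  subgoal unfolding fG_21v0 fG_21d0 fG_21v1 fG_21d1 fG_22v0 fG_22d0 fG_22v1 fG_22d1 a1_eq d1_eq a2_eq d2_eq
    by (rule zero_trick[where p="pochhammer (al + 1) n" and c="dd al be v n", OF E2_5[OF nzx]]) (simp add: algebra_simps)
  subgoal unfolding fG_21v0 fG_21d0 fG_21v1 fG_21d1 fG_22v0 fG_22d0 fG_22v1 fG_22d1 a1_eq d1_eq a2_eq d2_eq
    by (rule zero_trick[where p="((-1) ^ n * pochhammer (be + 1) n)" and c="dd al be v n", OF E2_6[OF nzx]]) (simp add: algebra_simps)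
  subgoal unfolding fG_21v0 fG_21d0 fG_21v1 fG_21d1 fG_22v0 fG_22d0 fG_22v1 fG_22d1 a1_eq d1_eq a2_eq d2_eq
    by (rule zero_trick[where p="((-1) ^ n * pochhammer (be + 1) n)" and c="dd al be v n", OF E2_7[OF nzx]]) (simp add: algebra_simps)
  done

lemma fH_11v0: "poly (fH n 1 1) 0 = pochhammer (al + 1) n * (cc al be v n * rd11v0 al be v (real n))"
  unfolding fH_def HF_v0[OF al be] eR2_11 eR1_11 eR0_11 scale_br idH11v0[OF nzx] ..

lemma fH_11d0: "poly (pderiv (fH n 1 1)) 0 = pochhammer (al + 1) n * (cc al be v n * rd11d0 al be v (real n))"
  unfolding fH_def HF_d0[OF al be] eR2_11 eR1_11 eR0_11 scale_br idH11d0[OF nzx] ..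

lemma fH_11v1: "poly (fH n 1 1) 1 = ((-1) ^ n * pochhammer (be + 1) n) * (cc al be v n * rd11v1 al be v (real n))"
  unfolding fH_def HF_v1[OF al be] eR2_11 eR1_11 eR0_11 scale_br idH11v1[OF nzx] ..

lemma fH_11d1: "poly (pderiv (fH n 1 1)) 1 = ((-1) ^ n * pochhammer (be + 1) n) * (cc al be v n * rd11d1 al be v (real n))"
  unfolding fH_def HF_d1[OF al be] eR2_11 eR1_11 eR0_11 scale_br idH11d1[OF nzx] ..

lemma fH_12v0: "poly (fH n 1 2) 0 = pochhammer (al + 1) n * (cc al be v n * rd12v0 al be v (real n))"
  unfolding fH_def HF_v0[OF al be] eR2_12 eR1_12 eR0_12 scale_br idH12v0[OF nzx] ..

lemma fH_12d0: "poly (pderiv (fH n 1 2)) 0 = pochhammer (al + 1) n * (cc al be v n * rd12d0 al be v (real n))"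
  unfolding fH_def HF_d0[OF al be] eR2_12 eR1_12 eR0_12 scale_br idH12d0[OF nzx] ..

lemma fH_12v1: "poly (fH n 1 2) 1 = ((-1) ^ n * pochhammer (be + 1) n) * (cc al be v n * rd12v1 al be v (real n))"
  unfolding fH_def HF_v1[OF al be] eR2_12 eR1_12 eR0_12 scale_br idH12v1[OF nzx] ..

lemma fH_12d1: "poly (pderiv (fH n 1 2)) 1 = ((-1) ^ n * pochhammer (be + 1) n) * (cc al be v n * rd12d1 al be v (real n))"
  unfolding fH_def HF_d1[OF al be] eR2_12 eR1_12 eR0_12 scale_br idH12d1[OF nzx] ..

lemma fH_dvd1: "Dp dvd (fH n 1 1 * w22 - fH n 1 2 * w12)" "Dp dvd (fH n 1 2 * w11 - fH n 1 1 * w12)"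
  apply (rule endpt_dvd(1))
  subgoal unfolding fH_11v0 fH_11d0 fH_11v1 fH_11d1 fH_12v0 fH_12d0 fH_12v1 fH_12d1 a1_eq d1_eq a2_eq d2_eq
    by (rule zero_trick[where p="pochhammer (al + 1) n" and c="cc al be v n", OF E1_1[OF nzx]]) (simp add: algebra_simps)
  subgoal unfolding fH_11v0 fH_11d0 fH_11v1 fH_11d1 fH_12v0 fH_12d0 fH_12v1 fH_12d1 a1_eq d1_eq a2_eq d2_eq
    by (rule zero_trick[where p="pochhammer (al + 1) n" and c="cc al be v n", OF E1_2[OF nzx]]) (simp add: algebra_simps)
  subgoal unfolding fH_11v0 fH_11d0 fH_11v1 fH_11d1 fH_12v0 fH_12d0 fH_12v1 fH_12d1 a1_eq d1_eq a2_eq d2_eq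
    by (rule zero_trick[where p="((-1) ^ n * pochhammer (be + 1) n)" and c="cc al be v n", OF E1_3[OF nzx]]) (simp add: algebra_simps)
  subgoal unfolding fH_11v0 fH_11d0 fH_11v1 fH_11d1 fH_12v0 fH_12d0 fH_12v1 fH_12d1 a1_eq d1_eq a2_eq d2_eq
    by (rule zero_trick[where p="((-1) ^ n * pochhammer (be + 1) n)" and c="cc al be v n", OF E1_4[OF nzx]]) (simp add: algebra_simps)
  subgoal unfolding fH_11v0 fH_11d0 fH_11v1 fH_11d1 fH_12v0 fH_12d0 fH_12v1 fH_12d1 a1_eq d1_eq a2_eq d2_eq
    by (rule zero_trick[where p="pochhammer (al + 1) n" and c="cc al be v n", OF E1_5[OF nzx]]) (simp add: algebra_simps)
  subgoal unfolding fH_11v0 fH_11d0 fH_11v1 fH_11d1 fH_12v0 fH_12d0 fH_12v1 fH_12d1 a1_eq d1_eq a2_eq d2_eq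
    by (rule zero_trick[where p="((-1) ^ n * pochhammer (be + 1) n)" and c="cc al be v n", OF E1_6[OF nzx]]) (simp add: algebra_simps)
  subgoal unfolding fH_11v0 fH_11d0 fH_11v1 fH_11d1 fH_12v0 fH_12d0 fH_12v1 fH_12d1 a1_eq d1_eq a2_eq d2_eq
    by (rule zero_trick[where p="((-1) ^ n * pochhammer (be + 1) n)" and c="cc al be v n", OF E1_7[OF nzx]]) (simp add: algebra_simps)
  apply (rule endpt_dvd(2))
  subgoal unfolding fH_11v0 fH_11d0 fH_11v1 fH_11d1 fH_12v0 fH_12d0 fH_12v1 fH_12d1 a1_eq d1_eq a2_eq d2_eq
    by (rule zero_trick[where p="pochhammer (al + 1) n" and c="cc al be v n", OF E1_1[OF nzx]]) (simp add: algebra_simps)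
  subgoal unfolding fH_11v0 fH_11d0 fH_11v1 fH_11d1 fH_12v0 fH_12d0 fH_12v1 fH_12d1 a1_eq d1_eq a2_eq d2_eq
    by (rule zero_trick[where p="pochhammer (al + 1) n" and c="cc al be v n", OF E1_2[OF nzx]]) (simp add: algebra_simps)
  subgoal unfolding fH_11v0 fH_11d0 fH_11v1 fH_11d1 fH_12v0 fH_12d0 fH_12v1 fH_12d1 a1_eq d1_eq a2_eq d2_eq
    by (rule zero_trick[where p="((-1) ^ n * pochhammer (be + 1) n)" and c="cc al be v n", OF E1_3[OF nzx]]) (simp add: algebra_simps)
  subgoal unfolding fH_11v0 fH_11d0 fH_11v1 fH_11d1 fH_12v0 fH_12d0 fH_12v1 fH_12d1 a1_eq d1_eq a2_eq d2_eq
    by (rule zero_trick[where p="((-1) ^ n * pochhammer (be + 1) n)" and c="cc al be v n", OF E1_4[OF nzx]]) (simp add: algebra_simps)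
  subgoal unfolding fH_11v0 fH_11d0 fH_11v1 fH_11d1 fH_12v0 fH_12d0 fH_12v1 fH_12d1 a1_eq d1_eq a2_eq d2_eq
    by (rule zero_trick[where p="pochhammer (al + 1) n" and c="cc al be v n", OF E1_5[OF nzx]]) (simp add: algebra_simps)
  subgoal unfolding fH_11v0 fH_11d0 fH_11v1 fH_11d1 fH_12v0 fH_12d0 fH_12v1 fH_12d1 a1_eq d1_eq a2_eq d2_eq
    by (rule zero_trick[where p="((-1) ^ n * pochhammer (be + 1) n)" and c="cc al be v n", OF E1_6[OF nzx]]) (simp add: algebra_simps)
  subgoal unfolding fH_11v0 fH_11d0 fH_11v1 fH_11d1 fH_12v0 fH_12d0 fH_12v1 fH_12d1 a1_eq d1_eq a2_eq d2_eq
    by (rule zero_trick[where p="((-1) ^ n * pochhammer (be + 1) n)" and c="cc al be v n", OF E1_7[OF nzx]]) (simp add: algebra_simps)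
  done

lemma fH_21v0: "poly (fH n 2 1) 0 = pochhammer (al + 1) n * (dd al be v n * rd21v0 al be v (real n))"
  unfolding fH_def HF_v0[OF al be] eR2_21 eR1_21 eR0_21 scale_br idH21v0[OF nzx] ..

lemma fH_21d0: "poly (pderiv (fH n 2 1)) 0 = pochhammer (al + 1) n * (dd al be v n * rd21d0 al be v (real n))"
  unfolding fH_def HF_d0[OF al be] eR2_21 eR1_21 eR0_21 scale_br idH21d0[OF nzx] ..

lemma fH_21v1: "poly (fH n 2 1) 1 = ((-1) ^ n * pochhammer (be + 1) n) * (dd al be v n * rd21v1 al be v (real n))"
  unfolding fH_def HF_v1[OF al be] eR2_21 eR1_21 eR0_21 scale_br idH21v1[OF nzx] ..

lemma fH_21d1: "poly (pderiv (fH n 2 1)) 1 = ((-1) ^ n * pochhammer (be + 1) n) * (dd al be v n * rd21d1 al be v (real n))"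
  unfolding fH_def HF_d1[OF al be] eR2_21 eR1_21 eR0_21 scale_br idH21d1[OF nzx] ..

lemma fH_22v0: "poly (fH n 2 2) 0 = pochhammer (al + 1) n * (dd al be v n * rd22v0 al be v (real n))"
  unfolding fH_def HF_v0[OF al be] eR2_22 eR1_22 eR0_22 scale_br idH22v0[OF nzx] ..

lemma fH_22d0: "poly (pderiv (fH n 2 2)) 0 = pochhammer (al + 1) n * (dd al be v n * rd22d0 al be v (real n))"
  unfolding fH_def HF_d0[OF al be] eR2_22 eR1_22 eR0_22 scale_br idH22d0[OF nzx] ..

lemma fH_22v1: "poly (fH n 2 2) 1 = ((-1) ^ n * pochhammer (be + 1) n) * (dd al be v n * rd22v1 al be v (real n))"
  unfolding fH_def HF_v1[OF al be] eR2_22 eR1_22 eR0_22 scale_br idH22v1[OF nzx] ..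

lemma fH_22d1: "poly (pderiv (fH n 2 2)) 1 = ((-1) ^ n * pochhammer (be + 1) n) * (dd al be v n * rd22d1 al be v (real n))"
  unfolding fH_def HF_d1[OF al be] eR2_22 eR1_22 eR0_22 scale_br idH22d1[OF nzx] ..

lemma fH_dvd2: "Dp dvd (fH n 2 1 * w22 - fH n 2 2 * w12)" "Dp dvd (fH n 2 2 * w11 - fH n 2 1 * w12)"
  apply (rule endpt_dvd(1))
  subgoal unfolding fH_21v0 fH_21d0 fH_21v1 fH_21d1 fH_22v0 fH_22d0 fH_22v1 fH_22d1 a1_eq d1_eq a2_eq d2_eq
    by (rule zero_trick[where p="pochhammer (al + 1) n" and c="dd al be v n", OF E2_1[OF nzx]]) (simp add: algebra_simps)
  subgoal unfolding fH_21v0 fH_21d0 fH_21v1 fH_21d1 fH_22v0 fH_22d0 fH_22v1 fH_22d1 a1_eq d1_eq a2_eq d2_eq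
    by (rule zero_trick[where p="pochhammer (al + 1) n" and c="dd al be v n", OF E2_2[OF nzx]]) (simp add: algebra_simps)
  subgoal unfolding fH_21v0 fH_21d0 fH_21v1 fH_21d1 fH_22v0 fH_22d0 fH_22v1 fH_22d1 a1_eq d1_eq a2_eq d2_eq
    by (rule zero_trick[where p="((-1) ^ n * pochhammer (be + 1) n)" and c="dd al be v n", OF E2_3[OF nzx]]) (simp add: algebra_simps)
  subgoal unfolding fH_21v0 fH_21d0 fH_21v1 fH_21d1 fH_22v0 fH_22d0 fH_22v1 fH_22d1 a1_eq d1_eq a2_eq d2_eq
    by (rule zero_trick[where p="((-1) ^ n * pochhammer (be + 1) n)" and c="dd al be v n", OF E2_4[OF nzx]]) (simp add: algebra_simps)
  subgoal unfolding fH_21v0 fH_21d0 fH_21v1 fH_21d1 fH_22v0 fH_22d0 fH_22v1 fH_22d1 a1_eq d1_eq a2_eq d2_eq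
    by (rule zero_trick[where p="pochhammer (al + 1) n" and c="dd al be v n", OF E2_5[OF nzx]]) (simp add: algebra_simps)
  subgoal unfolding fH_21v0 fH_21d0 fH_21v1 fH_21d1 fH_22v0 fH_22d0 fH_22v1 fH_22d1 a1_eq d1_eq a2_eq d2_eq
    by (rule zero_trick[where p="((-1) ^ n * pochhammer (be + 1) n)" and c="dd al be v n", OF E2_6[OF nzx]]) (simp add: algebra_simps)
  subgoal unfolding fH_21v0 fH_21d0 fH_21v1 fH_21d1 fH_22v0 fH_22d0 fH_22v1 fH_22d1 a1_eq d1_eq a2_eq d2_eq
    by (rule zero_trick[where p="((-1) ^ n * pochhammer (be + 1) n)" and c="dd al be v n", OF E2_7[OF nzx]]) (simp add: algebra_simps)
  apply (rule endpt_dvd(2))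
  subgoal unfolding fH_21v0 fH_21d0 fH_21v1 fH_21d1 fH_22v0 fH_22d0 fH_22v1 fH_22d1 a1_eq d1_eq a2_eq d2_eq
    by (rule zero_trick[where p="pochhammer (al + 1) n" and c="dd al be v n", OF E2_1[OF nzx]]) (simp add: algebra_simps)
  subgoal unfolding fH_21v0 fH_21d0 fH_21v1 fH_21d1 fH_22v0 fH_22d0 fH_22v1 fH_22d1 a1_eq d1_eq a2_eq d2_eq
    by (rule zero_trick[where p="pochhammer (al + 1) n" and c="dd al be v n", OF E2_2[OF nzx]]) (simp add: algebra_simps)
  subgoal unfolding fH_21v0 fH_21d0 fH_21v1 fH_21d1 fH_22v0 fH_22d0 fH_22v1 fH_22d1 a1_eq d1_eq a2_eq d2_eq
    by (rule zero_trick[where p="((-1) ^ n * pochhammer (be + 1) n)" and c="dd al be v n", OF E2_3[OF nzx]]) (simp add: algebra_simps)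
  subgoal unfolding fH_21v0 fH_21d0 fH_21v1 fH_21d1 fH_22v0 fH_22d0 fH_22v1 fH_22d1 a1_eq d1_eq a2_eq d2_eq
    by (rule zero_trick[where p="((-1) ^ n * pochhammer (be + 1) n)" and c="dd al be v n", OF E2_4[OF nzx]]) (simp add: algebra_simps)
  subgoal unfolding fH_21v0 fH_21d0 fH_21v1 fH_21d1 fH_22v0 fH_22d0 fH_22v1 fH_22d1 a1_eq d1_eq a2_eq d2_eq
    by (rule zero_trick[where p="pochhammer (al + 1) n" and c="dd al be v n", OF E2_5[OF nzx]]) (simp add: algebra_simps)
  subgoal unfolding fH_21v0 fH_21d0 fH_21v1 fH_21d1 fH_22v0 fH_22d0 fH_22v1 fH_22d1 a1_eq d1_eq a2_eq d2_eq
    by (rule zero_trick[where p="((-1) ^ n * pochhammer (be + 1) n)" and c="dd al be v n", OF E2_6[OF nzx]]) (simp add: algebra_simps)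
  subgoal unfolding fH_21v0 fH_21d0 fH_21v1 fH_21d1 fH_22v0 fH_22d0 fH_22v1 fH_22d1 a1_eq d1_eq a2_eq d2_eq
    by (rule zero_trick[where p="((-1) ^ n * pochhammer (be + 1) n)" and c="dd al be v n", OF E2_7[OF nzx]]) (simp add: algebra_simps)
  done

end


context prm
begin

lemma deg_GF: "degree (GF n a b c2 c1 c0) \<le> n + 2"
  unfolding GF_def
  by (intro order.trans[OF degree_smult_le] degree_add_le order.trans[OF degree_smult_le])
     (auto intro: order.trans[OF degree_J])

lemma deg_HF: "degree (HF n a b r2 r1 r0) \<le> n + 2"
proof -
  have d1: "degree ([:0, 0, 1:] * J n (a + 2) b) \<le> n + 2"
    by (rule order.trans[OF degree_mult_le]) (use degree_J[of n "a + 2" b] in simp)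
  have d2: "degree ([:0, 1:] * J n (a + 1) b) \<le> n + 2"
    by (rule order.trans[OF degree_mult_le]) (use degree_J[of n "a + 1" b] in simp)
  show ?thesis
    unfolding HF_def
    by (intro order.trans[OF degree_smult_le] degree_add_le order.trans[OF degree_smult_le] d1 d2)
       (use degree_J[of n a b] in simp)
qed

lemma coeff_GF_top: "coeff (GF n a b c2 c1 c0) (n + 2) = fact n * c0 * ((-(real n + a + b + 3)) gchoose (n + 2))"
  by (simp add: GF_def coeff_J algebra_simps)

lemma coeff_HF_top: "coeff (HF n a b r2 r1 r0) (n + 2) = fact n * r2 * ((-(real n + a + b + 3)) gchoose n)"
proof -
  have "coeff ([:0, 0, 1:] * J n (a + 2) b) (n + 2) = coeff (J n (a + 2) b) n"
    by (simp add: numeral_2_eq_2)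
  moreover have "coeff ([:0, 1:] * J n (a + 1) b) (n + 2) = 0"
    by (simp add: numeral_2_eq_2 coeff_J)
  moreover have "coeff (J n a b) (n + 2) = 0" by (simp add: coeff_J)
  ultimately show ?thesis
    by (simp add: HF_def coeff_J algebra_simps)
qed

lemma poch_top: "pochhammer (real n + al + be + 3) (n + 2) = pochhammer (al + be + real n + 3) n * (al + be + 2 * real n + 3) * (al + be + 2 * real n + 4)"
  by (simp add: numeral_2_eq_2 pochhammer_Suc algebra_simps)

lemma gch_top: "(-(real n + al + be + 3)) gchoose (n + 2) = (-1) ^ n * pochhammer (al + be + real n + 3) n * (al + be + 2 * real n + 3) * (al + be + 2 * real n + 4) / fact (n + 2)"
proof -
  have "(-(real n + al + be + 3)) gchoose (n + 2) = (-1) ^ (n + 2) * pochhammer (real n + al + be + 3) (n + 2) / fact (n + 2)"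
    by (subst gbinomial_pochhammer) (simp only: minus_minus)
  then show ?thesis unfolding poch_top by simp
qed

lemma gch_top': "(-(real n + al + be + 3)) gchoose n = (-1) ^ n * pochhammer (al + be + real n + 3) n / fact n"
proof -
  have "(-(real n + al + be + 3)) gchoose n = (-1) ^ n * pochhammer (real n + al + be + 3) n / fact n"
    by (subst gbinomial_pochhammer) (simp only: minus_minus)
  moreover have "real n + al + be + 3 = al + be + real n + 3" by simp
  ultimately show ?thesis by (simp only:)
qed

lemma Pn_nz: "pochhammer (al + be + real n + 3) n \<noteq> 0"
  using pochhammer_pos[of "al + be + real n + 3" n] al be by simp

lemma abstr: "(A::real) * (c * B) * (s * P * u * w / F) = (c * s * P) * (A * B * (u * w / F))"
  by (simp add: mult_ac)

lemma m1sq: "(-1::real) ^ n * (-1) ^ n = 1"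
  by (simp add: power_mult_distrib[symmetric])

lemma cc_sign: "cc al be v n * (-1) ^ n * pochhammer (al + be + real n + 3) n = a2"
proof -
  have "cc al be v n * (-1) ^ n * pochhammer (al + be + real n + 3) n
      = ((-1) ^ n * (-1) ^ n) * (v * (kappa al v be + 2) / kappa al v (-be)) * (pochhammer (al + be + real n + 3) n / pochhammer (al + be + real n + 3) n)"
    unfolding cc_def using k1_nz Pn_nz by (simp add: field_simps)
  also have "\<dots> = a2" using Pn_nz by (simp add: m1sq a2_def)
  finally show ?thesis .
qed

lemma dd_sign: "dd al be v n * (-1) ^ n * pochhammer (al + be + real n + 3) n = d2"
proof -
  have "dd al be v n * (-1) ^ n * pochhammer (al + be + real n + 3) n
      = ((-1) ^ n * (-1) ^ n) * (- v * (kappa al (-v) be + 2) / kappa al (-v) (-be)) * (pochhammer (al + be + real n + 3) n / pochhammer (al + be + real n + 3) n)"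
    unfolding dd_def using k2_nz Pn_nz by (simp add: field_simps)
  also have "\<dots> = d2" using Pn_nz by (simp add: m1sq d2_def)
  finally show ?thesis .
qed

lemma cc_sign': "cc al be v n * ((-1) ^ n * pochhammer (al + be + real n + 3) n) = a2"
  using cc_sign by (simp add: mult.assoc)
lemma dd_sign': "dd al be v n * ((-1) ^ n * pochhammer (al + be + real n + 3) n) = d2"
  using dd_sign by (simp add: mult.assoc)

lemma fact_n2: "fact (n + 2) = (real n + 1) * (real n + 2) * (fact n :: real)"
  by (simp add: numeral_2_eq_2 algebra_simps)

lemma top_factor: "fact n * ((real n + 1) * (real n + 2) / ((al + be + 2 * real n + 4) * (al + be + 2 * real n + 3)))
    * ((al + be + 2 * real n + 3) * (al + be + 2 * real n + 4) / fact (n + 2)) = 1"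
  unfolding fact_n2 using nzx by (simp add: divide_simps)

lemma fG_lead: "coeff (fG n i j) (n + 2) = (if i = 1 \<and> j = 1 then a2 else if i = 2 \<and> j = 2 then d2 else 0)"
proof -
  have X: "fact n * (c * ((real n + 1) * (real n + 2) / ((al + be + 2 * real n + 4) * (al + be + 2 * real n + 3))))
     * ((-1) ^ n * pochhammer (al + be + real n + 3) n * (al + be + 2 * real n + 3) * (al + be + 2 * real n + 4) / fact (n + 2))
     = c * (-1) ^ n * pochhammer (al + be + real n + 3) n" for c
  proof -
    have "fact n * (c * ((real n + 1) * (real n + 2) / ((al + be + 2 * real n + 4) * (al + be + 2 * real n + 3))))
     * ((-1) ^ n * pochhammer (al + be + real n + 3) n * (al + be + 2 * real n + 3) * (al + be + 2 * real n + 4) / fact (n + 2))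
      = (c * (-1) ^ n * pochhammer (al + be + real n + 3) n) * (fact n * ((real n + 1) * (real n + 2) / ((al + be + 2 * real n + 4) * (al + be + 2 * real n + 3)))
    * ((al + be + 2 * real n + 3) * (al + be + 2 * real n + 4) / fact (n + 2)))"
      by (rule abstr)
    then show ?thesis unfolding top_factor by simp
  qed
  have c11: "coeff (fG n 1 1) (n + 2) = a2" unfolding fG_def coeff_GF_top gch_top by (simp only: eC0_11 gC0_11_def X cc_sign)
  have c22: "coeff (fG n 2 2) (n + 2) = d2" unfolding fG_def coeff_GF_top gch_top by (simp only: eC0_22 gC0_22_def X dd_sign)
  have c12: "coeff (fG n 1 2) (n + 2) = 0" unfolding fG_def coeff_GF_top by (simp add: eC0_12 gC0_12_def)
  have c21: "coeff (fG n 2 1) (n + 2) = 0" unfolding fG_def coeff_GF_top by (simp add: eC0_21 gC0_21_def)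
  show ?thesis using exhaust_2[of i] exhaust_2[of j] c11 c22 c12 c21 by auto
qed

lemma fH_lead: "coeff (fH n i j) (n + 2) = (if i = 1 \<and> j = 1 then a2 else if i = 2 \<and> j = 2 then d2 else 0)"
proof -
  have X: "fact n * c * ((-1) ^ n * pochhammer (al + be + real n + 3) n / fact n) = c * (-1) ^ n * pochhammer (al + be + real n + 3) n" for c
    by simp
  show ?thesis
    unfolding fH_def coeff_HF_top gch_top'
    using exhaust_2[of i] exhaust_2[of j]
    by (auto simp: eR2_11 eR2_12 eR2_21 eR2_22 gR2_11_def gR2_12_def gR2_21_def gR2_22_def X cc_sign dd_sign cc_sign' dd_sign')
qed

lemma om_shift1: "t \<ge> 0 \<Longrightarrow> t * om al be t = om (al + 1) be t"
  by (cases "t = 0") (simp_all add: om_def powr_add)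

lemma om_shift2: "t \<ge> 0 \<Longrightarrow> t ^ 2 * om al be t = om (al + 2) be t"
  by (cases "t = 0") (simp_all add: om_def powr_add power2_eq_square powr_numeral[symmetric])

lemma fG_ortho: "k < n \<Longrightarrow> ((\<lambda>t. poly (fG n i j) t * t ^ k * om al be t) has_integral 0) {0..1}"
proof -
  assume k: "k < n"
  define c2 where "c2 = C2 al be v n $ i $ j"
  define c1 where "c1 = C1 al be v n $ i $ j"
  define c0 where "c0 = C0 al be v n $ i $ j"
  have "((\<lambda>t. fact n * (c2 * (poly (J n al be) t * t ^ k * om al be t) + c1 * (poly (J (n + 1) al be) t * t ^ k * om al be t)
        + c0 * (poly (J (n + 2) al be) t * t ^ k * om al be t))) has_integral (fact n * (c2 * 0 + c1 * 0 + c0 * 0))) {0..1}"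
    using k by (intro has_integral_mult_right has_integral_add jac_ortho_int al be) auto
  moreover have "fact n * (c2 * (poly (J n al be) t * t ^ k * om al be t) + c1 * (poly (J (n + 1) al be) t * t ^ k * om al be t)
        + c0 * (poly (J (n + 2) al be) t * t ^ k * om al be t)) = poly (fG n i j) t * t ^ k * om al be t" for t
    by (simp add: fG_def GF_def c2_def c1_def c0_def algebra_simps)
  ultimately show ?thesis by simp
qed

lemma fH_ortho: "k < n \<Longrightarrow> ((\<lambda>t. poly (fH n i j) t * t ^ k * om al be t) has_integral 0) {0..1}"
proof -
  assume k: "k < n"
  define c2 where "c2 = R2 al be v n $ i $ j"
  define c1 where "c1 = R1 al be v n $ i $ j"
  define c0 where "c0 = R0 al be v n $ i $ j"
  have aa2: "al + 2 > -1" and aa1: "al + 1 > -1" using al by auto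
  have "((\<lambda>t. fact n * (c2 * (poly (J n (al + 2) be) t * t ^ k * om (al + 2) be t) + c1 * (poly (J n (al + 1) be) t * t ^ k * om (al + 1) be t)
        + c0 * (poly (J n al be) t * t ^ k * om al be t))) has_integral (fact n * (c2 * 0 + c1 * 0 + c0 * 0))) {0..1}"
    using k by (intro has_integral_mult_right has_integral_add jac_ortho_int al be aa2 aa1) auto
  then have "((\<lambda>t. fact n * (c2 * (poly (J n (al + 2) be) t * t ^ k * om (al + 2) be t) + c1 * (poly (J n (al + 1) be) t * t ^ k * om (al + 1) be t)
        + c0 * (poly (J n al be) t * t ^ k * om al be t))) has_integral 0) {0..1}" by simp
  then show ?thesis
  proof (rule has_integral_eq[rotated])
    fix t :: real assume "t \<in> {0..1}"
    then have t: "t \<ge> 0" by simp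
    show "fact n * (c2 * (poly (J n (al + 2) be) t * t ^ k * om (al + 2) be t) + c1 * (poly (J n (al + 1) be) t * t ^ k * om (al + 1) be t)
        + c0 * (poly (J n al be) t * t ^ k * om al be t)) = poly (fH n i j) t * t ^ k * om al be t"
      unfolding om_shift1[OF t, symmetric] om_shift2[OF t, symmetric]
      by (simp add: fH_def HF_def c2_def c1_def c0_def algebra_simps power2_eq_square)
  qed
qed

lemma fG_mat: "(\<chi> i j. poly (fG n i j) t) = fact n *\<^sub>R
        (jacobiP n al be (1 - 2 * t) *\<^sub>R C2 al be v n
         + jacobiP (n + 1) al be (1 - 2 * t) *\<^sub>R C1 al be v n
         + jacobiP (n + 2) al be (1 - 2 * t) *\<^sub>R C0 al be v n)"
  by (simp add: vec_eq_iff fG_def GF_def poly_J_jacobiP algebra_simps)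

lemma fH_mat: "(\<chi> i j. poly (fH n i j) t) = fact n *\<^sub>R
        ((jacobiP n (al + 2) be (1 - 2 * t) * t ^ 2) *\<^sub>R R2 al be v n
         + (jacobiP n (al + 1) be (1 - 2 * t) * t) *\<^sub>R R1 al be v n
         + jacobiP n al be (1 - 2 * t) *\<^sub>R R0 al be v n)"
  by (simp add: vec_eq_iff fH_def HF_def poly_J_jacobiP algebra_simps power2_eq_square)

lemma fG_dvd: "Dp dvd (fG n i 1 * w22 - fG n i 2 * w12)" "Dp dvd (fG n i 2 * w11 - fG n i 1 * w12)"
  using exhaust_2[of i] fG_dvd1 fG_dvd2 by auto

lemma fH_dvd: "Dp dvd (fH n i 1 * w22 - fH n i 2 * w12)" "Dp dvd (fH n i 2 * w11 - fH n i 1 * w12)"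
  using exhaust_2[of i] fH_dvd1 fH_dvd2 by auto

lemma deg_fG: "degree (fG n i j) \<le> n + 2" unfolding fG_def by (rule deg_GF)
lemma deg_fH: "degree (fH n i j) \<le> n + 2" unfolding fH_def by (rule deg_HF)

lemma main_G:
  assumes "is_monic_mpoly n Pn" "\<forall>m Q. m < n \<longrightarrow> is_mpoly m Q \<longrightarrow> mip (Wmat al be v) Pn Q = 0"
  shows "Pn t ** Wtilde al be v t = (\<chi> i j. poly (fG n i j) t)"
  by (rule UL[where f="fG n", OF assms deg_fG fG_lead fG_ortho fG_dvd(1) fG_dvd(2)])

lemma main_H:
  assumes "is_monic_mpoly n Pn" "\<forall>m Q. m < n \<longrightarrow> is_mpoly m Q \<longrightarrow> mip (Wmat al be v) Pn Q = 0"
  shows "Pn t ** Wtilde al be v t = (\<chi> i j. poly (fH n i j) t)"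
  by (rule UL[where f="fH n", OF assms deg_fH fH_lead fH_ortho fH_dvd(1) fH_dvd(2)])

end

theorem corollary3p3:
  fixes al be v :: real and P :: "nat \<Rightarrow> real \<Rightarrow> real^2^2"
  assumes "al > -1" and "be > -1"
    and "\<bar>al - be\<bar> < \<bar>v\<bar>" and "\<bar>v\<bar> < al + be + 2"
    and "monic_MOPS (Wmat al be v) P"
  shows "\<forall>n t. invertible (Wtilde al be v t) \<longrightarrow>
     P n t = fact n *\<^sub>R
        ((jacobiP n (al + 2) be (1 - 2 * t) * t ^ 2) *\<^sub>R R2 al be v n
         + (jacobiP n (al + 1) be (1 - 2 * t) * t) *\<^sub>R R1 al be v n
         + jacobiP n al be (1 - 2 * t) *\<^sub>R R0 al be v n) ** matrix_inv (Wtilde al be v t)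
   \<and> P n t = fact n *\<^sub>R
        (jacobiP n al be (1 - 2 * t) *\<^sub>R C2 al be v n
         + jacobiP (n + 1) al be (1 - 2 * t) *\<^sub>R C1 al be v n
         + jacobiP (n + 2) al be (1 - 2 * t) *\<^sub>R C0 al be v n) ** matrix_inv (Wtilde al be v t)"
proof -
  interpret prm al be v by unfold_locales (use assms in auto)
  show ?thesis
  proof (intro allI impI)
    fix n t assume inv: "invertible (Wtilde al be v t)"
    have mo: "is_monic_mpoly n (P n)"
      and orth: "\<forall>m Q. m < n \<longrightarrow> is_mpoly m Q \<longrightarrow> mip (Wmat al be v) (P n) Q = 0"
      using assms(5) unfolding monic_MOPS_def by auto
    have WI: "Wtilde al be v t ** matrix_inv (Wtilde al be v t) = mat 1 \<and> matrix_inv (Wtilde al be v t) ** Wtilde al be v t = mat 1"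
      using inv unfolding invertible_def matrix_inv_def by (rule someI_ex)
    have key: "P n t = M ** matrix_inv (Wtilde al be v t)" if h: "P n t ** Wtilde al be v t = M" for M
    proof -
      have "P n t = P n t ** (Wtilde al be v t ** matrix_inv (Wtilde al be v t))"
        using WI by (simp add: matrix_mul_rid)
      also have "\<dots> = (P n t ** Wtilde al be v t) ** matrix_inv (Wtilde al be v t)"
        by (simp add: matrix_mul_assoc)
      finally show ?thesis using h by simp
    qed
    show "P n t = fact n *\<^sub>R
        ((jacobiP n (al + 2) be (1 - 2 * t) * t ^ 2) *\<^sub>R R2 al be v n
         + (jacobiP n (al + 1) be (1 - 2 * t) * t) *\<^sub>R R1 al be v n
         + jacobiP n al be (1 - 2 * t) *\<^sub>R R0 al be v n) ** matrix_inv (Wtilde al be v t)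
   \<and> P n t = fact n *\<^sub>R
        (jacobiP n al be (1 - 2 * t) *\<^sub>R C2 al be v n
         + jacobiP (n + 1) al be (1 - 2 * t) *\<^sub>R C1 al be v n
         + jacobiP (n + 2) al be (1 - 2 * t) *\<^sub>R C0 al be v n) ** matrix_inv (Wtilde al be v t)"
      using key[OF main_H[OF mo orth]] key[OF main_G[OF mo orth]] fH_mat fG_mat by simp
  qed
qed


end
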